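(* Let $m\le n$ be positive integers, let $\mathbf{a}=(a_1,\dots,a_m)$ be integers with $n=a_1>a_2>\cdots>a_m\ge 1$, and let $\boldsymbol{\varepsilon}=(\varepsilon_1,\dots,\varepsilon_m)\in\{0,1\}^m$. For $0\le k\le n$, let $f(\mathbf{a},\boldsymbol{\varepsilon},k)$ be the number of nonintersecting chord diagrams $F$ in the multiset $\mathcal{NCD}(E(\mathbf{a},\boldsymbol{\varepsilon}))$ (counted with multiplicity) with $e_F(Y)+e_F(X\cup Z)=k$. Let $g(\mathbf{a},\boldsymbol{\varepsilon},k)$ be the number of $0$-$1$ Young diagrams $M$ of shape $\mathbf{a}$ such that (1) every column of $M$ contains at most one $1$; (2) for each $1\le i\le m$, the number of $1$'s in the $i$th row of $M$ is congruent to $\varepsilon_i$ modulo $2$; (3) $M$ contains exactly $k$ entries equal to $1$. Then $f(\mathbf{a},\boldsymbol{\varepsilon},k)=g(\mathbf{a},\boldsymbol{\varepsilon},k)$.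
   Context: A chord is a line segment whose endpoints lie on a circle; a chord diagram is a set of chords no two of which share an endpoint. A crossing is a pair of chords that intersect in the interior of the disk; a chord diagram is nonintersecting if it has no crossing. If $E$ has a crossing $S=\{ac,bd\}$ where $a,b,c,d$ appear in this cyclic order on the circle, the chord expansion of $E$ with respect to $S$ replaces $E$ by the two chord diagrams $E_1=(E\setminus S)\cup\{ab,cd\}$ and $E_2=(E\setminus S)\cup\{da,bc\}$. Iterating expansions until no crossings remain yields a multiset of nonintersecting chord diagrams, which is known to be independent of the choices of expansions; it is denoted $\mathcal{NCD}(E)$. For a chord diagram $F$ and a set $U$ of points, $e_F(U)$ is the number of chords of $F$ with both endpoints in $U$. Construction of $E(\mathbf{a},\boldsymbol{\varepsilon})$: take points $X=\{x_1,\dots,x_m\}$, $Y=\{y_1,\dots,y_n\}$, $Z=\{z_1,\dots,z_n\}$ placed on the circle in the anticlockwise order $x_1,x_2,\dots,x_m,z_1,z_2,\dots,z_n,y_n,y_{n-1},\dots,y_1$. Then $E(\mathbf{a},\boldsymbol{\varepsilon})=\{x_iy_{a_i}: \varepsilon_i=0\}\cup\{x_iz_{a_i}:\varepsilon_i=1\}\cup\{y_jz_j: j\in\{1,\dots,n\}\setminus\{a_1,\dots,a_m\}\}$, a chord diagram with $n$ chords (unused points are ignored). A $0$-$1$ Young diagram of shape $\mathbf{a}$ is a Young diagram with rows of lengths $a_1,\dots,a_m$ (left-justified, English convention) in which each box holds a value $0$ or $1$. *)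

theory Defs
  imports Main "HOL-Library.Multiset"
begin

text \<open>Points on the circle are natural numbers; their anticlockwise cyclic order is the
  order of the natural numbers (read cyclically). A chord is a 2-element set of points,
  a chord diagram is a set of chords.\<close>

type_synonym chord_diagram = "nat set set"

definition crosses :: "nat set \<Rightarrow> nat set \<Rightarrow> bool" where
  "crosses C D \<longleftrightarrow> (\<exists>a b c d. a < b \<and> b < c \<and> c < d \<and>
      ((C = {a, c} \<and> D = {b, d}) \<or> (C = {b, d} \<and> D = {a, c})))"

definition nonintersecting :: "chord_diagram \<Rightarrow> bool" where
  "nonintersecting E \<longleftrightarrow> \<not> (\<exists>C\<in>E. \<exists>D\<in>E. crosses C D)"

text \<open>Iterated chord expansion: \<open>ncd_rel E M\<close> means that some sequence of expansions of
  \<open>E\<close> (until no crossings remain) yields the multiset \<open>M\<close> of nonintersecting diagrams.\<close>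
inductive ncd_rel :: "chord_diagram \<Rightarrow> chord_diagram multiset \<Rightarrow> bool" where
  base: "nonintersecting E \<Longrightarrow> ncd_rel E {#E#}"
| expand: "\<lbrakk> {a, c} \<in> E; {b, d} \<in> E; a < b; b < c; c < d;
     ncd_rel ((E - {{a, c}, {b, d}}) \<union> {{a, b}, {c, d}}) M1;
     ncd_rel ((E - {{a, c}, {b, d}}) \<union> {{d, a}, {b, c}}) M2 \<rbrakk>
   \<Longrightarrow> ncd_rel E (M1 + M2)"

text \<open>The multiset NCD(E) (well defined since the result is independent of choices).\<close>
definition NCD :: "chord_diagram \<Rightarrow> chord_diagram multiset" where
  "NCD E = (THE M. ncd_rel E M)"

definition e_count :: "chord_diagram \<Rightarrow> nat set \<Rightarrow> nat" where
  "e_count F U = card {C \<in> F. C \<subseteq> U}"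

text \<open>Positions: x_i = i (1..m), z_j = m + j (1..n), y_j = m + 2n + 1 - j, so that the
  anticlockwise order is x_1..x_m, z_1..z_n, y_n..y_1.\<close>
definition xpt :: "nat \<Rightarrow> nat \<Rightarrow> nat \<Rightarrow> nat" where "xpt m n i = i"
definition zpt :: "nat \<Rightarrow> nat \<Rightarrow> nat \<Rightarrow> nat" where "zpt m n j = m + j"
definition ypt :: "nat \<Rightarrow> nat \<Rightarrow> nat \<Rightarrow> nat" where "ypt m n j = m + 2 * n + 1 - j"

definition Xset :: "nat \<Rightarrow> nat \<Rightarrow> nat set" where "Xset m n = xpt m n ` {1..m}"
definition Yset :: "nat \<Rightarrow> nat \<Rightarrow> nat set" where "Yset m n = ypt m n ` {1..n}"
definition Zset :: "nat \<Rightarrow> nat \<Rightarrow> nat set" where "Zset m n = zpt m n ` {1..n}"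

definition Ediag :: "nat \<Rightarrow> nat \<Rightarrow> (nat \<Rightarrow> nat) \<Rightarrow> (nat \<Rightarrow> nat) \<Rightarrow> chord_diagram" where
  "Ediag m n a \<epsilon> =
     {{xpt m n i, ypt m n (a i)} | i. i \<in> {1..m} \<and> \<epsilon> i = 0}
   \<union> {{xpt m n i, zpt m n (a i)} | i. i \<in> {1..m} \<and> \<epsilon> i = 1}
   \<union> {{ypt m n j, zpt m n j} | j. j \<in> {1..n} - a ` {1..m}}"

definition f_count :: "nat \<Rightarrow> nat \<Rightarrow> (nat \<Rightarrow> nat) \<Rightarrow> (nat \<Rightarrow> nat) \<Rightarrow> nat \<Rightarrow> nat" where
  "f_count m n a \<epsilon> k =
     size (filter_mset (\<lambda>F. e_count F (Yset m n) + e_count F (Xset m n \<union> Zset m n) = k)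
                       (NCD (Ediag m n a \<epsilon>)))"

text \<open>0-1 Young diagrams of shape a: box (i,j) with 1 \<le> i \<le> m, 1 \<le> j \<le> a_i holds a value
  in {0,1} (True = 1); outside the shape the function is False.\<close>
definition young01 :: "nat \<Rightarrow> (nat \<Rightarrow> nat) \<Rightarrow> (nat \<times> nat \<Rightarrow> bool) set" where
  "young01 m a = {M. \<forall>i j. M (i, j) \<longrightarrow> (i \<in> {1..m} \<and> j \<in> {1..a i})}"

definition g_count :: "nat \<Rightarrow> (nat \<Rightarrow> nat) \<Rightarrow> (nat \<Rightarrow> nat) \<Rightarrow> nat \<Rightarrow> nat" where
  "g_count m a \<epsilon> k = card {M \<in> young01 m a.
      (\<forall>j. card {i \<in> {1..m}. M (i, j)} \<le> 1) \<and>
      (\<forall>i \<in> {1..m}. card {j \<in> {1..a i}. M (i, j)} mod 2 = \<epsilon> i mod 2) \<and>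
      card {p. M p} = k}"

end

theory Submission
  imports Defs
begin

definition matching :: "chord_diagram \<Rightarrow> bool" where
  "matching E \<longleftrightarrow> finite E \<and> (\<forall>C\<in>E. card C = 2) \<and> (\<forall>C\<in>E. \<forall>D\<in>E. C \<noteq> D \<longrightarrow> C \<inter> D = {})"

definition chi :: "nat set \<Rightarrow> nat set \<Rightarrow> int" where
  "chi S C = (if card (C \<inter> S) = 1 then (if Max C \<in> S then -1 else 1) else 0)"

definition lam :: "nat set \<Rightarrow> chord_diagram \<Rightarrow> int" where
  "lam S E = (\<Prod>C\<in>E. chi S C)"

lemma chi_pair:
  assumes "x < y"
  shows "chi S {x,y} = (if x \<in> S \<and> y \<notin> S then 1 else if x \<notin> S \<and> y \<in> S then -1 else 0)"
  using assms by (cases "x\<in>S"; cases "y\<in>S") (auto simp: chi_def Int_insert_left max_def)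

lemma chi_plucker:
  assumes "a<b" "b<c" "c<d"
  shows "chi S {a,c} * chi S {b,d} = chi S {a,b} * chi S {c,d} + chi S {d,a} * chi S {b,c}"
proof -
  have "{d,a} = {a,d}" by auto
  then show ?thesis using assms
    by (cases "a\<in>S"; cases "b\<in>S"; cases "c\<in>S"; cases "d\<in>S") (simp_all add: chi_pair)
qed

lemma matching_disj: "matching E \<Longrightarrow> X \<in> E \<Longrightarrow> Y \<in> E \<Longrightarrow> X \<noteq> Y \<Longrightarrow> X \<inter> Y = {}"
  unfolding matching_def by blast

lemma expand_facts:
  assumes "matching E" "{a,c} \<in> E" "{b,d} \<in> E" "a<b" "b<c" "c<d"
  shows "{a,b} \<notin> E" "{c,d} \<notin> E" "{d,a} \<notin> E" "{b,c} \<notin> E"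
proof -
  have n1: "{a,b} \<noteq> {a,c}" "{c,d} \<noteq> {a,c}" "{d,a} \<noteq> {a,c}" "{b,c} \<noteq> {b,d}"
    using assms(4-6) by (simp_all add: doubleton_eq_iff)
  have i1: "{a,b} \<inter> {a,c} \<noteq> {}" "{c,d} \<inter> {a,c} \<noteq> {}" "{d,a} \<inter> {a,c} \<noteq> {}" "{b,c} \<inter> {b,d} \<noteq> {}"
    by auto
  show "{a,b} \<notin> E" using matching_disj[OF assms(1) _ assms(2) n1(1)] i1(1) by blast
  show "{c,d} \<notin> E" using matching_disj[OF assms(1) _ assms(2) n1(2)] i1(2) by blast
  show "{d,a} \<notin> E" using matching_disj[OF assms(1) _ assms(2) n1(3)] i1(3) by blast
  show "{b,c} \<notin> E" using matching_disj[OF assms(1) _ assms(3) n1(4)] i1(4) by blast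
qed

lemma lam_expand:
  assumes "matching E" "{a,c} \<in> E" "{b,d} \<in> E" "a<b" "b<c" "c<d"
  shows "lam S E = lam S ((E - {{a,c},{b,d}}) \<union> {{a,b},{c,d}}) + lam S ((E - {{a,c},{b,d}}) \<union> {{d,a},{b,c}})"
proof -
  define R where "R = E - {{a,c},{b,d}}"
  have fin: "finite R" using assms(1) unfolding matching_def R_def by auto
  have ne: "{a,c} \<noteq> {b,d}" "{a,b} \<noteq> {c,d}" "{d,a} \<noteq> {b,c}" using assms by (auto simp: doubleton_eq_iff)
  have nR: "{a,b} \<notin> R" "{c,d} \<notin> R" "{d,a} \<notin> R" "{b,c} \<notin> R" "{a,c} \<notin> R" "{b,d} \<notin> R"
    using expand_facts[OF assms] unfolding R_def by auto
  have E: "E = insert {a,c} (insert {b,d} R)" using assms(2,3) unfolding R_def by auto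
  have 1: "R \<union> {{a,b},{c,d}} = insert {a,b} (insert {c,d} R)" by auto
  have 2: "R \<union> {{d,a},{b,c}} = insert {d,a} (insert {b,c} R)" by auto
  have "lam S E = chi S {a,c} * (chi S {b,d} * lam S R)"
    unfolding lam_def E using fin nR ne by simp
  moreover have "lam S (R \<union> {{a,b},{c,d}}) = chi S {a,b} * (chi S {c,d} * lam S R)"
    unfolding lam_def 1 using fin nR ne by simp
  moreover have "lam S (R \<union> {{d,a},{b,c}}) = chi S {d,a} * (chi S {b,c} * lam S R)"
    unfolding lam_def 2 using fin nR ne by simp
  ultimately show ?thesis unfolding R_def[symmetric] using chi_plucker[OF assms(4-6), of S]
    by (simp add: algebra_simps)
qed

lemma matching_subset: "matching E \<Longrightarrow> R \<subseteq> E \<Longrightarrow> matching R"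
  unfolding matching_def by (meson finite_subset subsetD)

lemma matching_insert:
  assumes "matching R" "card C = 2" "C \<inter> \<Union>R = {}"
  shows "matching (insert C R)"
  using assms unfolding matching_def by blast

lemma matching_expand:
  assumes "matching E" "{a,c} \<in> E" "{b,d} \<in> E" "a<b" "b<c" "c<d"
  shows "matching ((E - {{a,c},{b,d}}) \<union> {{a,b},{c,d}})" "matching ((E - {{a,c},{b,d}}) \<union> {{d,a},{b,c}})"
proof -
  define R where "R = E - {{a,c},{b,d}}"
  have dis: "\<And>X. X \<in> E \<Longrightarrow> X \<noteq> {a,c} \<Longrightarrow> X \<inter> {a,c} = {}"
    "\<And>X. X \<in> E \<Longrightarrow> X \<noteq> {b,d} \<Longrightarrow> X \<inter> {b,d} = {}"
    using matching_disj[OF assms(1) _ assms(2)] matching_disj[OF assms(1) _ assms(3)] by auto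
  have mR: "matching R" using matching_subset[OF assms(1)] unfolding R_def by blast
  have UR: "\<Union>R \<inter> {a,b,c,d} = {}"
  proof -
    have "\<And>X. X \<in> R \<Longrightarrow> X \<inter> {a,b,c,d} = {}"
    proof -
      fix X assume "X \<in> R"
      then have "X \<in> E" "X \<noteq> {a,c}" "X \<noteq> {b,d}" unfolding R_def by auto
      then have "X \<inter> {a,c} = {}" "X \<inter> {b,d} = {}" using dis by auto
      then show "X \<inter> {a,b,c,d} = {}" by blast
    qed
    then show ?thesis by blast
  qed
  have c2: "card {a,b} = 2" "card {c,d} = 2" "card {d,a} = 2" "card {b,c} = 2" using assms(4-6) by auto
  have m1: "matching (insert {c,d} R)"
    by (rule matching_insert[OF mR c2(2)]) (use UR in blast)
  have "matching (insert {a,b} (insert {c,d} R))"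
    by (rule matching_insert[OF m1 c2(1)]) (use UR assms(4-6) in auto)
  moreover have "(E - {{a,c},{b,d}}) \<union> {{a,b},{c,d}} = insert {a,b} (insert {c,d} R)" unfolding R_def by blast
  ultimately show "matching ((E - {{a,c},{b,d}}) \<union> {{a,b},{c,d}})" by simp
  have m2: "matching (insert {b,c} R)"
    by (rule matching_insert[OF mR c2(4)]) (use UR in blast)
  have "matching (insert {d,a} (insert {b,c} R))"
    by (rule matching_insert[OF m2 c2(3)]) (use UR assms(4-6) in auto)
  moreover have "(E - {{a,c},{b,d}}) \<union> {{d,a},{b,c}} = insert {d,a} (insert {b,c} R)" unfolding R_def by blast
  ultimately show "matching ((E - {{a,c},{b,d}}) \<union> {{d,a},{b,c}})" by simp
qed

lemma ncd_rel_union: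
  "ncd_rel E M \<Longrightarrow> F \<in># M \<Longrightarrow> \<Union>F = \<Union>E"
proof (induction arbitrary: F rule: ncd_rel.induct)
  case (base E)
  then show ?case by simp
next
  case (expand a c E b d M1 M2)
  have u1: "\<Union>((E - {{a,c},{b,d}}) \<union> {{a,b},{c,d}}) = \<Union>E" using expand.hyps(1,2) by blast
  have u2: "\<Union>((E - {{a,c},{b,d}}) \<union> {{d,a},{b,c}}) = \<Union>E" using expand.hyps(1,2) by blast
  from expand.prems consider "F \<in># M1" | "F \<in># M2" by auto
  then show ?case
  proof cases
    case 1 then show ?thesis using expand.IH(1) u1 by simp
  next
    case 2 then show ?thesis using expand.IH(2) u2 by simp
  qed
qed

lemma ncd_rel_props:
  "ncd_rel E M \<Longrightarrow> matching E \<Longrightarrow>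
     (\<forall>F\<in>#M. matching F \<and> nonintersecting F) \<and> (\<forall>S. lam S E = (\<Sum>F\<in>#M. lam S F))"
proof (induction rule: ncd_rel.induct)
  case (base E)
  then show ?case by simp
next
  case (expand a c E b d M1 M2)
  note mE = matching_expand[OF expand.prems expand.hyps(1-5)]
  have A: "\<forall>F\<in>#M1. matching F \<and> nonintersecting F" "\<forall>S. lam S ((E - {{a,c},{b,d}}) \<union> {{a,b},{c,d}}) = (\<Sum>F\<in>#M1. lam S F)"
    using expand.IH(1)[OF mE(1)] by blast+
  have B: "\<forall>F\<in>#M2. matching F \<and> nonintersecting F" "\<forall>S. lam S ((E - {{a,c},{b,d}}) \<union> {{d,a},{b,c}}) = (\<Sum>F\<in>#M2. lam S F)"
    using expand.IH(2)[OF mE(2)] by blast+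
  show ?case
  proof (intro conjI allI)
    show "\<forall>F\<in>#M1 + M2. matching F \<and> nonintersecting F" using A(1) B(1) by (metis union_iff)
  next
    fix S
    have "lam S E = lam S ((E - {{a,c},{b,d}}) \<union> {{a,b},{c,d}}) + lam S ((E - {{a,c},{b,d}}) \<union> {{d,a},{b,c}})"
      by (rule lam_expand[OF expand.prems expand.hyps(1-5)])
    also have "\<dots> = (\<Sum>F\<in>#M1. lam S F) + (\<Sum>F\<in>#M2. lam S F)" using A(2) B(2) by simp
    finally show "lam S E = (\<Sum>F\<in>#M1 + M2. lam S F)" by simp
  qed
qed

lemma matching_chord:
  assumes "matching F" "C \<in> F"
  shows "\<exists>x y. x < y \<and> C = {x,y}"
proof -
  have "card C = 2" using assms unfolding matching_def by blast
  then obtain x y where "C = {x,y}" "x \<noteq> y" by (meson card_2_iff)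
  then show ?thesis by (metis insert_commute linorder_neqE_nat)
qed

lemma pair_Min_Max: "x < y \<Longrightarrow> Min {x,y} = x \<and> Max {x,y} = (y::nat)"
  by auto

lemma chord_MinMax:
  assumes "matching F" "C \<in> F"
  shows "C = {Min C, Max C}" "Min C < Max C"
  using matching_chord[OF assms] pair_Min_Max by fastforce+

lemma crosses_intro: "a<b \<Longrightarrow> b<c \<Longrightarrow> c<d \<Longrightarrow> crosses {a,c} {b,d}"
  unfolding crosses_def by blast

lemma nonint_no_cross:
  "nonintersecting G \<Longrightarrow> {a,c} \<in> G \<Longrightarrow> {b,d} \<in> G \<Longrightarrow> a<b \<Longrightarrow> b<c \<Longrightarrow> c<d \<Longrightarrow> False"
  unfolding nonintersecting_def using crosses_intro by blast

lemma matching_fin_chord: "matching G \<Longrightarrow> C \<in> G \<Longrightarrow> finite C"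
  unfolding matching_def by (metis card.infinite zero_neq_numeral)

lemma transversal_sum:
  assumes mG: "matching G" and SU: "S \<subseteq> \<Union>G" and tr: "\<forall>C\<in>G. card (C \<inter> S) = 1"
  shows "sum id (Min ` G) \<le> sum id S" "sum id S = sum id (Min ` G) \<Longrightarrow> S = Min ` G"
proof -
  have finG: "finite G" using mG by (simp add: matching_def)
  have finC: "\<And>C. C \<in> G \<Longrightarrow> finite C" using matching_fin_chord[OF mG] .
  have S_eq: "S = (\<Union>C\<in>G. C \<inter> S)" using SU by blast
  have sumS: "sum id S = (\<Sum>C\<in>G. sum id (C \<inter> S))"
  proof -
    have "sum id (\<Union>C\<in>G. C \<inter> S) = (\<Sum>C\<in>G. sum id (C \<inter> S))"
    proof (rule sum.UNION_disjoint)
      show "finite G" by (rule finG)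
      show "\<forall>C\<in>G. finite (C \<inter> S)" using finC by blast
      show "\<forall>C\<in>G. \<forall>D\<in>G. C \<noteq> D \<longrightarrow> C \<inter> S \<inter> (D \<inter> S) = {}"
        using matching_disj[OF mG] by blast
    qed
    then show ?thesis using S_eq by simp
  qed
  have single: "\<And>C. C \<in> G \<Longrightarrow> \<exists>s. C \<inter> S = {s}" using tr by (metis card_1_singletonE)
  have ge: "\<And>C. C \<in> G \<Longrightarrow> Min C \<le> sum id (C \<inter> S)"
  proof -
    fix C assume C: "C \<in> G"
    obtain s where s: "C \<inter> S = {s}" using single[OF C] by blast
    then have "s \<in> C" by blast
    then show "Min C \<le> sum id (C \<inter> S)" using s finC[OF C] by simp
  qed
  have injM: "inj_on Min G"
  proof (rule inj_onI)
    fix C D assume C: "C \<in> G" and D: "D \<in> G" and eq: "Min C = Min D"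
    have "C \<noteq> {}" "D \<noteq> {}" using chord_MinMax[OF mG C] chord_MinMax[OF mG D] by auto
    then have "Min C \<in> C" "Min D \<in> D" using finC C D by auto
    then have "C \<inter> D \<noteq> {}" using eq by auto
    then show "C = D" using matching_disj[OF mG C D] by blast
  qed
  have sumMin: "sum id (Min ` G) = (\<Sum>C\<in>G. Min C)" by (simp add: sum.reindex[OF injM])
  show "sum id (Min ` G) \<le> sum id S" unfolding sumS sumMin by (rule sum_mono) (rule ge)
  assume eq: "sum id S = sum id (Min ` G)"
  have "(\<Sum>C\<in>G. sum id (C \<inter> S) - Min C) = (\<Sum>C\<in>G. sum id (C \<inter> S)) - (\<Sum>C\<in>G. Min C)"
    by (rule sum_subtractf_nat) (rule ge)
  also have "\<dots> = 0" using eq unfolding sumS sumMin by simp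
  finally have "\<forall>C\<in>G. sum id (C \<inter> S) - Min C = 0" using finG by simp
  then have all: "\<And>C. C \<in> G \<Longrightarrow> C \<inter> S = {Min C}"
  proof -
    fix C assume C: "C \<in> G" and h: "\<forall>C\<in>G. sum id (C \<inter> S) - Min C = 0"
    obtain s where s: "C \<inter> S = {s}" using single[OF C] by blast
    have "sum id (C \<inter> S) \<le> Min C" using h C by simp
    then have "s \<le> Min C" using s by simp
    moreover have "s \<in> C" using s by blast
    then have "Min C \<le> s" using finC[OF C] by simp
    ultimately show "C \<inter> S = {Min C}" using s by simp
  qed
  show "S = Min ` G"
  proof
    show "S \<subseteq> Min ` G"
    proof
      fix s assume "s \<in> S"
      then obtain C where "C \<in> G" "s \<in> C" using SU by blast
      then show "s \<in> Min ` G" using all \<open>s \<in> S\<close> by blast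
    qed
    show "Min ` G \<subseteq> S" using all by blast
  qed
qed


lemma nc_chord_inside:
  assumes mF: "matching F" and nF: "nonintersecting F" and C0: "{b,c} \<in> F" and bc: "b < c"
    and E: "E \<in> F" and v: "v \<in> E" and bv: "b < v" "v < c"
  shows "b < Min E \<and> Max E < c"
proof -
  obtain x y where xy: "x < y" "E = {x,y}" using matching_chord[OF mF E] by blast
  have "E \<noteq> {b,c}" using v bv by auto
  then have dj: "E \<inter> {b,c} = {}" using matching_disj[OF mF E C0] by blast
  have "b < x \<and> y < c"
  proof (rule ccontr)
    assume "\<not> (b < x \<and> y < c)"
    then consider "x < b" | "c < y" using dj xy by fastforce
    then show False
    proof cases
      case 1
      then have "v = y" using v xy bv by auto
      then show False using nonint_no_cross[OF nF, of x y b c] E xy C0 1 bv by auto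
    next
      case 2
      then have "v = x" using v xy bv by auto
      then show False using nonint_no_cross[OF nF, of b c x y] E xy C0 2 bv by auto
    qed
  qed
  then show ?thesis using xy by simp
qed

lemma nc_open_unique:
  assumes mF: "matching F" and mG: "matching G" and nF: "nonintersecting F" and nG: "nonintersecting G"
    and U: "\<Union>F = \<Union>G" and O: "Min ` F = Min ` G"
  shows "F = G"
proof (rule ccontr)
  assume FG: "F \<noteq> G"
  have "F - G \<noteq> {}"
  proof
    assume "F - G = {}"
    then have sub: "F \<subseteq> G" by blast
    have "G \<subseteq> F"
    proof
      fix D assume D: "D \<in> G"
      have "D = {Min D, Max D}" using chord_MinMax[OF mG D] by simp
      then have x: "Min D \<in> D" by blast
      then obtain C where C: "C \<in> F" "Min D \<in> C" using U D by blast
      then have "C \<in> G" using sub by blast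
      then have "C = D" using matching_disj[OF mG _ D] C x by blast
      then show "D \<in> F" using C by simp
    qed
    then show False using sub FG by blast
  qed
  then obtain C1 where "C1 \<in> F - G" by blast
  define len where "len C = Max C - Min C" for C :: "nat set"
  obtain C0 where C0: "C0 \<in> F - G" and minC0: "\<forall>C. C \<in> F - G \<longrightarrow> len C0 \<le> len C"
    using ex_has_least_nat[of "\<lambda>C. C \<in> F - G" C1 len] \<open>C1 \<in> F - G\<close> by blast
  define b where "b = Min C0"
  define c where "c = Max C0"
  have C0F: "C0 \<in> F" "C0 \<notin> G" using C0 by auto
  have bc: "b < c" and C0eq: "C0 = {b,c}" using chord_MinMax[OF mF C0F(1)] b_def c_def by auto
  have "b \<in> Min ` G" using O C0F b_def by blast
  then obtain D1 where D1: "D1 \<in> G" "Min D1 = b" by blast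
  define d where "d = Max D1"
  have D1eq: "D1 = {b,d}" "b < d" using chord_MinMax[OF mG D1(1)] D1(2) d_def by auto
  have "c \<in> \<Union>G" using U C0F C0eq by blast
  then obtain D2 where D2: "D2 \<in> G" "c \<in> D2" by blast
  have cnotmin: "c \<noteq> Min D2"
  proof
    assume "c = Min D2"
    then have "c \<in> Min ` F" using O D2 by blast
    then obtain C' where C': "C' \<in> F" "Min C' = c" by blast
    have "C' = {Min C', Max C'}" using chord_MinMax[OF mF C'(1)] by simp
    then have "c \<in> C'" using C' by blast
    then have "C' = C0" using matching_disj[OF mF C'(1) C0F(1)] C0eq by blast
    then show False using C' bc b_def by simp
  qed
  define a' where "a' = Min D2"
  have D2eq: "D2 = {a', c}" "a' < c"
  proof -
    have "D2 = {Min D2, Max D2}" "Min D2 < Max D2" using chord_MinMax[OF mG D2(1)] by auto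
    then have "c = Max D2" using D2(2) cnotmin by blast
    then show "D2 = {a', c}" "a' < c" using \<open>D2 = {Min D2, Max D2}\<close> \<open>Min D2 < Max D2\<close> a'_def by auto
  qed
  have dc: "d \<noteq> c"
  proof
    assume "d = c" then have "D1 = C0" using D1eq C0eq by simp
    then show False using D1 C0F by simp
  qed
  have ab: "a' \<noteq> b"
  proof
    assume "a' = b" then have "D2 = C0" using D2eq C0eq by simp
    then show False using D2 C0F by simp
  qed
  have inside: "\<And>v. b < v \<Longrightarrow> v < c \<Longrightarrow> v \<in> \<Union>G \<Longrightarrow> \<exists>E\<in>G. v \<in> E \<and> b < Min E \<and> Max E < c"
  proof -
    fix v assume v: "b < v" "v < c" "v \<in> \<Union>G"
    then obtain E where E: "E \<in> F" "v \<in> E" using U by blast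
    have inn: "b < Min E \<and> Max E < c"
      using nc_chord_inside[OF mF nF C0F(1)[unfolded C0eq] bc E] v by blast
    have "Min E < Max E" using chord_MinMax[OF mF E(1)] by simp
    then have "len E < len C0" using inn bc unfolding len_def b_def c_def by arith
    then have "E \<notin> F - G" using minC0 by fastforce
    then have "E \<in> G" using E by blast
    then show "\<exists>E\<in>G. v \<in> E \<and> b < Min E \<and> Max E < c" using E inn by blast
  qed
  have "\<not> (b < d \<and> d < c)"
  proof
    assume h: "b < d \<and> d < c"
    have "d \<in> \<Union>G" using D1 D1eq by blast
    then obtain E where E: "E \<in> G" "d \<in> E" "b < Min E" "Max E < c" using inside h by blast
    have "E = D1" using matching_disj[OF mG E(1) D1(1)] E(2) D1eq by blast
    then show False using E(3) D1(2) by simp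
  qed
  then have cd: "c < d" using dc D1eq by auto
  have "\<not> (b < a' \<and> a' < c)"
  proof
    assume h: "b < a' \<and> a' < c"
    have "a' \<in> \<Union>G" using D2 D2eq by blast
    then obtain E where E: "E \<in> G" "a' \<in> E" "b < Min E" "Max E < c" using inside h by blast
    have "E = D2" using matching_disj[OF mG E(1) D2(1)] E(2) D2eq by blast
    moreover have "Max D2 = c" using D2eq by simp
    ultimately show False using E(4) by simp
  qed
  then have a'b: "a' < b" using ab D2eq by auto
  show False using nonint_no_cross[OF nG, of a' c b d] D2 D2eq D1 D1eq a'b bc cd by auto
qed

lemma sum_mset_count:
  fixes f :: "'a \<Rightarrow> int"
  assumes "finite U" "set_mset M \<subseteq> U"
  shows "(\<Sum>x\<in>#M. f x) = (\<Sum>x\<in>U. int (count M x) * f x)"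
  using assms(2)
proof (induction M)
  case empty then show ?case by simp
next
  case (add y M)
  have yU: "y \<in> U" and MU: "set_mset M \<subseteq> U" using add.prems by auto
  have "(\<Sum>x\<in>U. int (count (add_mset y M) x) * f x) = (\<Sum>x\<in>U. int (count M x) * f x + (if x = y then f x else 0))"
    by (rule sum.cong) (auto simp: algebra_simps)
  also have "\<dots> = (\<Sum>x\<in>U. int (count M x) * f x) + f y" using assms(1) yU by (simp add: sum.distrib)
  finally show ?case using add.IH[OF MU] by simp
qed

lemma lam_open_self:
  assumes mF: "matching F"
  shows "lam (Min ` F) F = 1"
proof -
  have "\<forall>C\<in>F. chi (Min ` F) C = 1"
  proof
    fix C assume C: "C \<in> F"
    have CMM: "C = {Min C, Max C}" "Min C < Max C" using chord_MinMax[OF mF C] by auto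
    have int: "C \<inter> Min ` F = {Min C}"
    proof
      show "C \<inter> Min ` F \<subseteq> {Min C}"
      proof
        fix x assume x: "x \<in> C \<inter> Min ` F"
        then obtain C' where C': "C' \<in> F" "x = Min C'" by blast
        have "C' = {Min C', Max C'}" using chord_MinMax[OF mF C'(1)] by simp
        then have "x \<in> C'" using C' by blast
        then have "C' = C" using matching_disj[OF mF C'(1) C] x by blast
        then show "x \<in> {Min C}" using C' by simp
      qed
      show "{Min C} \<subseteq> C \<inter> Min ` F" using C CMM by blast
    qed
    have "Max C \<notin> Min ` F"
    proof
      assume "Max C \<in> Min ` F"
      then have "Max C \<in> C \<inter> Min ` F" using CMM by blast
      then show False using int CMM by simp
    qed
    then show "chi (Min ` F) C = 1" unfolding chi_def using int by simp
  qed
  then show ?thesis unfolding lam_def by simp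
qed

lemma lam_nonzero_tr:
  assumes "matching G" "lam S G \<noteq> 0"
  shows "\<forall>C\<in>G. card (C \<inter> S) = 1"
proof
  fix C assume C: "C \<in> G"
  have "finite G" using assms(1) by (simp add: matching_def)
  then have "chi S C \<noteq> 0" using assms(2) C unfolding lam_def by (simp add: prod_zero_iff)
  then show "card (C \<inter> S) = 1" unfolding chi_def by (auto split: if_splits)
qed

lemma mset_unique_by_lam:
  assumes P: "\<forall>F \<in> set_mset M1 \<union> set_mset M2. matching F \<and> nonintersecting F \<and> \<Union>F = V"
      and L: "\<forall>S. (\<Sum>F\<in>#M1. lam S F) = (\<Sum>F\<in>#M2. lam S F)"
  shows "M1 = M2"
proof (rule ccontr)
  assume ne: "M1 \<noteq> M2"
  then obtain F1 where F1: "count M1 F1 \<noteq> count M2 F1" by (meson multiset_eqI)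
  define U where "U = set_mset M1 \<union> set_mset M2"
  have finU: "finite U" by (simp add: U_def)
  define sm where "sm F = sum id (Min ` F)" for F :: chord_diagram
  obtain F0 where F0: "count M1 F0 \<noteq> count M2 F0" and minF0: "\<forall>F. count M1 F \<noteq> count M2 F \<longrightarrow> sm F0 \<le> sm F"
    using ex_has_least_nat[of "\<lambda>F. count M1 F \<noteq> count M2 F" F1 sm] F1 by blast
  have F0U: "F0 \<in> U"
  proof (rule ccontr)
    assume "F0 \<notin> U"
    then have "count M1 F0 = 0" "count M2 F0 = 0" unfolding U_def by (auto simp: count_eq_zero_iff)
    then show False using F0 by simp
  qed
  define S where "S = Min ` F0"
  have PF0: "matching F0" "nonintersecting F0" "\<Union>F0 = V" using P F0U unfolding U_def by blast+
  have LS: "(\<Sum>F\<in>#M1. lam S F) = (\<Sum>F\<in>#M2. lam S F)" using L by blast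
  have sub1: "set_mset M1 \<subseteq> U" and sub2: "set_mset M2 \<subseteq> U" unfolding U_def by auto
  have eq: "(\<Sum>F\<in>U. int (count M1 F) * lam S F) = (\<Sum>F\<in>U. int (count M2 F) * lam S F)"
    using LS unfolding sum_mset_count[OF finU sub1, of "lam S"] sum_mset_count[OF finU sub2, of "lam S"] .
  have zero: "\<And>F. F \<in> U \<Longrightarrow> F \<noteq> F0 \<Longrightarrow> (int (count M1 F) - int (count M2 F)) * lam S F = 0"
  proof -
    fix F assume FU: "F \<in> U" and FF0: "F \<noteq> F0"
    show "(int (count M1 F) - int (count M2 F)) * lam S F = 0"
    proof (cases "count M1 F = count M2 F")
      case True then show ?thesis by simp
    next
      case False
      have PF: "matching F" "nonintersecting F" "\<Union>F = V" using P FU unfolding U_def by blast+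
      have "lam S F = 0"
      proof (rule ccontr)
        assume nz: "lam S F \<noteq> 0"
        have tr: "\<forall>C\<in>F. card (C \<inter> S) = 1" by (rule lam_nonzero_tr[OF PF(1) nz])
        have SU: "S \<subseteq> \<Union>F"
        proof
          fix x assume "x \<in> S"
          then obtain C where C: "C \<in> F0" "x = Min C" unfolding S_def by blast
          have "C = {Min C, Max C}" using chord_MinMax[OF PF0(1) C(1)] by simp
          then have "x \<in> \<Union>F0" using C by blast
          then show "x \<in> \<Union>F" using PF0(3) PF(3) by simp
        qed
        have le: "sm F \<le> sum id S" using transversal_sum(1)[OF PF(1) SU tr] unfolding sm_def .
        have ge: "sm F0 \<le> sm F" using minF0 False by blast
        have s0: "sum id S = sm F0" by (simp add: S_def sm_def)
        then have "sum id S = sum id (Min ` F)" using le ge unfolding sm_def by simp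
        then have "S = Min ` F" by (rule transversal_sum(2)[OF PF(1) SU tr])
        then have "Min ` F0 = Min ` F" by (simp add: S_def)
        then have "F0 = F" using nc_open_unique[OF PF0(1) PF(1) PF0(2) PF(2)] PF0(3) PF(3) by simp
        then show False using FF0 by simp
      qed
      then show ?thesis by simp
    qed
  qed
  have s1: "(\<Sum>F\<in>U. (int (count M1 F) - int (count M2 F)) * lam S F) = 0"
    using eq by (simp add: sum_subtractf left_diff_distrib)
  have "(\<Sum>F\<in>U. (int (count M1 F) - int (count M2 F)) * lam S F)
      = (int (count M1 F0) - int (count M2 F0)) * lam S F0 + (\<Sum>F\<in>U - {F0}. (int (count M1 F) - int (count M2 F)) * lam S F)"
    using sum.remove[OF finU F0U] by blast
  also have "(\<Sum>F\<in>U - {F0}. (int (count M1 F) - int (count M2 F)) * lam S F) = 0"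
    using zero by (intro sum.neutral) blast
  finally have "(int (count M1 F0) - int (count M2 F0)) * lam S F0 = 0" using s1 by simp
  moreover have "lam S F0 = 1" using lam_open_self[OF PF0(1)] S_def by simp
  ultimately show False using F0 by simp
qed

lemma ncd_rel_unique:
  assumes mE: "matching E" and R1: "ncd_rel E M1" and R2: "ncd_rel E M2"
  shows "M1 = M2"
proof (rule mset_unique_by_lam[where V="\<Union>E"])
  have p1: "(\<forall>F\<in>#M1. matching F \<and> nonintersecting F) \<and> (\<forall>S. lam S E = (\<Sum>F\<in>#M1. lam S F))"
    using ncd_rel_props[OF R1 mE] .
  have p2: "(\<forall>F\<in>#M2. matching F \<and> nonintersecting F) \<and> (\<forall>S. lam S E = (\<Sum>F\<in>#M2. lam S F))"
    using ncd_rel_props[OF R2 mE] .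
  show "\<forall>F\<in>set_mset M1 \<union> set_mset M2. matching F \<and> nonintersecting F \<and> \<Union>F = \<Union>E"
  proof
    fix F assume "F \<in> set_mset M1 \<union> set_mset M2"
    then consider "F \<in># M1" | "F \<in># M2" by blast
    then show "matching F \<and> nonintersecting F \<and> \<Union>F = \<Union>E"
    proof cases
      case 1 then show ?thesis using p1 ncd_rel_union[OF R1 1] by simp
    next
      case 2 then show ?thesis using p2 ncd_rel_union[OF R2 2] by simp
    qed
  qed
  show "\<forall>S. (\<Sum>F\<in>#M1. lam S F) = (\<Sum>F\<in>#M2. lam S F)"
  proof
    fix S
    have "lam S E = (\<Sum>F\<in>#M1. lam S F)" using p1 by blast
    moreover have "lam S E = (\<Sum>F\<in>#M2. lam S F)" using p2 by blast
    ultimately show "(\<Sum>F\<in>#M1. lam S F) = (\<Sum>F\<in>#M2. lam S F)" by simp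
  qed
qed

lemma NCD_eq:
  assumes "matching E" "ncd_rel E M"
  shows "NCD E = M"
  unfolding NCD_def
proof (rule the_equality)
  show "ncd_rel E M" by (rule assms(2))
  fix M' assume "ncd_rel E M'"
  then show "M' = M" using ncd_rel_unique[OF assms(1)] assms(2) by blast
qed

lemma crosses_between:
  assumes "crosses C D"
  shows "\<exists>x\<in>D. \<exists>y\<in>C. \<exists>z\<in>C. y < x \<and> x < z" "\<exists>x\<in>C. \<exists>y\<in>D. \<exists>z\<in>D. y < x \<and> x < z"
proof -
  obtain a b c d where abcd: "a < b" "b < c" "c < d" "(C = {a, c} \<and> D = {b, d}) \<or> (C = {b, d} \<and> D = {a, c})"
    using assms unfolding crosses_def by blast
  show "\<exists>x\<in>D. \<exists>y\<in>C. \<exists>z\<in>C. y < x \<and> x < z"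
    using abcd(4)
  proof
    assume "C = {a, c} \<and> D = {b, d}" then show ?thesis using abcd(1-3) by blast
  next
    assume "C = {b, d} \<and> D = {a, c}" then show ?thesis using abcd(1-3) by blast
  qed
  show "\<exists>x\<in>C. \<exists>y\<in>D. \<exists>z\<in>D. y < x \<and> x < z"
    using abcd(4)
  proof
    assume "C = {a, c} \<and> D = {b, d}" then show ?thesis using abcd(1-3) by blast
  next
    assume "C = {b, d} \<and> D = {a, c}" then show ?thesis using abcd(1-3) by blast
  qed
qed

lemma nonint_insert_short:
  assumes NI: "nonintersecting E" and pq: "p < q" and nb: "\<forall>v\<in>\<Union>E. \<not> (p < v \<and> v < q)"
  shows "nonintersecting (insert {p,q} E)"
  unfolding nonintersecting_def
proof (rule notI)
  assume "\<exists>C\<in>insert {p, q} E. \<exists>D\<in>insert {p, q} E. crosses C D"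
  then obtain C D where C: "C \<in> insert {p, q} E" and D: "D \<in> insert {p, q} E" and cr: "crosses C D" by blast
  have noin: "\<And>y z x. y \<in> {p,q} \<Longrightarrow> z \<in> {p,q} \<Longrightarrow> y < x \<Longrightarrow> x < z \<Longrightarrow> p < x \<and> x < q"
    using pq by auto
  show False
  proof (cases "C = {p,q}")
    case True
    obtain x y z where "x \<in> D" "y \<in> C" "z \<in> C" "y < x" "x < z" using crosses_between(1)[OF cr] by blast
    then have px: "p < x \<and> x < q" using noin True by blast
    show False
    proof (cases "D = {p,q}")
      case True then show False using px \<open>x \<in> D\<close> by auto
    next
      case False then have "D \<in> E" using D by simp
      then show False using px \<open>x \<in> D\<close> nb by blast
    qed
  next
    case False
    then have CE: "C \<in> E" using C by simp
    show False
    proof (cases "D = {p,q}")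
      case True
      obtain x y z where "x \<in> C" "y \<in> D" "z \<in> D" "y < x" "x < z" using crosses_between(2)[OF cr] by blast
      then have "p < x \<and> x < q" using noin True by blast
      then show False using \<open>x \<in> C\<close> CE nb by blast
    next
      case False then have "D \<in> E" using D by simp
      then show False using NI CE cr unfolding nonintersecting_def by blast
    qed
  qed
qed

lemma ncd_rel_lift:
  assumes "ncd_rel E M" "p < q" "p \<notin> \<Union>E" "q \<notin> \<Union>E" "\<forall>v\<in>\<Union>E. \<not> (p < v \<and> v < q)"
  shows "ncd_rel (insert {p,q} E) (image_mset (insert {p,q}) M)"
  using assms
proof (induction rule: ncd_rel.induct)
  case (base E)
  then show ?case using ncd_rel.base[OF nonint_insert_short[OF base.hyps base.prems(1) base.prems(4)]] by simp
next
  case (expand a c E b d M1 M2)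
  define s where "s = {p,q}"
  have ne: "s \<noteq> {a,c}" "s \<noteq> {b,d}" using expand.hyps(1,2) expand.prems(2,3) unfolding s_def by auto
  have u1: "\<Union>((E - {{a,c},{b,d}}) \<union> {{a,b},{c,d}}) = \<Union>E" using expand.hyps(1,2) by blast
  have u2: "\<Union>((E - {{a,c},{b,d}}) \<union> {{d,a},{b,c}}) = \<Union>E" using expand.hyps(1,2) by blast
  have r1: "ncd_rel (insert s ((E - {{a,c},{b,d}}) \<union> {{a,b},{c,d}})) (image_mset (insert s) M1)"
    using expand.IH(1) expand.prems unfolding u1 s_def by blast
  have r2: "ncd_rel (insert s ((E - {{a,c},{b,d}}) \<union> {{d,a},{b,c}})) (image_mset (insert s) M2)"
    using expand.IH(2) expand.prems unfolding u2 s_def by blast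
  have e1: "insert s ((E - {{a,c},{b,d}}) \<union> {{a,b},{c,d}}) = (insert s E - {{a,c},{b,d}}) \<union> {{a,b},{c,d}}"
    using ne by blast
  have e2: "insert s ((E - {{a,c},{b,d}}) \<union> {{d,a},{b,c}}) = (insert s E - {{a,c},{b,d}}) \<union> {{d,a},{b,c}}"
    using ne by blast
  have "ncd_rel (insert s E) (image_mset (insert s) M1 + image_mset (insert s) M2)"
    by (rule ncd_rel.expand[of a c "insert s E" b d]) (use expand.hyps(1-5) r1 r2 e1 e2 in auto)
  then show ?case unfolding s_def by simp
qed

definition cntk :: "(chord_diagram \<Rightarrow> nat) \<Rightarrow> nat \<Rightarrow> chord_diagram multiset \<Rightarrow> nat" where
  "cntk st k M = size (filter_mset (\<lambda>F. st F = k) M)"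

lemma cntk_single: "cntk st k {#E#} = (if st E = k then 1 else 0)"
  unfolding cntk_def by simp

lemma cntk_plus: "cntk st k (M1 + M2) = cntk st k M1 + cntk st k M2"
  unfolding cntk_def by simp

lemma cntk_lift:
  assumes "\<forall>F\<in>#M. st (f F) = Suc (st F)"
  shows "cntk st k (image_mset f M) = (if k = 0 then 0 else cntk st (k - 1) M)"
proof -
  have "cntk st k (image_mset f M) = size (filter_mset (\<lambda>F. st (f F) = k) M)"
    unfolding cntk_def filter_mset_image_mset by simp
  also have "filter_mset (\<lambda>F. st (f F) = k) M = filter_mset (\<lambda>F. k \<noteq> 0 \<and> st F = k - 1) M"
    using assms by (intro filter_mset_cong) auto
  finally show ?thesis unfolding cntk_def by (cases "k = 0") auto
qed

lemma ncd_rel_finite: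
  assumes "ncd_rel E M" "finite E" "\<forall>C\<in>E. finite C" "F \<in># M"
  shows "finite F"
proof -
  have U: "\<Union>F = \<Union>E" using ncd_rel_union[OF assms(1,4)] .
  have "finite (\<Union>E)" using assms(2,3) by blast
  then have "finite (Pow (\<Union>F))" using U by simp
  moreover have "F \<subseteq> Pow (\<Union>F)" by blast
  ultimately show ?thesis by (rule finite_subset[rotated])
qed

lemma lift_count:
  assumes R: "ncd_rel E M" and fin: "finite E" "\<forall>C\<in>E. finite C"
    and pq: "p < q" "p \<notin> \<Union>E" "q \<notin> \<Union>E" "\<forall>v\<in>\<Union>E. \<not> (p < v \<and> v < q)"
    and st: "\<And>F. finite F \<Longrightarrow> {p,q} \<notin> F \<Longrightarrow> st (insert {p,q} F) = Suc (st F)"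
  shows "ncd_rel (insert {p,q} E) (image_mset (insert {p,q}) M)"
        "cntk st k (image_mset (insert {p,q}) M) = (if k = 0 then 0 else cntk st (k - 1) M)"
proof -
  show "ncd_rel (insert {p,q} E) (image_mset (insert {p,q}) M)" by (rule ncd_rel_lift[OF R pq])
  have "\<forall>F\<in>#M. st (insert {p,q} F) = Suc (st F)"
  proof
    fix F assume F: "F \<in># M"
    have "finite F" by (rule ncd_rel_finite[OF R fin F])
    moreover have "{p,q} \<notin> F"
    proof
      assume "{p,q} \<in> F"
      then have "p \<in> \<Union>F" by blast
      then show False using ncd_rel_union[OF R F] pq(2) by simp
    qed
    ultimately show "st (insert {p,q} F) = Suc (st F)" by (rule st)
  qed
  then show "cntk st k (image_mset (insert {p,q}) M) = (if k = 0 then 0 else cntk st (k - 1) M)"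
    by (rule cntk_lift)
qed

lemma e_count_insert:
  assumes "finite F" "s \<notin> F"
  shows "e_count (insert s F) U = e_count F U + (if s \<subseteq> U then 1 else 0)"
proof -
  have "{C \<in> insert s F. C \<subseteq> U} = (if s \<subseteq> U then insert s {C \<in> F. C \<subseteq> U} else {C \<in> F. C \<subseteq> U})" by auto
  then show ?thesis unfolding e_count_def using assms by simp
qed

definition cells :: "(nat \<Rightarrow> nat) \<Rightarrow> nat \<Rightarrow> nat \<Rightarrow> nat set \<Rightarrow> (nat \<times> nat) set" where
  "cells a i j D = {(r,c). 1 \<le> r \<and> r < i \<and> 1 \<le> c \<and> c \<le> a r \<and> c \<notin> D} \<union> {(r,c). r = i \<and> 1 \<le> i \<and> j < c \<and> c \<le> a i \<and> c \<notin> D}"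

definition YS :: "(nat \<Rightarrow> nat) \<Rightarrow> (nat \<Rightarrow> nat) \<Rightarrow> nat \<Rightarrow> nat \<Rightarrow> nat \<Rightarrow> nat set \<Rightarrow> nat \<Rightarrow> (nat \<times> nat \<Rightarrow> bool) set" where
  "YS a \<epsilon> i j \<sigma> D k = {M. (\<forall>p. M p \<longrightarrow> p \<in> cells a i j D) \<and> (\<forall>c. card {r. M (r,c)} \<le> 1) \<and>
      (\<forall>r. 1 \<le> r \<and> r < i \<longrightarrow> card {c. M (r,c)} mod 2 = \<epsilon> r mod 2) \<and>
      (1 \<le> i \<longrightarrow> card {c. M (i,c)} mod 2 = (\<epsilon> i + \<sigma>) mod 2) \<and> card {p. M p} = k}"

definition GY :: "(nat \<Rightarrow> nat) \<Rightarrow> (nat \<Rightarrow> nat) \<Rightarrow> nat \<Rightarrow> nat \<Rightarrow> nat \<Rightarrow> nat set \<Rightarrow> nat \<Rightarrow> nat" where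
  "GY a \<epsilon> i j \<sigma> D k = card (YS a \<epsilon> i j \<sigma> D k)"

lemma finite_cells: "finite (cells a i j D)"
proof -
  have "cells a i j D \<subseteq> (SIGMA r:{..i}. {..a r})" unfolding cells_def by auto
  moreover have "finite (SIGMA r:{..i}. {..a r})" by (rule finite_SigmaI) auto
  ultimately show ?thesis by (rule finite_subset)
qed

lemma finite_supp_funs:
  assumes "finite S"
  shows "finite {M :: 'a \<Rightarrow> bool. \<forall>p. M p \<longrightarrow> p \<in> S}"
proof -
  have "{M :: 'a \<Rightarrow> bool. \<forall>p. M p \<longrightarrow> p \<in> S} = (\<lambda>T p. p \<in> T) ` Pow S"
  proof
    show "{M. \<forall>p. M p \<longrightarrow> p \<in> S} \<subseteq> (\<lambda>T p. p \<in> T) ` Pow S"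
    proof
      fix M :: "'a \<Rightarrow> bool" assume "M \<in> {M. \<forall>p. M p \<longrightarrow> p \<in> S}"
      then have "{p. M p} \<in> Pow S" "M = (\<lambda>p. p \<in> {p. M p})" by auto
      then show "M \<in> (\<lambda>T p. p \<in> T) ` Pow S" by blast
    qed
  qed auto
  then show ?thesis using assms by simp
qed

lemma finite_YS: "finite (YS a \<epsilon> i j \<sigma> D k)"
proof -
  have "YS a \<epsilon> i j \<sigma> D k \<subseteq> {M. \<forall>p. M p \<longrightarrow> p \<in> cells a i j D}" unfolding YS_def by blast
  then show ?thesis using finite_supp_funs[OF finite_cells] by (rule finite_subset)
qed

lemma supp_finite:
  assumes "\<forall>p. M p \<longrightarrow> p \<in> cells a i j D"
  shows "finite {p. M p}" "finite {r. M (r,c)}" "finite {c. M (r,c)}"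
proof -
  show f: "finite {p. M p}" using assms finite_cells[of a i j D] by (metis finite_subset mem_Collect_eq subsetI)
  have "{r. M (r,c)} \<subseteq> fst ` {p. M p}" by force
  then show "finite {r. M (r,c)}" using f by (meson finite_imageI finite_subset)
  have "{c. M (r,c)} \<subseteq> snd ` {p. M p}" by force
  then show "finite {c. M (r,c)}" using f by (meson finite_imageI finite_subset)
qed

lemma GY_zero: "GY a \<epsilon> 0 j \<sigma> D k = (if k = 0 then 1 else 0)"
proof -
  have c: "cells a 0 j D = {}" unfolding cells_def by auto
  have "YS a \<epsilon> 0 j \<sigma> D k = (if k = 0 then {\<lambda>_. False} else {})"
  proof (cases "k = 0")
    case True
    have "YS a \<epsilon> 0 j \<sigma> D k = {\<lambda>_. False}"
    proof
      show "YS a \<epsilon> 0 j \<sigma> D k \<subseteq> {\<lambda>_. False}" unfolding YS_def c by auto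
      show "{\<lambda>_. False} \<subseteq> YS a \<epsilon> 0 j \<sigma> D k" unfolding YS_def c using True by auto
    qed
    then show ?thesis using True by simp
  next
    case False
    have "YS a \<epsilon> 0 j \<sigma> D k = {}"
    proof (rule equals0I)
      fix M assume "M \<in> YS a \<epsilon> 0 j \<sigma> D k"
      then have h: "\<forall>p. \<not> M p" "card {p. M p} = k" unfolding YS_def c by blast+
      then have e: "{p. M p} = {}" by blast
      have "card {p. M p} = 0" unfolding e by (rule card.empty)
      then show False using h(2) False by simp
    qed
    then show ?thesis using False by simp
  qed
  then show ?thesis unfolding GY_def by simp
qed

lemma par1: "x mod 2 = (e + s) mod 2 \<Longrightarrow> x \<noteq> 0 \<Longrightarrow> s \<le> 1 \<Longrightarrow> (x - 1) mod 2 = (e + (1 - s)) mod 2" for x e s :: nat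
  by (cases x; cases s) (auto simp: mod_Suc split: if_splits)
lemma par2: "x mod 2 = (e + (1 - s)) mod 2 \<Longrightarrow> s \<le> 1 \<Longrightarrow> Suc x mod 2 = (e + s) mod 2" for x e s :: nat
  by (cases s) (auto simp: mod_Suc split: if_splits)

lemma YS_mem: "M \<in> YS a \<epsilon> i j \<sigma> D k \<longleftrightarrow> (\<forall>p. M p \<longrightarrow> p \<in> cells a i j D) \<and> (\<forall>c. card {r. M (r,c)} \<le> 1) \<and>
      (\<forall>r. 1 \<le> r \<and> r < i \<longrightarrow> card {c. M (r,c)} mod 2 = \<epsilon> r mod 2) \<and>
      (1 \<le> i \<longrightarrow> card {c. M (i,c)} mod 2 = (\<epsilon> i + \<sigma>) mod 2) \<and> card {p. M p} = k"
  unfolding YS_def by simp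

lemma col_uniq:
  assumes "\<forall>p. M p \<longrightarrow> p \<in> cells a i j D" "card {r. M (r,c)} \<le> 1" "M (r1,c)" "M (r2,c)"
  shows "r1 = r2"
proof -
  have "finite {r. M (r,c)}" using supp_finite(2)[OF assms(1)] .
  then show ?thesis using assms(2-4) card_le_Suc0_iff_eq[of "{r. M (r,c)}"] by auto
qed

lemma cells_mem: "(r,c) \<in> cells a i j D \<longleftrightarrow> (1 \<le> r \<and> r < i \<and> 1 \<le> c \<and> c \<le> a r \<and> c \<notin> D) \<or> (r = i \<and> 1 \<le> i \<and> j < c \<and> c \<le> a i \<and> c \<notin> D)"
  unfolding cells_def by auto

lemma GY_step:
  assumes i: "1 \<le> i" and c0P: "j < c0" "c0 < a i" "c0 \<notin> D"
    and c0min: "\<forall>c. j < c \<and> c < a i \<and> c \<notin> D \<longrightarrow> c0 \<le> c" and \<sigma>: "\<sigma> \<le> 1"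
  shows "GY a \<epsilon> i j \<sigma> D k = GY a \<epsilon> i c0 \<sigma> D k + (if k = 0 then 0 else GY a \<epsilon> i c0 (1 - \<sigma>) (D \<union> {c0}) (k - 1))"
proof -
  define Y where "Y = YS a \<epsilon> i j \<sigma> D k"
  define Y0 where "Y0 = {M\<in>Y. \<not> M (i,c0)}"
  define Y1 where "Y1 = {M\<in>Y. M (i,c0)}"
  have finY: "finite Y" unfolding Y_def by (rule finite_YS)
  have split: "card Y = card Y0 + card Y1"
  proof -
    have "Y = Y0 \<union> Y1" "Y0 \<inter> Y1 = {}" unfolding Y0_def Y1_def by auto
    moreover have "finite Y0" "finite Y1" using finY unfolding Y0_def Y1_def by auto
    ultimately show ?thesis by (simp add: card_Un_disjoint)
  qed
  have Y0eq: "Y0 = YS a \<epsilon> i c0 \<sigma> D k"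
  proof
    show "Y0 \<subseteq> YS a \<epsilon> i c0 \<sigma> D k"
    proof
      fix M assume "M \<in> Y0"
      then have M: "M \<in> YS a \<epsilon> i j \<sigma> D k" "\<not> M (i,c0)" unfolding Y0_def Y_def by auto
      have "\<forall>p. M p \<longrightarrow> p \<in> cells a i c0 D"
      proof (intro allI impI)
        fix p assume Mp: "M p"
        obtain r c where p: "p = (r,c)" by fastforce
        have "p \<in> cells a i j D" using M(1) Mp unfolding YS_mem by blast
        then have h: "(1 \<le> r \<and> r < i \<and> 1 \<le> c \<and> c \<le> a r \<and> c \<notin> D) \<or> (r = i \<and> 1 \<le> i \<and> j < c \<and> c \<le> a i \<and> c \<notin> D)"
          unfolding p cells_mem .
        have "r = i \<Longrightarrow> c0 < c"
        proof -
          assume ri: "r = i"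
          have "c \<noteq> c0"
          proof
            assume "c = c0"
            then have "M (i, c0)" using Mp p ri by simp
            then show False using M(2) by contradiction
          qed
          moreover have "\<not> c < c0"
          proof
            assume "c < c0"
            then have "j < c \<and> c < a i \<and> c \<notin> D" using h ri c0P(2) by auto
            then have "c0 \<le> c" using c0min by blast
            then show False using \<open>c < c0\<close> by simp
          qed
          ultimately show "c0 < c" by simp
        qed
        then show "p \<in> cells a i c0 D" using h unfolding p cells_mem by auto
      qed
      then show "M \<in> YS a \<epsilon> i c0 \<sigma> D k" using M(1) unfolding YS_mem by blast
    qed
    show "YS a \<epsilon> i c0 \<sigma> D k \<subseteq> Y0"
    proof
      fix M assume M: "M \<in> YS a \<epsilon> i c0 \<sigma> D k"
      have sub: "cells a i c0 D \<subseteq> cells a i j D" unfolding cells_def using c0P by auto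
      have "(i,c0) \<notin> cells a i c0 D" unfolding cells_mem by auto
      then have "\<not> M (i,c0)" using M unfolding YS_mem by blast
      moreover have "M \<in> Y" using M sub unfolding Y_def YS_mem by blast
      ultimately show "M \<in> Y0" unfolding Y0_def by simp
    qed
  qed
  have Y1card: "card Y1 = (if k = 0 then 0 else GY a \<epsilon> i c0 (1 - \<sigma>) (D \<union> {c0}) (k - 1))"
  proof (cases "k = 0")
    case True
    have "Y1 = {}"
    proof (rule equals0I)
      fix M assume "M \<in> Y1"
      then have M: "M \<in> YS a \<epsilon> i j \<sigma> D k" "M (i,c0)" unfolding Y1_def Y_def by auto
      have fin: "finite {p. M p}" using M(1) supp_finite(1) unfolding YS_mem by blast
      have "(i,c0) \<in> {p. M p}" using M(2) by simp
      then have "card {p. M p} \<noteq> 0" using fin by auto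
      then show False using M(1) True unfolding YS_mem by simp
    qed
    then show ?thesis using True by simp
  next
    case False
    define Z where "Z = YS a \<epsilon> i c0 (1 - \<sigma>) (D \<union> {c0}) (k - 1)"
    have "bij_betw (\<lambda>M. M((i,c0) := False)) Y1 Z"
    proof (rule bij_betw_byWitness[where f' = "\<lambda>M. M((i,c0) := True)"])
      show "\<forall>M\<in>Y1. (M((i,c0) := False))((i,c0) := True) = M" unfolding Y1_def by (auto simp: fun_upd_idem_iff)
      show "\<forall>M\<in>Z. (M((i,c0) := True))((i,c0) := False) = M"
      proof
        fix M assume "M \<in> Z"
        moreover have "(i,c0) \<notin> cells a i c0 (D \<union> {c0})" unfolding cells_mem by auto
        ultimately have "\<not> M (i,c0)" unfolding Z_def YS_mem by blast
        then show "(M((i,c0) := True))((i,c0) := False) = M" by (auto simp: fun_upd_idem_iff)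
      qed
      show "(\<lambda>M. M((i,c0) := False)) ` Y1 \<subseteq> Z"
      proof
        fix M' assume "M' \<in> (\<lambda>M. M((i,c0) := False)) ` Y1"
        then obtain M where MY: "M \<in> Y1" and M'def: "M' = M((i,c0) := False)" by blast
        have M: "M \<in> YS a \<epsilon> i j \<sigma> D k" "M (i,c0)" using MY unfolding Y1_def Y_def by auto
        have supp: "\<forall>p. M p \<longrightarrow> p \<in> cells a i j D" and col: "\<forall>c. card {r. M (r,c)} \<le> 1"
          and rows: "\<forall>r. 1 \<le> r \<and> r < i \<longrightarrow> card {c. M (r,c)} mod 2 = \<epsilon> r mod 2"
          and rowi: "card {c. M (i,c)} mod 2 = (\<epsilon> i + \<sigma>) mod 2" and tot: "card {p. M p} = k"
          using M(1) i unfolding YS_mem by auto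
        have s1: "\<forall>p. M' p \<longrightarrow> p \<in> cells a i c0 (D \<union> {c0})"
        proof (intro allI impI)
          fix p assume Mp: "M' p"
          obtain r c where p: "p = (r,c)" by fastforce
          have Mp': "M (r,c)" "(r,c) \<noteq> (i,c0)" using Mp unfolding M'def p by (auto split: if_splits)
          have h: "(1 \<le> r \<and> r < i \<and> 1 \<le> c \<and> c \<le> a r \<and> c \<notin> D) \<or> (r = i \<and> 1 \<le> i \<and> j < c \<and> c \<le> a i \<and> c \<notin> D)"
          proof -
            have "(r,c) \<in> cells a i j D" using supp Mp'(1) by blast
            then show ?thesis unfolding cells_mem .
          qed
          show "p \<in> cells a i c0 (D \<union> {c0})"
          proof (cases "r = i")
            case True
            have "c \<noteq> c0" using Mp' True by simp
            moreover have "\<not> c < c0"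
            proof
              assume "c < c0"
              then have "j < c \<and> c < a i \<and> c \<notin> D" using h True c0P(2) by auto
              then have "c0 \<le> c" using c0min by blast
              then show False using \<open>c < c0\<close> by simp
            qed
            ultimately show ?thesis using h True unfolding p cells_mem by auto
          next
            case False
            have "c \<noteq> c0"
            proof
              assume "c = c0"
              then have "M (r, c0)" using Mp'(1) by simp
              then have "r = i" using col_uniq[OF supp col[rule_format, of c0] _ M(2)] by blast
              then show False using False by simp
            qed
            then show ?thesis using h False unfolding p cells_mem by auto
          qed
        qed
        have s2: "\<forall>c. card {r. M' (r,c)} \<le> 1"
        proof
          fix c
          have "{r. M' (r,c)} \<subseteq> {r. M (r,c)}" unfolding M'def by auto
          then have "card {r. M' (r,c)} \<le> card {r. M (r,c)}" using supp_finite(2)[OF supp] by (rule card_mono[rotated])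
          then show "card {r. M' (r,c)} \<le> 1" using col by (meson le_trans)
        qed
        have s3: "\<forall>r. 1 \<le> r \<and> r < i \<longrightarrow> card {c. M' (r,c)} mod 2 = \<epsilon> r mod 2"
        proof (intro allI impI)
          fix r assume r: "1 \<le> r \<and> r < i"
          have "{c. M' (r,c)} = {c. M (r,c)}" unfolding M'def using r by auto
          then show "card {c. M' (r,c)} mod 2 = \<epsilon> r mod 2" using rows r by simp
        qed
        have s4: "card {c. M' (i,c)} mod 2 = (\<epsilon> i + (1 - \<sigma>)) mod 2"
        proof -
          have e: "{c. M' (i,c)} = {c. M (i,c)} - {c0}" unfolding M'def by auto
          have c0in: "c0 \<in> {c. M (i,c)}" using M(2) by simp
          have fin: "finite {c. M (i,c)}" using supp_finite(3)[OF supp, of i] .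
          have "card {c. M' (i,c)} = card {c. M (i,c)} - 1" unfolding e using card_Diff_singleton[OF c0in] .
          moreover have "card {c. M (i,c)} \<noteq> 0" using fin c0in by auto
          ultimately show ?thesis using par1[OF rowi _ \<sigma>] by simp
        qed
        have s5: "card {p. M' p} = k - 1"
        proof -
          have e: "{p. M' p} = {p. M p} - {(i,c0)}" unfolding M'def by auto
          have "(i,c0) \<in> {p. M p}" using M(2) by simp
          then show ?thesis unfolding e using supp_finite(1)[OF supp] tot by simp
        qed
        show "M' \<in> Z" unfolding Z_def YS_mem using s1 s2 s3 s4 s5 by blast
      qed
      show "(\<lambda>M. M((i,c0) := True)) ` Z \<subseteq> Y1"
      proof
        fix M' assume "M' \<in> (\<lambda>M. M((i,c0) := True)) ` Z"
        then obtain M where MZ: "M \<in> Z" and M'def: "M' = M((i,c0) := True)" by blast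
        have supp: "\<forall>p. M p \<longrightarrow> p \<in> cells a i c0 (D \<union> {c0})" and col: "\<forall>c. card {r. M (r,c)} \<le> 1"
          and rows: "\<forall>r. 1 \<le> r \<and> r < i \<longrightarrow> card {c. M (r,c)} mod 2 = \<epsilon> r mod 2"
          and rowi: "card {c. M (i,c)} mod 2 = (\<epsilon> i + (1 - \<sigma>)) mod 2" and tot: "card {p. M p} = k - 1"
          using MZ i unfolding Z_def YS_mem by auto
        have nc0: "\<And>r. \<not> M (r,c0)"
        proof
          fix r assume "M (r,c0)"
          then have "(r,c0) \<in> cells a i c0 (D \<union> {c0})" using supp by blast
          then show False unfolding cells_mem by auto
        qed
        have s1: "\<forall>p. M' p \<longrightarrow> p \<in> cells a i j D"
        proof (intro allI impI)
          fix p assume Mp: "M' p"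
          obtain r c where p: "p = (r,c)" by fastforce
          show "p \<in> cells a i j D"
          proof (cases "p = (i,c0)")
            case True
            have "(i,c0) \<in> cells a i j D" unfolding cells_mem using i c0P by simp
            then show ?thesis using True by simp
          next
            case False
            then have "M (r,c)" using Mp unfolding M'def p by auto
            then have "(r,c) \<in> cells a i c0 (D \<union> {c0})" using supp by blast
            then show ?thesis unfolding p cells_mem using c0P by auto
          qed
        qed
        have s2: "\<forall>c. card {r. M' (r,c)} \<le> 1"
        proof
          fix c
          show "card {r. M' (r,c)} \<le> 1"
          proof (cases "c = c0")
            case True
            have "{r. M' (r,c)} = {i}" unfolding M'def True using nc0 by auto
            then show ?thesis by simp
          next
            case False
            have "{r. M' (r,c)} = {r. M (r,c)}" unfolding M'def using False by auto
            then show ?thesis using col by simp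
          qed
        qed
        have s3: "\<forall>r. 1 \<le> r \<and> r < i \<longrightarrow> card {c. M' (r,c)} mod 2 = \<epsilon> r mod 2"
        proof (intro allI impI)
          fix r assume r: "1 \<le> r \<and> r < i"
          have "{c. M' (r,c)} = {c. M (r,c)}" unfolding M'def using r by auto
          then show "card {c. M' (r,c)} mod 2 = \<epsilon> r mod 2" using rows r by simp
        qed
        have s4: "card {c. M' (i,c)} mod 2 = (\<epsilon> i + \<sigma>) mod 2"
        proof -
          have e: "{c. M' (i,c)} = insert c0 {c. M (i,c)}" unfolding M'def by auto
          have "c0 \<notin> {c. M (i,c)}" using nc0 by simp
          then have "card {c. M' (i,c)} = Suc (card {c. M (i,c)})"
            unfolding e using supp_finite(3)[OF supp, of i] by simp
          then show ?thesis using par2[OF rowi \<sigma>] by simp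
        qed
        have s5: "card {p. M' p} = k"
        proof -
          have e: "{p. M' p} = insert (i,c0) {p. M p}" unfolding M'def by auto
          have "(i,c0) \<notin> {p. M p}" using nc0 by simp
          then show ?thesis unfolding e using supp_finite(1)[OF supp] tot False by simp
        qed
        have "M' \<in> Y" unfolding Y_def YS_mem using s1 s2 s3 s4 s5 by blast
        moreover have "M' (i,c0)" unfolding M'def by simp
        ultimately show "M' \<in> Y1" unfolding Y1_def by simp
      qed
    qed
    then have "card Y1 = card Z" by (rule bij_betw_same_card)
    then show ?thesis using False unfolding Z_def GY_def by simp
  qed
  show ?thesis unfolding GY_def using split Y0eq Y1card unfolding Y_def GY_def by simp
qed


lemma cells_prev:
  assumes "1 \<le> i"
  shows "(r,c) \<in> cells a (i - 1) 0 D \<longleftrightarrow> 1 \<le> r \<and> r < i \<and> 1 \<le> c \<and> c \<le> a r \<and> c \<notin> D"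
proof -
  have "r < i \<and> \<not> r < i - 1 \<longleftrightarrow> r = i - 1 \<and> r < i" using assms by auto
  then show ?thesis unfolding cells_mem using assms by (cases "r = i - 1") auto
qed

lemma YS_prev_mem:
  assumes "1 \<le> i"
  shows "M \<in> YS a \<epsilon> (i - 1) 0 0 D k \<longleftrightarrow>
    (\<forall>r c. M (r,c) \<longrightarrow> 1 \<le> r \<and> r < i \<and> 1 \<le> c \<and> c \<le> a r \<and> c \<notin> D) \<and> (\<forall>c. card {r. M (r,c)} \<le> 1) \<and>
    (\<forall>r. 1 \<le> r \<and> r < i \<longrightarrow> card {c. M (r,c)} mod 2 = \<epsilon> r mod 2) \<and> card {p. M p} = k"
proof -
  have sup: "(\<forall>p. M p \<longrightarrow> p \<in> cells a (i - 1) 0 D) \<longleftrightarrow> (\<forall>r c. M (r,c) \<longrightarrow> 1 \<le> r \<and> r < i \<and> 1 \<le> c \<and> c \<le> a r \<and> c \<notin> D)"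
    using cells_prev[OF assms] by auto
  have par: "((\<forall>r. 1 \<le> r \<and> r < i - 1 \<longrightarrow> card {c. M (r,c)} mod 2 = \<epsilon> r mod 2) \<and>
      (1 \<le> i - 1 \<longrightarrow> card {c. M (i - 1,c)} mod 2 = (\<epsilon> (i - 1) + 0) mod 2))
    \<longleftrightarrow> (\<forall>r. 1 \<le> r \<and> r < i \<longrightarrow> card {c. M (r,c)} mod 2 = \<epsilon> r mod 2)"
  proof
    assume h: "(\<forall>r. 1 \<le> r \<and> r < i - 1 \<longrightarrow> card {c. M (r,c)} mod 2 = \<epsilon> r mod 2) \<and>
      (1 \<le> i - 1 \<longrightarrow> card {c. M (i - 1,c)} mod 2 = (\<epsilon> (i - 1) + 0) mod 2)"
    show "\<forall>r. 1 \<le> r \<and> r < i \<longrightarrow> card {c. M (r,c)} mod 2 = \<epsilon> r mod 2"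
    proof (intro allI impI)
      fix r assume r: "1 \<le> r \<and> r < i"
      show "card {c. M (r,c)} mod 2 = \<epsilon> r mod 2"
      proof (cases "r = i - 1")
        case True then show ?thesis using h r by simp
      next
        case False
        then have "r < i - 1" using r by auto
        then show ?thesis using h r by blast
      qed
    qed
  next
    assume h: "\<forall>r. 1 \<le> r \<and> r < i \<longrightarrow> card {c. M (r,c)} mod 2 = \<epsilon> r mod 2"
    then show "(\<forall>r. 1 \<le> r \<and> r < i - 1 \<longrightarrow> card {c. M (r,c)} mod 2 = \<epsilon> r mod 2) \<and>
      (1 \<le> i - 1 \<longrightarrow> card {c. M (i - 1,c)} mod 2 = (\<epsilon> (i - 1) + 0) mod 2)"
    proof (intro conjI allI impI)
      fix r assume "1 \<le> r \<and> r < i - 1"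
      then show "card {c. M (r,c)} mod 2 = \<epsilon> r mod 2" using h by auto
    next
      assume "1 \<le> i - 1"
      then show "card {c. M (i - 1,c)} mod 2 = (\<epsilon> (i - 1) + 0) mod 2" using h by auto
    qed
  qed
  show ?thesis unfolding YS_mem sup par[symmetric] by blast
qed

lemma GY_end:
  assumes i: "1 \<le> i" and P: "\<forall>c. j < c \<and> c < a i \<longrightarrow> c \<in> D" and j: "j < a i" and aD: "a i \<notin> D" and \<sigma>: "\<sigma> \<le> 1"
  shows "GY a \<epsilon> i j \<sigma> D k = (if (\<epsilon> i + \<sigma>) mod 2 = 1 then (if k = 0 then 0 else GY a \<epsilon> (i - 1) 0 0 (D \<union> {a i}) (k - 1)) else GY a \<epsilon> (i - 1) 0 0 D k)"
proof -
  define Y where "Y = YS a \<epsilon> i j \<sigma> D k"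
  have rowi: "\<And>M c. M \<in> Y \<Longrightarrow> M (i,c) \<Longrightarrow> c = a i"
  proof -
    fix M c assume M: "M \<in> Y" and Mc: "M (i,c)"
    have "(i,c) \<in> cells a i j D" using M Mc unfolding Y_def YS_mem by blast
    then have h: "j < c" "c \<le> a i" "c \<notin> D" unfolding cells_mem by auto
    show "c = a i"
    proof (rule ccontr)
      assume "c \<noteq> a i"
      then have "c < a i" using h by simp
      then have "c \<in> D" using P h by blast
      then show False using h by simp
    qed
  qed
  have cardrow: "\<And>M. M \<in> Y \<Longrightarrow> card {c. M (i,c)} = (if M (i, a i) then 1 else 0)"
  proof -
    fix M assume M: "M \<in> Y"
    show "card {c. M (i,c)} = (if M (i, a i) then 1 else 0)"
    proof (cases "M (i, a i)")
      case True
      have "{c. M (i,c)} = {a i}"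
      proof
        show "{c. M (i,c)} \<subseteq> {a i}" using rowi[OF M] by blast
        show "{a i} \<subseteq> {c. M (i,c)}" using True by blast
      qed
      then show ?thesis using True by simp
    next
      case False
      have "{c. M (i,c)} = {}" using rowi[OF M] False by blast
      then show ?thesis using False by simp
    qed
  qed
  have parM: "\<And>M. M \<in> Y \<Longrightarrow> (if M (i, a i) then 1 else 0) mod 2 = (\<epsilon> i + \<sigma>) mod 2"
  proof -
    fix M assume M: "M \<in> Y"
    have "card {c. M (i,c)} mod 2 = (\<epsilon> i + \<sigma>) mod 2" using M i unfolding Y_def YS_mem by blast
    then show "(if M (i, a i) then 1 else 0) mod 2 = (\<epsilon> i + \<sigma>) mod 2" using cardrow[OF M] by simp
  qed
  show ?thesis
  proof (cases "(\<epsilon> i + \<sigma>) mod 2 = 1")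
    case odd: True
    have Mai: "\<And>M. M \<in> Y \<Longrightarrow> M (i, a i)"
    proof (rule ccontr)
      fix M assume "M \<in> Y" "\<not> M (i, a i)"
      then show False using parM[of M] odd by simp
    qed
    show ?thesis
    proof (cases "k = 0")
      case True
      have "Y = {}"
      proof (rule equals0I)
        fix M assume M: "M \<in> Y"
        have fin: "finite {p. M p}" using M supp_finite(1) unfolding Y_def YS_mem by blast
        have "(i, a i) \<in> {p. M p}" using Mai[OF M] by simp
        then have "card {p. M p} \<noteq> 0" using fin by auto
        then show False using M True unfolding Y_def YS_mem by simp
      qed
      then show ?thesis using odd True unfolding GY_def Y_def by simp
    next
      case False
      define Z where "Z = YS a \<epsilon> (i - 1) 0 0 (D \<union> {a i}) (k - 1)"
      have "bij_betw (\<lambda>M. M((i, a i) := False)) Y Z"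
      proof (rule bij_betw_byWitness[where f' = "\<lambda>M. M((i, a i) := True)"])
        show "\<forall>M\<in>Y. (M((i, a i) := False))((i, a i) := True) = M" using Mai by (auto simp: fun_upd_idem_iff)
        show "\<forall>M\<in>Z. (M((i, a i) := True))((i, a i) := False) = M"
        proof
          fix M assume "M \<in> Z"
          then have "\<not> M (i, a i)" unfolding Z_def YS_prev_mem[OF i] by blast
          then show "(M((i, a i) := True))((i, a i) := False) = M" by (auto simp: fun_upd_idem_iff)
        qed
        show "(\<lambda>M. M((i, a i) := False)) ` Y \<subseteq> Z"
        proof
          fix M' assume "M' \<in> (\<lambda>M. M((i, a i) := False)) ` Y"
          then obtain M where MY: "M \<in> Y" and M'def: "M' = M((i, a i) := False)" by blast
          have supp: "\<forall>p. M p \<longrightarrow> p \<in> cells a i j D" and col: "\<forall>c. card {r. M (r,c)} \<le> 1"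
            and rows: "\<forall>r. 1 \<le> r \<and> r < i \<longrightarrow> card {c. M (r,c)} mod 2 = \<epsilon> r mod 2"
            and tot: "card {p. M p} = k"
            using MY unfolding Y_def YS_mem by auto
          have Mi: "M (i, a i)" by (rule Mai[OF MY])
          have s1: "\<forall>r c. M' (r,c) \<longrightarrow> 1 \<le> r \<and> r < i \<and> 1 \<le> c \<and> c \<le> a r \<and> c \<notin> D \<union> {a i}"
          proof (intro allI impI)
            fix r c assume Mp: "M' (r,c)"
            have Mrc: "M (r,c)" "(r,c) \<noteq> (i, a i)" using Mp unfolding M'def by (auto split: if_splits)
            have "(r,c) \<in> cells a i j D" using supp Mrc(1) by blast
            then have h: "(1 \<le> r \<and> r < i \<and> 1 \<le> c \<and> c \<le> a r \<and> c \<notin> D) \<or> (r = i \<and> 1 \<le> i \<and> j < c \<and> c \<le> a i \<and> c \<notin> D)"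
              unfolding cells_mem .
            have ri: "r \<noteq> i"
            proof
              assume "r = i"
              then have "c = a i" using rowi[OF MY] Mrc(1) by blast
              then show False using Mrc(2) \<open>r = i\<close> by simp
            qed
            have "c \<noteq> a i"
            proof
              assume "c = a i"
              then have "M (r, a i)" using Mrc(1) by simp
              then have "r = i" using col_uniq[OF supp col[rule_format, of "a i"] _ Mi] by blast
              then show False using ri by simp
            qed
            then show "1 \<le> r \<and> r < i \<and> 1 \<le> c \<and> c \<le> a r \<and> c \<notin> D \<union> {a i}" using h ri by auto
          qed
          have s2: "\<forall>c. card {r. M' (r,c)} \<le> 1"
          proof
            fix c
            have "{r. M' (r,c)} \<subseteq> {r. M (r,c)}" unfolding M'def by auto
            then have "card {r. M' (r,c)} \<le> card {r. M (r,c)}" using supp_finite(2)[OF supp] by (rule card_mono[rotated])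
            then show "card {r. M' (r,c)} \<le> 1" using col by (meson le_trans)
          qed
          have s3: "\<forall>r. 1 \<le> r \<and> r < i \<longrightarrow> card {c. M' (r,c)} mod 2 = \<epsilon> r mod 2"
          proof (intro allI impI)
            fix r assume r: "1 \<le> r \<and> r < i"
            have "{c. M' (r,c)} = {c. M (r,c)}" unfolding M'def using r by auto
            then show "card {c. M' (r,c)} mod 2 = \<epsilon> r mod 2" using rows r by simp
          qed
          have s5: "card {p. M' p} = k - 1"
          proof -
            have e: "{p. M' p} = {p. M p} - {(i, a i)}" unfolding M'def by auto
            have "(i, a i) \<in> {p. M p}" using Mi by simp
            then show ?thesis unfolding e using supp_finite(1)[OF supp] tot by simp
          qed
          show "M' \<in> Z" unfolding Z_def YS_prev_mem[OF i] using s1 s2 s3 s5 by blast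
        qed
        show "(\<lambda>M. M((i, a i) := True)) ` Z \<subseteq> Y"
        proof
          fix M' assume "M' \<in> (\<lambda>M. M((i, a i) := True)) ` Z"
          then obtain M where MZ: "M \<in> Z" and M'def: "M' = M((i, a i) := True)" by blast
          have supp: "\<forall>r c. M (r,c) \<longrightarrow> 1 \<le> r \<and> r < i \<and> 1 \<le> c \<and> c \<le> a r \<and> c \<notin> D \<union> {a i}"
            and col: "\<forall>c. card {r. M (r,c)} \<le> 1"
            and rows: "\<forall>r. 1 \<le> r \<and> r < i \<longrightarrow> card {c. M (r,c)} mod 2 = \<epsilon> r mod 2"
            and tot: "card {p. M p} = k - 1"
            using MZ unfolding Z_def YS_prev_mem[OF i] by auto
          have nai: "\<And>r. \<not> M (r, a i)" using supp by blast
          have nri: "\<And>c. \<not> M (i, c)" using supp by blast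
          have supp0: "\<forall>p. M p \<longrightarrow> p \<in> cells a (i - 1) 0 (D \<union> {a i})"
            using supp cells_prev[OF i] by auto
          have s1: "\<forall>p. M' p \<longrightarrow> p \<in> cells a i j D"
          proof (intro allI impI)
            fix p assume Mp: "M' p"
            obtain r c where p: "p = (r,c)" by fastforce
            show "p \<in> cells a i j D"
            proof (cases "p = (i, a i)")
              case True
              have "(i, a i) \<in> cells a i j D" unfolding cells_mem using i j aD by simp
              then show ?thesis using True by simp
            next
              case False
              then have "M (r,c)" using Mp unfolding M'def p by auto
              then have "1 \<le> r \<and> r < i \<and> 1 \<le> c \<and> c \<le> a r \<and> c \<notin> D \<union> {a i}" using supp by blast
              then show ?thesis unfolding p cells_mem by auto
            qed
          qed
          have s2: "\<forall>c. card {r. M' (r,c)} \<le> 1"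
          proof
            fix c
            show "card {r. M' (r,c)} \<le> 1"
            proof (cases "c = a i")
              case True
              have "{r. M' (r,c)} = {i}" unfolding M'def True using nai by auto
              then show ?thesis by simp
            next
              case False
              have "{r. M' (r,c)} = {r. M (r,c)}" unfolding M'def using False by auto
              then show ?thesis using col by simp
            qed
          qed
          have s3: "\<forall>r. 1 \<le> r \<and> r < i \<longrightarrow> card {c. M' (r,c)} mod 2 = \<epsilon> r mod 2"
          proof (intro allI impI)
            fix r assume r: "1 \<le> r \<and> r < i"
            have "{c. M' (r,c)} = {c. M (r,c)}" unfolding M'def using r by auto
            then show "card {c. M' (r,c)} mod 2 = \<epsilon> r mod 2" using rows r by simp
          qed
          have s4: "card {c. M' (i,c)} mod 2 = (\<epsilon> i + \<sigma>) mod 2"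
          proof -
            have "{c. M' (i,c)} = {a i}" unfolding M'def using nri by auto
            then show ?thesis using odd by simp
          qed
          have s5: "card {p. M' p} = k"
          proof -
            have e: "{p. M' p} = insert (i, a i) {p. M p}" unfolding M'def by auto
            have "(i, a i) \<notin> {p. M p}" using nai by simp
            then show ?thesis unfolding e using supp_finite(1)[OF supp0] tot False by simp
          qed
          show "M' \<in> Y" unfolding Y_def YS_mem using s1 s2 s3 s4 s5 i by blast
        qed
      qed
      then have "card Y = card Z" by (rule bij_betw_same_card)
      then show ?thesis using odd False unfolding Z_def GY_def Y_def by simp
    qed
  next
    case even: False
    have "Y = YS a \<epsilon> (i - 1) 0 0 D k"
    proof
      show "Y \<subseteq> YS a \<epsilon> (i - 1) 0 0 D k"
      proof
        fix M assume MY: "M \<in> Y"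
        have nMi: "\<not> M (i, a i)"
        proof
          assume "M (i, a i)"
          then show False using parM[OF MY] even by simp
        qed
        have nri: "\<And>c. \<not> M (i,c)" using rowi[OF MY] nMi by blast
        have supp: "\<forall>p. M p \<longrightarrow> p \<in> cells a i j D" and col: "\<forall>c. card {r. M (r,c)} \<le> 1"
          and rows: "\<forall>r. 1 \<le> r \<and> r < i \<longrightarrow> card {c. M (r,c)} mod 2 = \<epsilon> r mod 2"
          and tot: "card {p. M p} = k"
          using MY unfolding Y_def YS_mem by auto
        have s1: "\<forall>r c. M (r,c) \<longrightarrow> 1 \<le> r \<and> r < i \<and> 1 \<le> c \<and> c \<le> a r \<and> c \<notin> D"
        proof (intro allI impI)
          fix r c assume Mrc: "M (r,c)"
          have "(r,c) \<in> cells a i j D" using supp Mrc by blast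
          then have h: "(1 \<le> r \<and> r < i \<and> 1 \<le> c \<and> c \<le> a r \<and> c \<notin> D) \<or> (r = i \<and> 1 \<le> i \<and> j < c \<and> c \<le> a i \<and> c \<notin> D)"
            unfolding cells_mem .
          have "r \<noteq> i" using nri Mrc by blast
          then show "1 \<le> r \<and> r < i \<and> 1 \<le> c \<and> c \<le> a r \<and> c \<notin> D" using h by auto
        qed
        show "M \<in> YS a \<epsilon> (i - 1) 0 0 D k" unfolding YS_prev_mem[OF i] using s1 col rows tot by blast
      qed
      show "YS a \<epsilon> (i - 1) 0 0 D k \<subseteq> Y"
      proof
        fix M assume MZ: "M \<in> YS a \<epsilon> (i - 1) 0 0 D k"
        have supp: "\<forall>r c. M (r,c) \<longrightarrow> 1 \<le> r \<and> r < i \<and> 1 \<le> c \<and> c \<le> a r \<and> c \<notin> D"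
          and col: "\<forall>c. card {r. M (r,c)} \<le> 1"
          and rows: "\<forall>r. 1 \<le> r \<and> r < i \<longrightarrow> card {c. M (r,c)} mod 2 = \<epsilon> r mod 2"
          and tot: "card {p. M p} = k"
          using MZ unfolding YS_prev_mem[OF i] by auto
        have s1: "\<forall>p. M p \<longrightarrow> p \<in> cells a i j D"
        proof (intro allI impI)
          fix p assume Mp: "M p"
          obtain r c where p: "p = (r,c)" by fastforce
          have "1 \<le> r \<and> r < i \<and> 1 \<le> c \<and> c \<le> a r \<and> c \<notin> D" using supp Mp p by blast
          then show "p \<in> cells a i j D" unfolding p cells_mem by auto
        qed
        have e0: "{c. M (i,c)} = {}" using supp by blast
        have "(\<epsilon> i + \<sigma>) mod 2 = 0" using even by (simp add: mod2_eq_if split: if_splits)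
        then have s4: "card {c. M (i,c)} mod 2 = (\<epsilon> i + \<sigma>) mod 2" unfolding e0 by simp
        show "M \<in> Y" unfolding Y_def YS_mem using s1 col rows s4 tot by blast
      qed
    qed
    then show ?thesis using even unfolding GY_def Y_def by simp
  qed
qed

lemma crosses_pairs:
  assumes "p < q" "r < s" "crosses {p,q} {r,s}"
  shows "(p < r \<and> r < q \<and> q < s) \<or> (r < p \<and> p < s \<and> s < q)"
proof -
  obtain a b c d where abcd: "a < b" "b < c" "c < d" "({p,q} = {a, c} \<and> {r,s} = {b, d}) \<or> ({p,q} = {b, d} \<and> {r,s} = {a, c})"
    using assms(3) unfolding crosses_def by blast
  show ?thesis using abcd(4)
  proof
    assume h: "{p,q} = {a, c} \<and> {r,s} = {b, d}"
    then have "p = a" "q = c" "r = b" "s = d" using assms(1,2) abcd(1-3) by (auto simp: doubleton_eq_iff)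
    then show ?thesis using abcd(1-3) by simp
  next
    assume h: "{p,q} = {b, d} \<and> {r,s} = {a, c}"
    then have "p = b" "q = d" "r = a" "s = c" using assms(1,2) abcd(1-3) by (auto simp: doubleton_eq_iff)
    then show ?thesis using abcd(1-3) by simp
  qed
qed

definition Rb :: "nat set \<Rightarrow> (nat \<Rightarrow> nat) \<Rightarrow> (nat \<Rightarrow> nat) \<Rightarrow> chord_diagram" where
  "Rb C zp yp = {{zp c, yp c} | c. c \<in> C}"

lemma Rb_mem: "X \<in> Rb C zp yp \<longleftrightarrow> (\<exists>c\<in>C. X = {zp c, yp c})"
  unfolding Rb_def by blast

lemma nonint_Rb:
  assumes "\<forall>c\<in>C. \<forall>c'\<in>C. c < c' \<longrightarrow> zp c < zp c' \<and> yp c' < yp c" "\<forall>c\<in>C. zp c < yp c"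
  shows "nonintersecting (Rb C zp yp)"
  unfolding nonintersecting_def
proof (rule notI)
  assume "\<exists>X\<in>Rb C zp yp. \<exists>Y\<in>Rb C zp yp. crosses X Y"
  then obtain X Y where XY: "X \<in> Rb C zp yp" "Y \<in> Rb C zp yp" "crosses X Y" by blast
  obtain c where c1: "c \<in> C" "X = {zp c, yp c}" using XY(1) unfolding Rb_mem by blast
  obtain c' where c2: "c' \<in> C" "Y = {zp c', yp c'}" using XY(2) unfolding Rb_mem by blast
  have c: "c \<in> C" "c' \<in> C" using c1 c2 by auto
  have cr: "crosses {zp c, yp c} {zp c', yp c'}" using XY(3) c1 c2 by simp
  have l: "zp c < yp c" "zp c' < yp c'" using assms(2) c by auto
  have h: "(zp c < zp c' \<and> zp c' < yp c \<and> yp c < yp c') \<or> (zp c' < zp c \<and> zp c < yp c' \<and> yp c' < yp c)"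
    using crosses_pairs[OF l cr] .
  consider "c < c'" | "c = c'" | "c' < c" by fastforce
  then show False
  proof cases
    case 1 then show False using assms(1) c h by force
  next
    case 2 then show False using h by auto
  next
    case 3 then show False using assms(1) c h by force
  qed
qed


context
  fixes m n :: nat and a \<epsilon> :: "nat \<Rightarrow> nat"
  assumes m_pos: "0 < m" and a1: "a 1 = n" and adec: "\<And>i. 1 \<le> i \<Longrightarrow> i < m \<Longrightarrow> a (i+1) < a i"
      and am: "1 \<le> a m" and eps01: "\<And>i. i \<in> {1..m} \<Longrightarrow> \<epsilon> i \<in> {0,1}"
begin

lemma a_mono: "1 \<le> i \<Longrightarrow> i < k \<Longrightarrow> k \<le> m \<Longrightarrow> a k < a i"
proof (induction k)
  case 0 then show ?case by simp
next
  case (Suc k)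
  show ?case
  proof (cases "i = k")
    case True then show ?thesis using adec[of k] Suc.prems by simp
  next
    case False
    then have "a k < a i" using Suc by simp
    moreover have "a (k+1) < a k" using adec[of k] Suc.prems False by simp
    ultimately show ?thesis by simp
  qed
qed

lemma a_le_n: "1 \<le> i \<Longrightarrow> i \<le> m \<Longrightarrow> a i \<le> n"
  using a_mono[of 1 i] a1 by (cases "i = 1") auto

lemma a_ge1: "1 \<le> i \<Longrightarrow> i \<le> m \<Longrightarrow> 1 \<le> a i"
  using a_mono[of i m] am by (cases "i = m") auto

lemma a_inj: "1 \<le> i \<Longrightarrow> i \<le> m \<Longrightarrow> 1 \<le> k \<Longrightarrow> k \<le> m \<Longrightarrow> a i = a k \<Longrightarrow> i = k"
  using a_mono[of i k] a_mono[of k i] by (metis less_irrefl nat_neq_iff)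

definition wp :: "nat \<Rightarrow> nat" where "wp k = (if \<epsilon> k = 0 then m + 2*n + 1 - a k else m + a k)"

definition Cc :: "nat \<Rightarrow> nat set \<Rightarrow> nat set" where
  "Cc i D = {c. 1 \<le> c \<and> c \<le> n \<and> c \<notin> D \<and> c \<notin> a ` {1..i}}"

definition Pend :: "nat \<Rightarrow> chord_diagram" where
  "Pend i = {{k, wp k} | k. 1 \<le> k \<and> k < i}"

definition Dg :: "nat \<Rightarrow> nat \<Rightarrow> nat set \<Rightarrow> (nat \<Rightarrow> nat) \<Rightarrow> (nat \<Rightarrow> nat) \<Rightarrow> chord_diagram" where
  "Dg i u D zp yp = Pend i \<union> (if 1 \<le> i then {{u, wp i}} else {}) \<union> Rb (Cc i D) zp yp"

definition st :: "chord_diagram \<Rightarrow> nat" where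
  "st F = e_count F (Yset m n) + e_count F (Xset m n \<union> Zset m n)"

lemma XZ_eq: "Xset m n \<union> Zset m n = {1..m+n}"
proof -
  have "Xset m n = {1..m}" unfolding Xset_def xpt_def by simp
  moreover have "Zset m n = {m+1..m+n}"
  proof
    show "Zset m n \<subseteq> {m+1..m+n}" unfolding Zset_def zpt_def by auto
    show "{m+1..m+n} \<subseteq> Zset m n"
    proof
      fix x assume "x \<in> {m+1..m+n}"
      then have "x = m + (x - m)" "x - m \<in> {1..n}" by auto
      then show "x \<in> Zset m n" unfolding Zset_def zpt_def by blast
    qed
  qed
  ultimately show ?thesis by auto
qed

lemma Y_eq: "Yset m n = {m+n+1..m+2*n}"
proof
  show "Yset m n \<subseteq> {m+n+1..m+2*n}" unfolding Yset_def ypt_def by auto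
  show "{m+n+1..m+2*n} \<subseteq> Yset m n"
  proof
    fix x assume x: "x \<in> {m+n+1..m+2*n}"
    then have "x = m + 2*n + 1 - (m + 2*n + 1 - x)" "m + 2*n + 1 - x \<in> {1..n}" by auto
    then show "x \<in> Yset m n" unfolding Yset_def ypt_def by blast
  qed
qed

lemma st_insert:
  assumes "finite F" "s \<notin> F" "s \<noteq> {}" "s \<subseteq> {1..m+n} \<or> s \<subseteq> {m+n+1..m+2*n}"
  shows "st (insert s F) = Suc (st F)"
proof -
  have "\<not> (s \<subseteq> {1..m+n} \<and> s \<subseteq> {m+n+1..m+2*n})"
  proof
    assume h: "s \<subseteq> {1..m+n} \<and> s \<subseteq> {m+n+1..m+2*n}"
    obtain x where "x \<in> s" using assms(3) by blast
    then have "x \<le> m + n" "m + n + 1 \<le> x" using h by auto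
    then show False by simp
  qed
  then show ?thesis unfolding st_def XZ_eq Y_eq using e_count_insert[OF assms(1,2)] assms(4) by auto
qed

lemma st_Rb:
  assumes "\<forall>c\<in>C. zp c \<le> m + n \<and> m + n < yp c"
  shows "st (Rb C zp yp) = 0"
proof -
  have "{X \<in> Rb C zp yp. X \<subseteq> {m+n+1..m+2*n}} = {}" using assms unfolding Rb_mem by fastforce
  moreover have "{X \<in> Rb C zp yp. X \<subseteq> {1..m+n}} = {}" using assms unfolding Rb_mem by fastforce
  ultimately show ?thesis unfolding st_def XZ_eq Y_eq e_count_def by simp
qed


definition valid :: "nat \<Rightarrow> nat \<Rightarrow> nat \<Rightarrow> nat set \<Rightarrow> nat \<Rightarrow> (nat \<Rightarrow> nat) \<Rightarrow> (nat \<Rightarrow> nat) \<Rightarrow> bool" where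
 "valid i j \<sigma> D u zp yp \<longleftrightarrow>
   i \<le> m \<and> D \<subseteq> {1..n} \<and>
   (\<forall>c\<in>Cc i D. \<forall>c'\<in>Cc i D. c < c' \<longrightarrow> zp c < zp c' \<and> yp c' < yp c) \<and>
   (\<forall>c\<in>Cc i D. i \<le> zp c \<and> 1 \<le> zp c \<and> zp c \<le> m + n \<and> m + n < yp c \<and> yp c \<le> m + 2*n) \<and>
   (1 \<le> i \<longrightarrow> j < a i \<and> D \<subseteq> {..<a i} \<and> \<sigma> \<le> 1 \<and>
     (\<forall>c\<in>Cc i D. c < a i \<longrightarrow> zp c \<le> m + c \<and> m + 2*n + 1 - c \<le> yp c) \<and>
     (\<forall>c\<in>Cc i D. a i < c \<longrightarrow> zp c = m + c \<and> yp c = m + 2*n + 1 - c) \<and>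
     (\<sigma> = 0 \<longrightarrow> i \<le> u \<and> u < m + a i \<and> (\<forall>c\<in>Cc i D. (c \<le> j \<longrightarrow> zp c < u) \<and> (j < c \<longrightarrow> u < zp c))) \<and>
     (\<sigma> = 1 \<longrightarrow> m + 2*n + 1 - a i < u \<and> u \<le> m + 2*n \<and> (\<forall>c\<in>Cc i D. (c \<le> j \<longrightarrow> u < yp c) \<and> (j < c \<longrightarrow> yp c < u))))"

lemma Cc_mem: "c \<in> Cc i D \<longleftrightarrow> 1 \<le> c \<and> c \<le> n \<and> c \<notin> D \<and> (\<forall>k. 1 \<le> k \<and> k \<le> i \<longrightarrow> c \<noteq> a k)"
  unfolding Cc_def by auto

lemma Union_Pend: "x \<in> \<Union>(Pend i) \<longleftrightarrow> (\<exists>k. 1 \<le> k \<and> k < i \<and> (x = k \<or> x = wp k))"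
  unfolding Pend_def by blast

lemma Union_Rb: "x \<in> \<Union>(Rb C zp yp) \<longleftrightarrow> (\<exists>c\<in>C. x = zp c \<or> x = yp c)"
  unfolding Rb_def by blast

lemma Dg_pos: "1 \<le> i \<Longrightarrow> Dg i u D zp yp = Pend i \<union> {{u, wp i}} \<union> Rb (Cc i D) zp yp"
  unfolding Dg_def by simp

lemma Dg_zero: "Dg 0 u D zp yp = Rb (Cc 0 D) zp yp"
  unfolding Dg_def Pend_def by simp

lemma Pend_Suc: "1 \<le> i \<Longrightarrow> Pend i \<union> {{i, wp i}} = Pend (Suc i)"
  unfolding Pend_def by (auto simp: less_Suc_eq)

lemma Dg_prev: "1 \<le> i \<Longrightarrow> Dg (i - 1) (i - 1) D zp yp = Pend i \<union> Rb (Cc (i - 1) D) zp yp"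
proof -
  assume i: "1 \<le> i"
  show ?thesis
  proof (cases "i = 1")
    case True
    have "Pend 1 = {}" "Pend 0 = {}" unfolding Pend_def by auto
    then show ?thesis using True unfolding Dg_def by simp
  next
    case False
    then have "1 \<le> i - 1" using i by simp
    moreover have "Pend (i - 1) \<union> {{i - 1, wp (i - 1)}} = Pend i" using Pend_Suc[of "i - 1"] False i by simp
    ultimately show ?thesis unfolding Dg_def by auto
  qed
qed

lemma Rb_remove: "c0 \<in> C \<Longrightarrow> Rb C zp yp = insert {zp c0, yp c0} (Rb (C - {c0}) zp yp)"
  unfolding Rb_def by blast

lemma Rb_upd_zp: "c0 \<in> C \<Longrightarrow> Rb C (zp(c0 := v)) yp = insert {v, yp c0} (Rb (C - {c0}) zp yp)"
  unfolding Rb_def by auto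

lemma Rb_upd_yp: "c0 \<in> C \<Longrightarrow> Rb C zp (yp(c0 := v)) = insert {zp c0, v} (Rb (C - {c0}) zp yp)"
  unfolding Rb_def by auto

lemma Rb_upd2: "c0 \<notin> C \<Longrightarrow> Rb (insert c0 C) (zp(c0 := v)) (yp(c0 := w)) = insert {v, w} (Rb C zp yp)"
  unfolding Rb_def by auto

lemma eps_cases: "1 \<le> k \<Longrightarrow> k \<le> m \<Longrightarrow> \<epsilon> k = 0 \<or> \<epsilon> k = 1"
  using eps01[of k] by auto

lemma wp_A: "\<epsilon> k \<noteq> 0 \<Longrightarrow> wp k = m + a k" unfolding wp_def by simp
lemma wp_B: "\<epsilon> k = 0 \<Longrightarrow> wp k = m + 2*n + 1 - a k" unfolding wp_def by simp

lemma wp_range: "1 \<le> k \<Longrightarrow> k \<le> m \<Longrightarrow> (\<epsilon> k = 0 \<longrightarrow> m + n < wp k \<and> wp k \<le> m + 2*n) \<and> (\<epsilon> k \<noteq> 0 \<longrightarrow> m < wp k \<and> wp k \<le> m + n)"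
  using a_le_n[of k] a_ge1[of k] unfolding wp_def by auto

lemma Cc_ne_a: "c \<in> Cc i D \<Longrightarrow> 1 \<le> k \<Longrightarrow> k \<le> i \<Longrightarrow> c \<noteq> a k"
  unfolding Cc_mem by blast

lemma Cc_insert: "Cc i (insert c0 D) = Cc i D - {c0}"
  unfolding Cc_def by auto


lemma validD:
  assumes "valid i j \<sigma> D u zp yp" "1 \<le> i"
  shows "i \<le> m" "D \<subseteq> {1..n}"
    "\<And>c c'. c \<in> Cc i D \<Longrightarrow> c' \<in> Cc i D \<Longrightarrow> c < c' \<Longrightarrow> zp c < zp c' \<and> yp c' < yp c"
    "\<And>c. c \<in> Cc i D \<Longrightarrow> i \<le> zp c \<and> 1 \<le> zp c \<and> zp c \<le> m + n \<and> m + n < yp c \<and> yp c \<le> m + 2*n"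
    "j < a i" "D \<subseteq> {..<a i}" "\<sigma> \<le> 1"
    "\<And>c. c \<in> Cc i D \<Longrightarrow> c < a i \<Longrightarrow> zp c \<le> m + c \<and> m + 2*n + 1 - c \<le> yp c"
    "\<And>c. c \<in> Cc i D \<Longrightarrow> a i < c \<Longrightarrow> zp c = m + c \<and> yp c = m + 2*n + 1 - c"
    "\<sigma> = 0 \<Longrightarrow> i \<le> u \<and> u < m + a i"
    "\<And>c. \<sigma> = 0 \<Longrightarrow> c \<in> Cc i D \<Longrightarrow> (c \<le> j \<longrightarrow> zp c < u) \<and> (j < c \<longrightarrow> u < zp c)"
    "\<sigma> = 1 \<Longrightarrow> m + 2*n + 1 - a i < u \<and> u \<le> m + 2*n"
    "\<And>c. \<sigma> = 1 \<Longrightarrow> c \<in> Cc i D \<Longrightarrow> (c \<le> j \<longrightarrow> u < yp c) \<and> (j < c \<longrightarrow> yp c < u)"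
  using assms unfolding valid_def by blast+

lemma pend_facts:
  assumes "1 \<le> k" "k < i" "i \<le> m"
  shows "\<epsilon> k = 0 \<Longrightarrow> m + n < wp k \<and> wp k < m + 2*n + 1 - a i"
        "\<epsilon> k \<noteq> 0 \<Longrightarrow> m + a i < wp k \<and> wp k \<le> m + n"
proof -
  have aki: "a i < a k" using a_mono[of k i] assms by simp
  have akn: "a k \<le> n" using a_le_n[of k] assms by simp
  show "\<epsilon> k = 0 \<Longrightarrow> m + n < wp k \<and> wp k < m + 2*n + 1 - a i" using aki akn unfolding wp_def by simp arith
  show "\<epsilon> k \<noteq> 0 \<Longrightarrow> m + a i < wp k \<and> wp k \<le> m + n" using aki akn unfolding wp_def by simp
qed

lemma wpi_facts:
  assumes "1 \<le> i" "i \<le> m"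
  shows "\<epsilon> i = 0 \<Longrightarrow> wp i = m + 2*n + 1 - a i \<and> m + n < wp i \<and> wp i \<le> m + 2*n"
        "\<epsilon> i \<noteq> 0 \<Longrightarrow> wp i = m + a i \<and> m < wp i \<and> wp i \<le> m + n"
  using a_le_n[of i] a_ge1[of i] assms unfolding wp_def by auto

lemma c0_facts:
  assumes V: "valid i j \<sigma> D u zp yp" and i1: "1 \<le> i" and c0: "j < c0" "c0 < a i" "c0 \<notin> D"
    and c0min: "\<forall>c. j < c \<and> c < a i \<and> c \<notin> D \<longrightarrow> c0 \<le> c"
  shows "c0 \<in> Cc i D" "\<And>c. c \<in> Cc i D \<Longrightarrow> c < c0 \<Longrightarrow> c \<le> j" "\<And>c. c \<in> Cc i D \<Longrightarrow> j < c \<Longrightarrow> c0 \<le> c"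
proof -
  have im: "i \<le> m" using validD(1)[OF V i1] .
  have "a i \<le> n" using a_le_n[OF i1 im] .
  moreover have "\<And>k. 1 \<le> k \<Longrightarrow> k \<le> i \<Longrightarrow> c0 \<noteq> a k"
  proof -
    fix k assume k: "1 \<le> k" "k \<le> i"
    have "a i \<le> a k" using a_mono[of k i] k im by (cases "k = i") auto
    then show "c0 \<noteq> a k" using c0(2) by simp
  qed
  ultimately show "c0 \<in> Cc i D" unfolding Cc_mem using c0 by auto
  show "\<And>c. c \<in> Cc i D \<Longrightarrow> c < c0 \<Longrightarrow> c \<le> j"
  proof -
    fix c assume c: "c \<in> Cc i D" "c < c0"
    show "c \<le> j"
    proof (rule ccontr)
      assume "\<not> c \<le> j"
      then have "j < c \<and> c < a i \<and> c \<notin> D" using c c0(2) unfolding Cc_mem by auto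
      then have "c0 \<le> c" using c0min by blast
      then show False using c(2) by simp
    qed
  qed
  show "\<And>c. c \<in> Cc i D \<Longrightarrow> j < c \<Longrightarrow> c0 \<le> c"
  proof -
    fix c assume c: "c \<in> Cc i D" "j < c"
    show "c0 \<le> c"
    proof (rule ccontr)
      assume "\<not> c0 \<le> c"
      then have "j < c \<and> c < a i \<and> c \<notin> D" using c c0(2) unfolding Cc_mem by auto
      then have "c0 \<le> c" using c0min by blast
      then show False using \<open>\<not> c0 \<le> c\<close> by simp
    qed
  qed
qed


lemma validI_Z:
  assumes "1 \<le> i" "i \<le> m" "D \<subseteq> {1..n}"
    "\<forall>c\<in>Cc i D. \<forall>c'\<in>Cc i D. c < c' \<longrightarrow> zp c < zp c' \<and> yp c' < yp c"
    "\<forall>c\<in>Cc i D. i \<le> zp c \<and> 1 \<le> zp c \<and> zp c \<le> m + n \<and> m + n < yp c \<and> yp c \<le> m + 2*n"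
    "j < a i" "D \<subseteq> {..<a i}"
    "\<forall>c\<in>Cc i D. c < a i \<longrightarrow> zp c \<le> m + c \<and> m + 2*n + 1 - c \<le> yp c"
    "\<forall>c\<in>Cc i D. a i < c \<longrightarrow> zp c = m + c \<and> yp c = m + 2*n + 1 - c"
    "i \<le> u \<and> u < m + a i \<and> (\<forall>c\<in>Cc i D. (c \<le> j \<longrightarrow> zp c < u) \<and> (j < c \<longrightarrow> u < zp c))"
  shows "valid i j 0 D u zp yp"
  using assms unfolding valid_def by simp

lemma validI_Y:
  assumes "1 \<le> i" "i \<le> m" "D \<subseteq> {1..n}"
    "\<forall>c\<in>Cc i D. \<forall>c'\<in>Cc i D. c < c' \<longrightarrow> zp c < zp c' \<and> yp c' < yp c"
    "\<forall>c\<in>Cc i D. i \<le> zp c \<and> 1 \<le> zp c \<and> zp c \<le> m + n \<and> m + n < yp c \<and> yp c \<le> m + 2*n"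
    "j < a i" "D \<subseteq> {..<a i}"
    "\<forall>c\<in>Cc i D. c < a i \<longrightarrow> zp c \<le> m + c \<and> m + 2*n + 1 - c \<le> yp c"
    "\<forall>c\<in>Cc i D. a i < c \<longrightarrow> zp c = m + c \<and> yp c = m + 2*n + 1 - c"
    "m + 2*n + 1 - a i < u \<and> u \<le> m + 2*n \<and> (\<forall>c\<in>Cc i D. (c \<le> j \<longrightarrow> u < yp c) \<and> (j < c \<longrightarrow> yp c < u))"
  shows "valid i j 1 D u zp yp"
  using assms unfolding valid_def by simp

lemma validI_0:
  assumes "D \<subseteq> {1..n}"
    "\<forall>c\<in>Cc 0 D. \<forall>c'\<in>Cc 0 D. c < c' \<longrightarrow> zp c < zp c' \<and> yp c' < yp c"
    "\<forall>c\<in>Cc 0 D. 1 \<le> zp c \<and> zp c \<le> m + n \<and> m + n < yp c \<and> yp c \<le> m + 2*n"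
  shows "valid 0 j \<sigma> D u zp yp"
  using assms unfolding valid_def by simp

lemma Z_pass_valid:
  assumes V: "valid i j 0 D u zp yp" and i1: "1 \<le> i" and c0: "j < c0" "c0 < a i" "c0 \<notin> D"
    and c0min: "\<forall>c. j < c \<and> c < a i \<and> c \<notin> D \<longrightarrow> c0 \<le> c"
  shows "valid i c0 0 D (zp c0) (zp(c0 := u)) yp"
proof -
  note F = validD[OF V i1]
  note CF = c0_facts[OF V i1 c0 c0min]
  have c0C: "c0 \<in> Cc i D" by (rule CF(1))
  have u_lt: "u < zp c0" using F(11)[of c0] c0C c0(1) by simp
  have zb: "zp c0 \<le> m + c0" using F(8)[OF c0C c0(2)] by simp
  have ui: "i \<le> u" "u < m + a i" using F(10) by auto
  have an: "a i \<le> n" using a_le_n[OF i1 F(1)] .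
  have n1: "\<forall>c\<in>Cc i D. \<forall>c'\<in>Cc i D. c < c' \<longrightarrow> (zp(c0 := u)) c < (zp(c0 := u)) c' \<and> yp c' < yp c"
  proof (intro ballI impI)
    fix c c' assume c: "c \<in> Cc i D" and c': "c' \<in> Cc i D" and cc: "c < c'"
    have yy: "yp c' < yp c" using F(3)[OF c c' cc] by simp
    show "(zp(c0 := u)) c < (zp(c0 := u)) c' \<and> yp c' < yp c"
    proof (cases "c = c0")
      case True
      then have "j < c'" using c0(1) cc by simp
      then have "u < zp c'" using F(11)[OF _ c'] by simp
      then show ?thesis using True cc yy by simp
    next
      case False
      show ?thesis
      proof (cases "c' = c0")
        case True
        then have "c \<le> j" using CF(2)[OF c] cc by simp
        then have "zp c < u" using F(11)[OF _ c] by simp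
        then show ?thesis using True False yy by simp
      next
        case False2: False
        then show ?thesis using False F(3)[OF c c' cc] by simp
      qed
    qed
  qed
  have n2: "\<forall>c\<in>Cc i D. i \<le> (zp(c0 := u)) c \<and> 1 \<le> (zp(c0 := u)) c \<and> (zp(c0 := u)) c \<le> m + n \<and> m + n < yp c \<and> yp c \<le> m + 2*n"
  proof
    fix c assume c: "c \<in> Cc i D"
    show "i \<le> (zp(c0 := u)) c \<and> 1 \<le> (zp(c0 := u)) c \<and> (zp(c0 := u)) c \<le> m + n \<and> m + n < yp c \<and> yp c \<le> m + 2*n"
      using F(4)[OF c] ui i1 an by (cases "c = c0") auto
  qed
  have n3: "\<forall>c\<in>Cc i D. c < a i \<longrightarrow> (zp(c0 := u)) c \<le> m + c \<and> m + 2*n + 1 - c \<le> yp c"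
  proof (intro ballI impI)
    fix c assume c: "c \<in> Cc i D" and ca: "c < a i"
    show "(zp(c0 := u)) c \<le> m + c \<and> m + 2*n + 1 - c \<le> yp c"
      using F(8)[OF c ca] u_lt zb by (cases "c = c0") auto
  qed
  have n4: "\<forall>c\<in>Cc i D. a i < c \<longrightarrow> (zp(c0 := u)) c = m + c \<and> yp c = m + 2*n + 1 - c"
  proof (intro ballI impI)
    fix c assume c: "c \<in> Cc i D" and ca: "a i < c"
    have "c \<noteq> c0" using ca c0(2) by simp
    then show "(zp(c0 := u)) c = m + c \<and> yp c = m + 2*n + 1 - c" using F(9)[OF c ca] by simp
  qed
  have n5: "i \<le> zp c0 \<and> zp c0 < m + a i \<and> (\<forall>c\<in>Cc i D. (c \<le> c0 \<longrightarrow> (zp(c0 := u)) c < zp c0) \<and> (c0 < c \<longrightarrow> zp c0 < (zp(c0 := u)) c))"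
  proof (intro conjI ballI impI)
    show "i \<le> zp c0" using F(4)[OF c0C] by simp
    show "zp c0 < m + a i" using zb c0(2) by simp
  next
    fix c assume c: "c \<in> Cc i D" and cc: "c \<le> c0"
    show "(zp(c0 := u)) c < zp c0"
    proof (cases "c = c0")
      case True then show ?thesis using u_lt by simp
    next
      case False then have "c < c0" using cc by simp
      then show ?thesis using F(3)[OF c c0C] False by simp
    qed
  next
    fix c assume c: "c \<in> Cc i D" and cc: "c0 < c"
    show "zp c0 < (zp(c0 := u)) c" using F(3)[OF c0C c cc] cc by simp
  qed
  show ?thesis by (rule validI_Z[OF i1 F(1) F(2) n1 n2 c0(2) F(6) n3 n4 n5])
qed

lemma Z_take_valid:
  assumes V: "valid i j 0 D u zp yp" and i1: "1 \<le> i" and c0: "j < c0" "c0 < a i" "c0 \<notin> D"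
    and c0min: "\<forall>c. j < c \<and> c < a i \<and> c \<notin> D \<longrightarrow> c0 \<le> c"
  shows "valid i c0 1 (D \<union> {c0}) (yp c0) zp yp"
proof -
  note F = validD[OF V i1]
  note CF = c0_facts[OF V i1 c0 c0min]
  have c0C: "c0 \<in> Cc i D" by (rule CF(1))
  have CC: "Cc i (D \<union> {c0}) = Cc i D - {c0}" using Cc_insert[of i c0 D] by simp
  have yb: "m + 2*n + 1 - c0 \<le> yp c0" using F(8)[OF c0C c0(2)] by simp
  have an: "a i \<le> n" using a_le_n[OF i1 F(1)] .
  have c0n: "1 \<le> c0" "c0 \<le> n" using c0C unfolding Cc_mem by auto
  have n0: "D \<union> {c0} \<subseteq> {1..n}" "D \<union> {c0} \<subseteq> {..<a i}" using F(2,6) c0n c0(2) by auto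
  have n1: "\<forall>c\<in>Cc i (D \<union> {c0}). \<forall>c'\<in>Cc i (D \<union> {c0}). c < c' \<longrightarrow> zp c < zp c' \<and> yp c' < yp c"
    unfolding CC using F(3) by blast
  have n2: "\<forall>c\<in>Cc i (D \<union> {c0}). i \<le> zp c \<and> 1 \<le> zp c \<and> zp c \<le> m + n \<and> m + n < yp c \<and> yp c \<le> m + 2*n"
    unfolding CC using F(4) by blast
  have n3: "\<forall>c\<in>Cc i (D \<union> {c0}). c < a i \<longrightarrow> zp c \<le> m + c \<and> m + 2*n + 1 - c \<le> yp c"
    unfolding CC using F(8) by blast
  have n4: "\<forall>c\<in>Cc i (D \<union> {c0}). a i < c \<longrightarrow> zp c = m + c \<and> yp c = m + 2*n + 1 - c"
    unfolding CC using F(9) by blast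
  have n5: "m + 2*n + 1 - a i < yp c0 \<and> yp c0 \<le> m + 2*n \<and> (\<forall>c\<in>Cc i (D \<union> {c0}). (c \<le> c0 \<longrightarrow> yp c0 < yp c) \<and> (c0 < c \<longrightarrow> yp c < yp c0))"
  proof (intro conjI ballI impI)
    show "m + 2*n + 1 - a i < yp c0" using yb c0(2) an by linarith
    show "yp c0 \<le> m + 2*n" using F(4)[OF c0C] by simp
  next
    fix c assume c: "c \<in> Cc i (D \<union> {c0})" and cc: "c \<le> c0"
    have cC: "c \<in> Cc i D" "c \<noteq> c0" using c CC by auto
    then have "c < c0" using cc by simp
    then show "yp c0 < yp c" using F(3)[OF cC(1) c0C] by simp
  next
    fix c assume c: "c \<in> Cc i (D \<union> {c0})" and cc: "c0 < c"
    have cC: "c \<in> Cc i D" using c CC by auto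
    show "yp c < yp c0" using F(3)[OF c0C cC cc] by simp
  qed
  show ?thesis by (rule validI_Y[OF i1 F(1) n0(1) n1 n2 c0(2) n0(2) n3 n4 n5])
qed


lemma Y_pass_valid:
  assumes V: "valid i j 1 D u zp yp" and i1: "1 \<le> i" and c0: "j < c0" "c0 < a i" "c0 \<notin> D"
    and c0min: "\<forall>c. j < c \<and> c < a i \<and> c \<notin> D \<longrightarrow> c0 \<le> c"
  shows "valid i c0 1 D (yp c0) zp (yp(c0 := u))"
proof -
  note F = validD[OF V i1]
  note CF = c0_facts[OF V i1 c0 c0min]
  have c0C: "c0 \<in> Cc i D" by (rule CF(1))
  have u_gt: "yp c0 < u" using F(13)[of c0] c0C c0(1) by simp
  have yb: "m + 2*n + 1 - c0 \<le> yp c0" using F(8)[OF c0C c0(2)] by simp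
  have ui: "m + 2*n + 1 - a i < u" "u \<le> m + 2*n" using F(12) by auto
  have an: "a i \<le> n" using a_le_n[OF i1 F(1)] .
  have n1: "\<forall>c\<in>Cc i D. \<forall>c'\<in>Cc i D. c < c' \<longrightarrow> zp c < zp c' \<and> (yp(c0 := u)) c' < (yp(c0 := u)) c"
  proof (intro ballI impI)
    fix c c' assume c: "c \<in> Cc i D" and c': "c' \<in> Cc i D" and cc: "c < c'"
    have zz: "zp c < zp c'" using F(3)[OF c c' cc] by simp
    show "zp c < zp c' \<and> (yp(c0 := u)) c' < (yp(c0 := u)) c"
    proof (cases "c = c0")
      case True
      then have "j < c'" using c0(1) cc by simp
      then have "yp c' < u" using F(13)[OF _ c'] by simp
      then show ?thesis using True cc zz by simp
    next
      case False
      show ?thesis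
      proof (cases "c' = c0")
        case True
        then have "c \<le> j" using CF(2)[OF c] cc by simp
        then have "u < yp c" using F(13)[OF _ c] by simp
        then show ?thesis using True False zz by simp
      next
        case False2: False
        then show ?thesis using False F(3)[OF c c' cc] by simp
      qed
    qed
  qed
  have n2: "\<forall>c\<in>Cc i D. i \<le> zp c \<and> 1 \<le> zp c \<and> zp c \<le> m + n \<and> m + n < (yp(c0 := u)) c \<and> (yp(c0 := u)) c \<le> m + 2*n"
  proof
    fix c assume c: "c \<in> Cc i D"
    have "m + n < u" using ui an by linarith
    then show "i \<le> zp c \<and> 1 \<le> zp c \<and> zp c \<le> m + n \<and> m + n < (yp(c0 := u)) c \<and> (yp(c0 := u)) c \<le> m + 2*n"
      using F(4)[OF c] ui by (cases "c = c0") auto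
  qed
  have n3: "\<forall>c\<in>Cc i D. c < a i \<longrightarrow> zp c \<le> m + c \<and> m + 2*n + 1 - c \<le> (yp(c0 := u)) c"
  proof (intro ballI impI)
    fix c assume c: "c \<in> Cc i D" and ca: "c < a i"
    show "zp c \<le> m + c \<and> m + 2*n + 1 - c \<le> (yp(c0 := u)) c"
      using F(8)[OF c ca] u_gt yb by (cases "c = c0") auto
  qed
  have n4: "\<forall>c\<in>Cc i D. a i < c \<longrightarrow> zp c = m + c \<and> (yp(c0 := u)) c = m + 2*n + 1 - c"
  proof (intro ballI impI)
    fix c assume c: "c \<in> Cc i D" and ca: "a i < c"
    have "c \<noteq> c0" using ca c0(2) by simp
    then show "zp c = m + c \<and> (yp(c0 := u)) c = m + 2*n + 1 - c" using F(9)[OF c ca] by simp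
  qed
  have n5: "m + 2*n + 1 - a i < yp c0 \<and> yp c0 \<le> m + 2*n \<and> (\<forall>c\<in>Cc i D. (c \<le> c0 \<longrightarrow> yp c0 < (yp(c0 := u)) c) \<and> (c0 < c \<longrightarrow> (yp(c0 := u)) c < yp c0))"
  proof (intro conjI ballI impI)
    show "m + 2*n + 1 - a i < yp c0" using yb c0(2) an by linarith
    show "yp c0 \<le> m + 2*n" using F(4)[OF c0C] by simp
  next
    fix c assume c: "c \<in> Cc i D" and cc: "c \<le> c0"
    show "yp c0 < (yp(c0 := u)) c"
    proof (cases "c = c0")
      case True then show ?thesis using u_gt by simp
    next
      case False then have "c < c0" using cc by simp
      then show ?thesis using F(3)[OF c c0C] False by simp
    qed
  next
    fix c assume c: "c \<in> Cc i D" and cc: "c0 < c"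
    show "(yp(c0 := u)) c < yp c0" using F(3)[OF c0C c cc] cc by simp
  qed
  show ?thesis by (rule validI_Y[OF i1 F(1) F(2) n1 n2 c0(2) F(6) n3 n4 n5])
qed

lemma Y_take_valid:
  assumes V: "valid i j 1 D u zp yp" and i1: "1 \<le> i" and c0: "j < c0" "c0 < a i" "c0 \<notin> D"
    and c0min: "\<forall>c. j < c \<and> c < a i \<and> c \<notin> D \<longrightarrow> c0 \<le> c"
  shows "valid i c0 0 (D \<union> {c0}) (zp c0) zp yp"
proof -
  note F = validD[OF V i1]
  note CF = c0_facts[OF V i1 c0 c0min]
  have c0C: "c0 \<in> Cc i D" by (rule CF(1))
  have CC: "Cc i (D \<union> {c0}) = Cc i D - {c0}" using Cc_insert[of i c0 D] by simp
  have zb: "zp c0 \<le> m + c0" using F(8)[OF c0C c0(2)] by simp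
  have c0n: "1 \<le> c0" "c0 \<le> n" using c0C unfolding Cc_mem by auto
  have n0: "D \<union> {c0} \<subseteq> {1..n}" "D \<union> {c0} \<subseteq> {..<a i}" using F(2,6) c0n c0(2) by auto
  have n1: "\<forall>c\<in>Cc i (D \<union> {c0}). \<forall>c'\<in>Cc i (D \<union> {c0}). c < c' \<longrightarrow> zp c < zp c' \<and> yp c' < yp c"
    unfolding CC using F(3) by blast
  have n2: "\<forall>c\<in>Cc i (D \<union> {c0}). i \<le> zp c \<and> 1 \<le> zp c \<and> zp c \<le> m + n \<and> m + n < yp c \<and> yp c \<le> m + 2*n"
    unfolding CC using F(4) by blast
  have n3: "\<forall>c\<in>Cc i (D \<union> {c0}). c < a i \<longrightarrow> zp c \<le> m + c \<and> m + 2*n + 1 - c \<le> yp c"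
    unfolding CC using F(8) by blast
  have n4: "\<forall>c\<in>Cc i (D \<union> {c0}). a i < c \<longrightarrow> zp c = m + c \<and> yp c = m + 2*n + 1 - c"
    unfolding CC using F(9) by blast
  have n5: "i \<le> zp c0 \<and> zp c0 < m + a i \<and> (\<forall>c\<in>Cc i (D \<union> {c0}). (c \<le> c0 \<longrightarrow> zp c < zp c0) \<and> (c0 < c \<longrightarrow> zp c0 < zp c))"
  proof (intro conjI ballI impI)
    show "i \<le> zp c0" using F(4)[OF c0C] by simp
    show "zp c0 < m + a i" using zb c0(2) by simp
  next
    fix c assume c: "c \<in> Cc i (D \<union> {c0})" and cc: "c \<le> c0"
    have cC: "c \<in> Cc i D" "c \<noteq> c0" using c CC by auto
    then have "c < c0" using cc by simp
    then show "zp c < zp c0" using F(3)[OF cC(1) c0C] by simp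
  next
    fix c assume c: "c \<in> Cc i (D \<union> {c0})" and cc: "c0 < c"
    have cC: "c \<in> Cc i D" using c CC by auto
    show "zp c0 < zp c" using F(3)[OF c0C cC cc] by simp
  qed
  show ?thesis by (rule validI_Z[OF i1 F(1) n0(1) n1 n2 c0(2) n0(2) n3 n4 n5])
qed


lemma remove2: "X \<notin> R \<Longrightarrow> Y \<notin> R \<Longrightarrow> insert X (insert Y R) - {X, Y} = R"
  by blast

lemma notin_by_point: "x \<in> X \<Longrightarrow> x \<notin> \<Union>R \<Longrightarrow> X \<notin> R"
  by blast

lemma Dg_split:
  assumes "1 \<le> i" "c0 \<in> Cc i D"
  shows "Dg i u D zp yp = insert {u, wp i} (insert {zp c0, yp c0} (Pend i \<union> Rb (Cc i D - {c0}) zp yp))"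
  using Dg_pos[OF assms(1)] Rb_remove[OF assms(2)] by auto

lemma Z_step_sets:
  assumes V: "valid i j 0 D u zp yp" and i1: "1 \<le> i" and c0: "j < c0" "c0 < a i" "c0 \<notin> D"
    and c0min: "\<forall>c. j < c \<and> c < a i \<and> c \<notin> D \<longrightarrow> c0 \<le> c"
  shows "u < zp c0" "zp c0 < wp i" "wp i < yp c0"
    "{u, wp i} \<in> Dg i u D zp yp" "{zp c0, yp c0} \<in> Dg i u D zp yp"
    "(Dg i u D zp yp - {{u, wp i}, {zp c0, yp c0}}) \<union> {{u, zp c0}, {wp i, yp c0}} = insert {u, zp c0} (Dg i (yp c0) (D \<union> {c0}) zp yp)"
    "(Dg i u D zp yp - {{u, wp i}, {zp c0, yp c0}}) \<union> {{yp c0, u}, {zp c0, wp i}} = Dg i (zp c0) D (zp(c0 := u)) yp"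
    "\<forall>v\<in>\<Union>(Dg i (yp c0) (D \<union> {c0}) zp yp). v < u \<or> zp c0 < v"
proof -
  note F = validD[OF V i1]
  note CF = c0_facts[OF V i1 c0 c0min]
  have c0C: "c0 \<in> Cc i D" by (rule CF(1))
  have zb: "zp c0 \<le> m + c0" and yb: "m + 2*n + 1 - c0 \<le> yp c0" using F(8)[OF c0C c0(2)] by auto
  have rg: "zp c0 \<le> m + n" "m + n < yp c0" using F(4)[OF c0C] by auto
  have ui: "i \<le> u" "u < m + a i" using F(10) by auto
  have an: "a i \<le> n" using a_le_n[OF i1 F(1)] .
  show ult: "u < zp c0" using F(11)[of c0] c0C c0(1) by simp
  show zw: "zp c0 < wp i"
  proof (cases "\<epsilon> i = 0")
    case True then show ?thesis using wpi_facts(1)[OF i1 F(1)] rg by simp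
  next
    case False then show ?thesis using wpi_facts(2)[OF i1 F(1)] zb c0(2) by simp
  qed
  show wy: "wp i < yp c0"
  proof (cases "\<epsilon> i = 0")
    case True
    then have "wp i = m + 2*n + 1 - a i" using wpi_facts(1)[OF i1 F(1)] by simp
    then show ?thesis using yb c0(2) an by linarith
  next
    case False then show ?thesis using wpi_facts(2)[OF i1 F(1)] rg by simp
  qed
  define R where "R = Pend i \<union> Rb (Cc i D - {c0}) zp yp"
  have ptsR: "\<forall>v\<in>\<Union>R. v < u \<or> zp c0 < v"
  proof
    fix v assume "v \<in> \<Union>R"
    then consider (P) "v \<in> \<Union>(Pend i)" | (B) "v \<in> \<Union>(Rb (Cc i D - {c0}) zp yp)" unfolding R_def by blast
    then show "v < u \<or> zp c0 < v"
    proof cases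
      case P
      then obtain k where k: "1 \<le> k" "k < i" "v = k \<or> v = wp k" unfolding Union_Pend by blast
      show ?thesis
      proof (cases "v = k")
        case True then show ?thesis using k ui by simp
      next
        case False
        then have vw: "v = wp k" using k by simp
        show ?thesis
        proof (cases "\<epsilon> k = 0")
          case True then show ?thesis using pend_facts(1)[OF k(1,2) F(1)] vw rg by simp
        next
          case False then show ?thesis using pend_facts(2)[OF k(1,2) F(1)] vw zb c0(2) by simp
        qed
      qed
    next
      case B
      then obtain c where c: "c \<in> Cc i D" "c \<noteq> c0" "v = zp c \<or> v = yp c" unfolding Union_Rb by blast
      show ?thesis
      proof (cases "v = zp c")
        case True
        show ?thesis
        proof (cases "c \<le> j")
          case True2: True then show ?thesis using F(11)[OF _ c(1)] True by simp
        next
          case False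
          then have "c0 < c" using CF(3)[OF c(1)] c(2) by fastforce
          then show ?thesis using F(3)[OF c0C c(1)] True by simp
        qed
      next
        case False
        then have "v = yp c" using c by simp
        then show ?thesis using F(4)[OF c(1)] rg by simp
      qed
    qed
  qed
  have uR: "u \<notin> \<Union>R"
  proof
    assume "u \<in> \<Union>R"
    then have "u < u \<or> zp c0 < u" using ptsR by blast
    then show False using ult by simp
  qed
  have zR: "zp c0 \<notin> \<Union>R"
  proof
    assume "zp c0 \<in> \<Union>R"
    then have "zp c0 < u \<or> zp c0 < zp c0" using ptsR by blast
    then show False using ult by simp
  qed
  have XnR: "{u, wp i} \<notin> R" by (rule notin_by_point[of u]) (use uR in auto)
  have YnR: "{zp c0, yp c0} \<notin> R" by (rule notin_by_point[of "zp c0"]) (use zR in auto)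
  have DG: "Dg i u D zp yp = insert {u, wp i} (insert {zp c0, yp c0} R)"
    unfolding R_def by (rule Dg_split[OF i1 c0C])
  show "{u, wp i} \<in> Dg i u D zp yp" "{zp c0, yp c0} \<in> Dg i u D zp yp" unfolding DG by auto
  have rem: "Dg i u D zp yp - {{u, wp i}, {zp c0, yp c0}} = R" unfolding DG by (rule remove2[OF XnR YnR])
  have CC: "Cc i (D \<union> {c0}) = Cc i D - {c0}" using Cc_insert[of i c0 D] by simp
  have D1: "Dg i (yp c0) (D \<union> {c0}) zp yp = insert {yp c0, wp i} R"
    unfolding Dg_pos[OF i1] CC R_def by auto
  have D2: "Dg i (zp c0) D (zp(c0 := u)) yp = insert {zp c0, wp i} (insert {u, yp c0} R)"
    unfolding Dg_pos[OF i1] Rb_upd_zp[OF c0C] R_def by auto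
  show "(Dg i u D zp yp - {{u, wp i}, {zp c0, yp c0}}) \<union> {{u, zp c0}, {wp i, yp c0}} = insert {u, zp c0} (Dg i (yp c0) (D \<union> {c0}) zp yp)"
    unfolding rem D1 by (auto simp: insert_commute)
  show "(Dg i u D zp yp - {{u, wp i}, {zp c0, yp c0}}) \<union> {{yp c0, u}, {zp c0, wp i}} = Dg i (zp c0) D (zp(c0 := u)) yp"
    unfolding rem D2 by (auto simp: insert_commute)
  show "\<forall>v\<in>\<Union>(Dg i (yp c0) (D \<union> {c0}) zp yp). v < u \<or> zp c0 < v"
    unfolding D1 using ptsR rg zw wy by auto
qed


lemma Y_step_sets:
  assumes V: "valid i j 1 D u zp yp" and i1: "1 \<le> i" and c0: "j < c0" "c0 < a i" "c0 \<notin> D"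
    and c0min: "\<forall>c. j < c \<and> c < a i \<and> c \<notin> D \<longrightarrow> c0 \<le> c"
  shows "zp c0 < wp i" "wp i < yp c0" "yp c0 < u"
    "{zp c0, yp c0} \<in> Dg i u D zp yp" "{wp i, u} \<in> Dg i u D zp yp"
    "(Dg i u D zp yp - {{zp c0, yp c0}, {wp i, u}}) \<union> {{zp c0, wp i}, {yp c0, u}} = insert {yp c0, u} (Dg i (zp c0) (D \<union> {c0}) zp yp)"
    "(Dg i u D zp yp - {{zp c0, yp c0}, {wp i, u}}) \<union> {{u, zp c0}, {wp i, yp c0}} = Dg i (yp c0) D zp (yp(c0 := u))"
    "\<forall>v\<in>\<Union>(Dg i (zp c0) (D \<union> {c0}) zp yp). v < yp c0 \<or> u < v"
proof -
  note F = validD[OF V i1]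
  note CF = c0_facts[OF V i1 c0 c0min]
  have c0C: "c0 \<in> Cc i D" by (rule CF(1))
  have zb: "zp c0 \<le> m + c0" and yb: "m + 2*n + 1 - c0 \<le> yp c0" using F(8)[OF c0C c0(2)] by auto
  have rg: "zp c0 \<le> m + n" "m + n < yp c0" using F(4)[OF c0C] by auto
  have ui: "m + 2*n + 1 - a i < u" "u \<le> m + 2*n" using F(12) by auto
  have an: "a i \<le> n" using a_le_n[OF i1 F(1)] .
  have im: "i \<le> m" using F(1) .
  show ylt: "yp c0 < u" using F(13)[of c0] c0C c0(1) by simp
  show zw: "zp c0 < wp i"
  proof (cases "\<epsilon> i = 0")
    case True then show ?thesis using wpi_facts(1)[OF i1 F(1)] rg by simp
  next
    case False then show ?thesis using wpi_facts(2)[OF i1 F(1)] zb c0(2) by simp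
  qed
  show wy: "wp i < yp c0"
  proof (cases "\<epsilon> i = 0")
    case True
    then have "wp i = m + 2*n + 1 - a i" using wpi_facts(1)[OF i1 F(1)] by simp
    then show ?thesis using yb c0(2) an by linarith
  next
    case False then show ?thesis using wpi_facts(2)[OF i1 F(1)] rg by simp
  qed
  define R where "R = Pend i \<union> Rb (Cc i D - {c0}) zp yp"
  have ptsR: "\<forall>v\<in>\<Union>R. v < yp c0 \<or> u < v"
  proof
    fix v assume "v \<in> \<Union>R"
    then consider (P) "v \<in> \<Union>(Pend i)" | (B) "v \<in> \<Union>(Rb (Cc i D - {c0}) zp yp)" unfolding R_def by blast
    then show "v < yp c0 \<or> u < v"
    proof cases
      case P
      then obtain k where k: "1 \<le> k" "k < i" "v = k \<or> v = wp k" unfolding Union_Pend by blast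
      show ?thesis
      proof (cases "v = k")
        case True then show ?thesis using k im rg by simp
      next
        case False
        then have vw: "v = wp k" using k by simp
        show ?thesis
        proof (cases "\<epsilon> k = 0")
          case True
          then have "wp k < m + 2*n + 1 - a i" using pend_facts(1)[OF k(1,2) F(1)] by simp
          then show ?thesis using vw yb c0(2) an by linarith
        next
          case False then show ?thesis using pend_facts(2)[OF k(1,2) F(1)] vw rg by simp
        qed
      qed
    next
      case B
      then obtain c where c: "c \<in> Cc i D" "c \<noteq> c0" "v = zp c \<or> v = yp c" unfolding Union_Rb by blast
      show ?thesis
      proof (cases "v = yp c")
        case True
        show ?thesis
        proof (cases "c \<le> j")
          case True2: True then show ?thesis using F(13)[OF _ c(1)] True by simp
        next
          case False
          then have "c0 < c" using CF(3)[OF c(1)] c(2) by fastforce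
          then show ?thesis using F(3)[OF c0C c(1)] True by simp
        qed
      next
        case False
        then have "v = zp c" using c by simp
        then show ?thesis using F(4)[OF c(1)] rg by simp
      qed
    qed
  qed
  have uR: "u \<notin> \<Union>R"
  proof
    assume "u \<in> \<Union>R"
    then have "u < yp c0 \<or> u < u" using ptsR by blast
    then show False using ylt by simp
  qed
  have yR: "yp c0 \<notin> \<Union>R"
  proof
    assume "yp c0 \<in> \<Union>R"
    then have "yp c0 < yp c0 \<or> u < yp c0" using ptsR by blast
    then show False using ylt by simp
  qed
  have XnR: "{wp i, u} \<notin> R" by (rule notin_by_point[of u]) (use uR in auto)
  have YnR: "{zp c0, yp c0} \<notin> R" by (rule notin_by_point[of "yp c0"]) (use yR in auto)
  have DG: "Dg i u D zp yp = insert {zp c0, yp c0} (insert {wp i, u} R)"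
    unfolding R_def Dg_split[OF i1 c0C] by (auto simp: insert_commute)
  show "{zp c0, yp c0} \<in> Dg i u D zp yp" "{wp i, u} \<in> Dg i u D zp yp" unfolding DG by auto
  have rem: "Dg i u D zp yp - {{zp c0, yp c0}, {wp i, u}} = R" unfolding DG by (rule remove2[OF YnR XnR])
  have CC: "Cc i (D \<union> {c0}) = Cc i D - {c0}" using Cc_insert[of i c0 D] by simp
  have D1: "Dg i (zp c0) (D \<union> {c0}) zp yp = insert {zp c0, wp i} R"
    unfolding Dg_pos[OF i1] CC R_def by auto
  have D2: "Dg i (yp c0) D zp (yp(c0 := u)) = insert {yp c0, wp i} (insert {zp c0, u} R)"
    unfolding Dg_pos[OF i1] Rb_upd_yp[OF c0C] R_def by auto
  show "(Dg i u D zp yp - {{zp c0, yp c0}, {wp i, u}}) \<union> {{zp c0, wp i}, {yp c0, u}} = insert {yp c0, u} (Dg i (zp c0) (D \<union> {c0}) zp yp)"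
    unfolding rem D1 by (auto simp: insert_commute)
  show "(Dg i u D zp yp - {{zp c0, yp c0}, {wp i, u}}) \<union> {{u, zp c0}, {wp i, yp c0}} = Dg i (yp c0) D zp (yp(c0 := u))"
    unfolding rem D2 by (auto simp: insert_commute)
  show "\<forall>v\<in>\<Union>(Dg i (zp c0) (D \<union> {c0}) zp yp). v < yp c0 \<or> u < v"
    unfolding D1 using ptsR rg zw wy by auto
qed


lemma Dg_finite: "finite (Dg i u D zp yp)" "\<forall>X\<in>Dg i u D zp yp. finite X"
proof -
  have "Pend i = (\<lambda>k. {k, wp k}) ` {1..<i}" unfolding Pend_def by auto
  then have "finite (Pend i)" by simp
  moreover have "Rb (Cc i D) zp yp = (\<lambda>c. {zp c, yp c}) ` Cc i D" unfolding Rb_def by auto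
  moreover have "finite (Cc i D)" unfolding Cc_def by (rule finite_subset[of _ "{..n}"]) auto
  ultimately show "finite (Dg i u D zp yp)" unfolding Dg_def by simp
  show "\<forall>X\<in>Dg i u D zp yp. finite X" unfolding Dg_def Pend_def Rb_def by auto
qed

lemma end_common:
  assumes V: "valid i j \<sigma> D u zp yp" and i1: "1 \<le> i" and P: "\<forall>c. j < c \<and> c < a i \<longrightarrow> c \<in> D"
  shows "\<And>c. c \<in> Cc i D \<Longrightarrow> c < a i \<Longrightarrow> c \<le> j"
    "\<And>c. c \<in> Cc i D \<Longrightarrow> c \<noteq> a i"
    "a i \<notin> D" "1 \<le> a i" "a i \<le> n"
    "Cc (i - 1) (D \<union> {a i}) = Cc i D"
    "a i \<notin> Cc i D"
    "Cc (i - 1) D = insert (a i) (Cc i D)"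
    "1 < i \<Longrightarrow> a i < a (i - 1)"
proof -
  note F = validD[OF V i1]
  show "\<And>c. c \<in> Cc i D \<Longrightarrow> c < a i \<Longrightarrow> c \<le> j"
  proof -
    fix c assume c: "c \<in> Cc i D" "c < a i"
    show "c \<le> j"
    proof (rule ccontr)
      assume "\<not> c \<le> j"
      then have "c \<in> D" using P c(2) by simp
      then show False using c(1) unfolding Cc_mem by simp
    qed
  qed
  show "\<And>c. c \<in> Cc i D \<Longrightarrow> c \<noteq> a i" using Cc_ne_a[OF _ i1] by blast
  show aD: "a i \<notin> D" using F(6) by auto
  show a1: "1 \<le> a i" using a_ge1[OF i1 F(1)] .
  show an: "a i \<le> n" using a_le_n[OF i1 F(1)] .
  have "{1..i} = insert i {1..i - 1}" using i1 by auto
  then have img: "a ` {1..i} = insert (a i) (a ` {1..i - 1})" by simp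
  show "Cc (i - 1) (D \<union> {a i}) = Cc i D" unfolding Cc_def img by auto
  show aC: "a i \<notin> Cc i D" using Cc_ne_a[OF _ i1] by blast
  have "a i \<notin> a ` {1..i - 1}"
  proof
    assume "a i \<in> a ` {1..i - 1}"
    then obtain k where k: "k \<in> {1..i - 1}" "a i = a k" by blast
    then have "k = i" using a_inj[of i k] i1 F(1) by auto
    then show False using k i1 by simp
  qed
  then show "Cc (i - 1) D = insert (a i) (Cc i D)" unfolding Cc_def img using aD a1 an by auto
  show "1 < i \<Longrightarrow> a i < a (i - 1)" using a_mono[of "i - 1" i] F(1) by simp
qed


lemma next_row_valid:
  assumes i1: "1 \<le> i" "i \<le> m" and D': "D' \<subseteq> {1..n}" "D' \<subseteq> {..a i}"
   and nest: "\<forall>c\<in>Cc (i - 1) D'. \<forall>c'\<in>Cc (i - 1) D'. c < c' \<longrightarrow> zp c < zp c' \<and> yp c' < yp c"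
   and rng: "\<forall>c\<in>Cc (i - 1) D'. i \<le> zp c \<and> 1 \<le> zp c \<and> zp c \<le> m + n \<and> m + n < yp c \<and> yp c \<le> m + 2*n"
   and bnd: "\<forall>c\<in>Cc (i - 1) D'. c \<le> a i \<longrightarrow> zp c \<le> m + c \<and> m + 2*n + 1 - c \<le> yp c"
   and ex: "\<forall>c\<in>Cc (i - 1) D'. a i < c \<longrightarrow> zp c = m + c \<and> yp c = m + 2*n + 1 - c"
  shows "valid (i - 1) 0 0 D' (i - 1) zp yp"
proof (cases "i = 1")
  case True
  have rng0: "\<forall>c\<in>Cc 0 D'. 1 \<le> zp c \<and> zp c \<le> m + n \<and> m + n < yp c \<and> yp c \<le> m + 2*n"
    using rng True by simp
  show ?thesis using validI_0[OF D'(1) _ rng0] nest True by simp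
next
  case False
  then have i2: "1 \<le> i - 1" using i1 by simp
  have aa: "a i < a (i - 1)" using a_mono[of "i - 1" i] i1 False by simp
  have "i - 1 \<le> m" using i1 by simp
  then have a0: "0 < a (i - 1)" using a_ge1[OF i2] by simp
  have rng': "\<forall>c\<in>Cc (i - 1) D'. i - 1 \<le> zp c \<and> 1 \<le> zp c \<and> zp c \<le> m + n \<and> m + n < yp c \<and> yp c \<le> m + 2*n"
    using rng by auto
  have D'': "D' \<subseteq> {..<a (i - 1)}" using D'(2) aa by auto
  have bnd': "\<forall>c\<in>Cc (i - 1) D'. c < a (i - 1) \<longrightarrow> zp c \<le> m + c \<and> m + 2*n + 1 - c \<le> yp c"
  proof (intro ballI impI)
    fix c assume c: "c \<in> Cc (i - 1) D'" "c < a (i - 1)"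
    show "zp c \<le> m + c \<and> m + 2*n + 1 - c \<le> yp c"
    proof (cases "c \<le> a i")
      case True then show ?thesis using bnd c by blast
    next
      case False then show ?thesis using ex c by auto
    qed
  qed
  have ex': "\<forall>c\<in>Cc (i - 1) D'. a (i - 1) < c \<longrightarrow> zp c = m + c \<and> yp c = m + 2*n + 1 - c"
    using ex aa by auto
  have zc: "i - 1 \<le> i - 1 \<and> i - 1 < m + a (i - 1) \<and> (\<forall>c\<in>Cc (i - 1) D'. (c \<le> 0 \<longrightarrow> zp c < i - 1) \<and> (0 < c \<longrightarrow> i - 1 < zp c))"
  proof (intro conjI ballI impI)
    show "i - 1 \<le> i - 1" by simp
    show "i - 1 < m + a (i - 1)" using i1 a0 by simp
  next
    fix c assume "c \<in> Cc (i - 1) D'" "c \<le> 0"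
    then show "zp c < i - 1" unfolding Cc_mem by simp
  next
    fix c assume "c \<in> Cc (i - 1) D'" "0 < c"
    then show "i - 1 < zp c" using rng i1 by force
  qed
  show ?thesis by (rule validI_Z[OF i2 _ D'(1) nest rng' a0 D'' bnd' ex' zc]) (use i1 in simp)
qed

lemma end_internal_valid:
  assumes V: "valid i j \<sigma> D u zp yp" and i1: "1 \<le> i" and P: "\<forall>c. j < c \<and> c < a i \<longrightarrow> c \<in> D"
  shows "valid (i - 1) 0 0 (D \<union> {a i}) (i - 1) zp yp"
proof -
  note F = validD[OF V i1]
  note E = end_common[OF V i1 P]
  have D': "D \<union> {a i} \<subseteq> {1..n}" "D \<union> {a i} \<subseteq> {..a i}" using F(2,6) E(4,5) by auto
  show ?thesis
  proof (rule next_row_valid[OF i1 F(1) D'])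
    show "\<forall>c\<in>Cc (i - 1) (D \<union> {a i}). \<forall>c'\<in>Cc (i - 1) (D \<union> {a i}). c < c' \<longrightarrow> zp c < zp c' \<and> yp c' < yp c"
      unfolding E(6) using F(3) by blast
    show "\<forall>c\<in>Cc (i - 1) (D \<union> {a i}). i \<le> zp c \<and> 1 \<le> zp c \<and> zp c \<le> m + n \<and> m + n < yp c \<and> yp c \<le> m + 2*n"
      unfolding E(6) using F(4) by blast
    show "\<forall>c\<in>Cc (i - 1) (D \<union> {a i}). c \<le> a i \<longrightarrow> zp c \<le> m + c \<and> m + 2*n + 1 - c \<le> yp c"
    proof (intro ballI impI)
      fix c assume c: "c \<in> Cc (i - 1) (D \<union> {a i})" "c \<le> a i"
      then have cC: "c \<in> Cc i D" using E(6) by simp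
      then have "c < a i" using E(2)[OF cC] c(2) by simp
      then show "zp c \<le> m + c \<and> m + 2*n + 1 - c \<le> yp c" using F(8)[OF cC] by simp
    qed
    show "\<forall>c\<in>Cc (i - 1) (D \<union> {a i}). a i < c \<longrightarrow> zp c = m + c \<and> yp c = m + 2*n + 1 - c"
      unfolding E(6) using F(9) by blast
  qed
qed

lemma end_ZA:
  assumes V: "valid i j 0 D u zp yp" and i1: "1 \<le> i" and P: "\<forall>c. j < c \<and> c < a i \<longrightarrow> c \<in> D" and e: "\<epsilon> i \<noteq> 0"
  shows "u < wp i" "Dg i u D zp yp = insert {u, wp i} (Dg (i - 1) (i - 1) (D \<union> {a i}) zp yp)"
    "\<forall>v\<in>\<Union>(Dg (i - 1) (i - 1) (D \<union> {a i}) zp yp). v < u \<or> wp i < v"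
    "{u, wp i} \<subseteq> {1..m+n}"
proof -
  note F = validD[OF V i1]
  note E = end_common[OF V i1 P]
  have w: "wp i = m + a i" "wp i \<le> m + n" using wpi_facts(2)[OF i1 F(1) e] by auto
  have ui: "i \<le> u" "u < m + a i" using F(10) by auto
  show "u < wp i" using w ui by simp
  have DP: "Dg (i - 1) (i - 1) (D \<union> {a i}) zp yp = Pend i \<union> Rb (Cc i D) zp yp"
    using Dg_prev[OF i1] E(6) by simp
  show "Dg i u D zp yp = insert {u, wp i} (Dg (i - 1) (i - 1) (D \<union> {a i}) zp yp)"
    unfolding DP Dg_pos[OF i1] by auto
  show "\<forall>v\<in>\<Union>(Dg (i - 1) (i - 1) (D \<union> {a i}) zp yp). v < u \<or> wp i < v"
  proof
    fix v assume "v \<in> \<Union>(Dg (i - 1) (i - 1) (D \<union> {a i}) zp yp)"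
    then consider (P) "v \<in> \<Union>(Pend i)" | (B) "v \<in> \<Union>(Rb (Cc i D) zp yp)" unfolding DP by blast
    then show "v < u \<or> wp i < v"
    proof cases
      case P
      then obtain k where k: "1 \<le> k" "k < i" "v = k \<or> v = wp k" unfolding Union_Pend by blast
      show ?thesis
      proof (cases "v = k")
        case True then show ?thesis using k ui by simp
      next
        case False
        then have vw: "v = wp k" using k by simp
        show ?thesis
        proof (cases "\<epsilon> k = 0")
          case True then show ?thesis using pend_facts(1)[OF k(1,2) F(1)] vw w E(5) by simp
        next
          case False then show ?thesis using pend_facts(2)[OF k(1,2) F(1)] vw w by simp
        qed
      qed
    next
      case B
      then obtain c where c: "c \<in> Cc i D" "v = zp c \<or> v = yp c" unfolding Union_Rb by blast
      have cne: "c \<noteq> a i" using E(2)[OF c(1)] .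
      show ?thesis
      proof (cases "v = zp c")
        case True
        show ?thesis
        proof (cases "c < a i")
          case True2: True
          then have "c \<le> j" using E(1)[OF c(1)] by simp
          then show ?thesis using F(11)[OF _ c(1)] True by simp
        next
          case False
          then have "a i < c" using cne by simp
          then show ?thesis using F(9)[OF c(1)] True w by simp
        qed
      next
        case False
        then have "v = yp c" using c by simp
        then show ?thesis using F(4)[OF c(1)] w by simp
      qed
    qed
  qed
  show "{u, wp i} \<subseteq> {1..m+n}" using ui i1 w by simp
qed

lemma end_YB:
  assumes V: "valid i j 1 D u zp yp" and i1: "1 \<le> i" and P: "\<forall>c. j < c \<and> c < a i \<longrightarrow> c \<in> D" and e: "\<epsilon> i = 0"
  shows "wp i < u" "Dg i u D zp yp = insert {wp i, u} (Dg (i - 1) (i - 1) (D \<union> {a i}) zp yp)"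
    "\<forall>v\<in>\<Union>(Dg (i - 1) (i - 1) (D \<union> {a i}) zp yp). v < wp i \<or> u < v"
    "{wp i, u} \<subseteq> {m+n+1..m+2*n}"
proof -
  note F = validD[OF V i1]
  note E = end_common[OF V i1 P]
  have w: "wp i = m + 2*n + 1 - a i" "m + n < wp i" using wpi_facts(1)[OF i1 F(1) e] by auto
  have ui: "m + 2*n + 1 - a i < u" "u \<le> m + 2*n" using F(12) by auto
  show "wp i < u" using w ui by simp
  have DP: "Dg (i - 1) (i - 1) (D \<union> {a i}) zp yp = Pend i \<union> Rb (Cc i D) zp yp"
    using Dg_prev[OF i1] E(6) by simp
  show "Dg i u D zp yp = insert {wp i, u} (Dg (i - 1) (i - 1) (D \<union> {a i}) zp yp)"
    unfolding DP Dg_pos[OF i1] by (auto simp: insert_commute)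
  show "\<forall>v\<in>\<Union>(Dg (i - 1) (i - 1) (D \<union> {a i}) zp yp). v < wp i \<or> u < v"
  proof
    fix v assume "v \<in> \<Union>(Dg (i - 1) (i - 1) (D \<union> {a i}) zp yp)"
    then consider (P) "v \<in> \<Union>(Pend i)" | (B) "v \<in> \<Union>(Rb (Cc i D) zp yp)" unfolding DP by blast
    then show "v < wp i \<or> u < v"
    proof cases
      case P
      then obtain k where k: "1 \<le> k" "k < i" "v = k \<or> v = wp k" unfolding Union_Pend by blast
      show ?thesis
      proof (cases "v = k")
        case True then show ?thesis using k F(1) w by simp
      next
        case False
        then have vw: "v = wp k" using k by simp
        show ?thesis
        proof (cases "\<epsilon> k = 0")
          case True then show ?thesis using pend_facts(1)[OF k(1,2) F(1)] vw w by simp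
        next
          case False then show ?thesis using pend_facts(2)[OF k(1,2) F(1)] vw w by simp
        qed
      qed
    next
      case B
      then obtain c where c: "c \<in> Cc i D" "v = zp c \<or> v = yp c" unfolding Union_Rb by blast
      have cne: "c \<noteq> a i" using E(2)[OF c(1)] .
      show ?thesis
      proof (cases "v = yp c")
        case True
        show ?thesis
        proof (cases "c < a i")
          case True2: True
          then have "c \<le> j" using E(1)[OF c(1)] by simp
          then show ?thesis using F(13)[OF _ c(1)] True by simp
        next
          case False
          then have ac: "a i < c" using cne by simp
          then have "yp c = m + 2*n + 1 - c" using F(9)[OF c(1)] by simp
          moreover have "c \<le> n" using c(1) unfolding Cc_mem by simp
          ultimately have "v < wp i" using True w ac by simp
          then show ?thesis by simp
        qed
      next
        case False
        then have "v = zp c" using c by simp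
        then show ?thesis using F(4)[OF c(1)] w by simp
      qed
    qed
  qed
  show "{wp i, u} \<subseteq> {m+n+1..m+2*n}" using ui w by simp
qed


lemma end_ZB:
  assumes V: "valid i j 0 D u zp yp" and i1: "1 \<le> i" and P: "\<forall>c. j < c \<and> c < a i \<longrightarrow> c \<in> D" and e: "\<epsilon> i = 0"
  shows "valid (i - 1) 0 0 D (i - 1) (zp(a i := u)) (yp(a i := wp i))"
    "Dg i u D zp yp = Dg (i - 1) (i - 1) D (zp(a i := u)) (yp(a i := wp i))"
proof -
  note F = validD[OF V i1]
  note E = end_common[OF V i1 P]
  have w: "wp i = m + 2*n + 1 - a i" "m + n < wp i" "wp i \<le> m + 2*n" using wpi_facts(1)[OF i1 F(1) e] by auto
  have ui: "i \<le> u" "u < m + a i" using F(10) by auto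
  have an: "a i \<le> n" by (rule E(5))
  have CC: "Cc (i - 1) D = insert (a i) (Cc i D)" by (rule E(8))
  have D': "D \<subseteq> {1..n}" "D \<subseteq> {..a i}" using F(2,6) by auto
  show "valid (i - 1) 0 0 D (i - 1) (zp(a i := u)) (yp(a i := wp i))"
  proof (rule next_row_valid[OF i1 F(1) D'])
    show "\<forall>c\<in>Cc (i - 1) D. \<forall>c'\<in>Cc (i - 1) D. c < c' \<longrightarrow> (zp(a i := u)) c < (zp(a i := u)) c' \<and> (yp(a i := wp i)) c' < (yp(a i := wp i)) c"
    proof (intro ballI impI)
      fix c c' assume c: "c \<in> Cc (i - 1) D" and c': "c' \<in> Cc (i - 1) D" and cc: "c < c'"
      show "(zp(a i := u)) c < (zp(a i := u)) c' \<and> (yp(a i := wp i)) c' < (yp(a i := wp i)) c"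
      proof (cases "c = a i")
        case True
        then have c'C: "c' \<in> Cc i D" "a i < c'" using c' CC cc by auto
        have "zp c' = m + c'" "yp c' = m + 2*n + 1 - c'" using F(9)[OF c'C] by auto
        moreover have "c' \<le> n" using c'C(1) unfolding Cc_mem by simp
        ultimately show ?thesis using True c'C(2) ui w by simp
      next
        case False
        then have cC: "c \<in> Cc i D" using c CC by auto
        show ?thesis
        proof (cases "c' = a i")
          case True
          then have "c < a i" using cc by simp
          then have "c \<le> j" "m + 2*n + 1 - c \<le> yp c" using E(1)[OF cC] F(8)[OF cC] by auto
          then have "zp c < u" "wp i < yp c" using F(11)[OF _ cC] w \<open>c < a i\<close> an by auto
          then show ?thesis using True False by simp
        next
          case False2: False
          then have c'C: "c' \<in> Cc i D" using c' CC by auto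
          show ?thesis using F(3)[OF cC c'C cc] False False2 by simp
        qed
      qed
    qed
    show "\<forall>c\<in>Cc (i - 1) D. i \<le> (zp(a i := u)) c \<and> 1 \<le> (zp(a i := u)) c \<and> (zp(a i := u)) c \<le> m + n \<and> m + n < (yp(a i := wp i)) c \<and> (yp(a i := wp i)) c \<le> m + 2*n"
    proof
      fix c assume c: "c \<in> Cc (i - 1) D"
      show "i \<le> (zp(a i := u)) c \<and> 1 \<le> (zp(a i := u)) c \<and> (zp(a i := u)) c \<le> m + n \<and> m + n < (yp(a i := wp i)) c \<and> (yp(a i := wp i)) c \<le> m + 2*n"
      proof (cases "c = a i")
        case True then show ?thesis using ui w an i1 by simp
      next
        case False
        then have "c \<in> Cc i D" using c CC by auto
        then show ?thesis using F(4) False by simp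
      qed
    qed
    show "\<forall>c\<in>Cc (i - 1) D. c \<le> a i \<longrightarrow> (zp(a i := u)) c \<le> m + c \<and> m + 2*n + 1 - c \<le> (yp(a i := wp i)) c"
    proof (intro ballI impI)
      fix c assume c: "c \<in> Cc (i - 1) D" "c \<le> a i"
      show "(zp(a i := u)) c \<le> m + c \<and> m + 2*n + 1 - c \<le> (yp(a i := wp i)) c"
      proof (cases "c = a i")
        case True then show ?thesis using ui w by simp
      next
        case False
        then have "c \<in> Cc i D" "c < a i" using c CC by auto
        then show ?thesis using F(8) False by simp
      qed
    qed
    show "\<forall>c\<in>Cc (i - 1) D. a i < c \<longrightarrow> (zp(a i := u)) c = m + c \<and> (yp(a i := wp i)) c = m + 2*n + 1 - c"
    proof (intro ballI impI)
      fix c assume c: "c \<in> Cc (i - 1) D" "a i < c"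
      then have "c \<in> Cc i D" "c \<noteq> a i" using CC by auto
      then show "(zp(a i := u)) c = m + c \<and> (yp(a i := wp i)) c = m + 2*n + 1 - c" using F(9) c(2) by simp
    qed
  qed
  show "Dg i u D zp yp = Dg (i - 1) (i - 1) D (zp(a i := u)) (yp(a i := wp i))"
    unfolding Dg_prev[OF i1] Dg_pos[OF i1] CC Rb_upd2[OF E(7)] by auto
qed

lemma end_YA:
  assumes V: "valid i j 1 D u zp yp" and i1: "1 \<le> i" and P: "\<forall>c. j < c \<and> c < a i \<longrightarrow> c \<in> D" and e: "\<epsilon> i \<noteq> 0"
  shows "valid (i - 1) 0 0 D (i - 1) (zp(a i := wp i)) (yp(a i := u))"
    "Dg i u D zp yp = Dg (i - 1) (i - 1) D (zp(a i := wp i)) (yp(a i := u))"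
proof -
  note F = validD[OF V i1]
  note E = end_common[OF V i1 P]
  have w: "wp i = m + a i" "m < wp i" "wp i \<le> m + n" using wpi_facts(2)[OF i1 F(1) e] by auto
  have ui: "m + 2*n + 1 - a i < u" "u \<le> m + 2*n" using F(12) by auto
  have an: "a i \<le> n" by (rule E(5))
  have CC: "Cc (i - 1) D = insert (a i) (Cc i D)" by (rule E(8))
  have D': "D \<subseteq> {1..n}" "D \<subseteq> {..a i}" using F(2,6) by auto
  show "valid (i - 1) 0 0 D (i - 1) (zp(a i := wp i)) (yp(a i := u))"
  proof (rule next_row_valid[OF i1 F(1) D'])
    show "\<forall>c\<in>Cc (i - 1) D. \<forall>c'\<in>Cc (i - 1) D. c < c' \<longrightarrow> (zp(a i := wp i)) c < (zp(a i := wp i)) c' \<and> (yp(a i := u)) c' < (yp(a i := u)) c"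
    proof (intro ballI impI)
      fix c c' assume c: "c \<in> Cc (i - 1) D" and c': "c' \<in> Cc (i - 1) D" and cc: "c < c'"
      show "(zp(a i := wp i)) c < (zp(a i := wp i)) c' \<and> (yp(a i := u)) c' < (yp(a i := u)) c"
      proof (cases "c = a i")
        case True
        then have c'C: "c' \<in> Cc i D" "a i < c'" using c' CC cc by auto
        have "zp c' = m + c'" "yp c' = m + 2*n + 1 - c'" using F(9)[OF c'C] by auto
        moreover have "c' \<le> n" using c'C(1) unfolding Cc_mem by simp
        ultimately show ?thesis using True c'C(2) ui w by simp
      next
        case False
        then have cC: "c \<in> Cc i D" using c CC by auto
        show ?thesis
        proof (cases "c' = a i")
          case True
          then have "c < a i" using cc by simp
          then have "c \<le> j" "zp c \<le> m + c" using E(1)[OF cC] F(8)[OF cC] by auto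
          then have "zp c < wp i" "u < yp c" using F(13)[OF _ cC] w \<open>c < a i\<close> by auto
          then show ?thesis using True False by simp
        next
          case False2: False
          then have c'C: "c' \<in> Cc i D" using c' CC by auto
          show ?thesis using F(3)[OF cC c'C cc] False False2 by simp
        qed
      qed
    qed
    show "\<forall>c\<in>Cc (i - 1) D. i \<le> (zp(a i := wp i)) c \<and> 1 \<le> (zp(a i := wp i)) c \<and> (zp(a i := wp i)) c \<le> m + n \<and> m + n < (yp(a i := u)) c \<and> (yp(a i := u)) c \<le> m + 2*n"
    proof
      fix c assume c: "c \<in> Cc (i - 1) D"
      show "i \<le> (zp(a i := wp i)) c \<and> 1 \<le> (zp(a i := wp i)) c \<and> (zp(a i := wp i)) c \<le> m + n \<and> m + n < (yp(a i := u)) c \<and> (yp(a i := u)) c \<le> m + 2*n"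
      proof (cases "c = a i")
        case True
        have "m + n < u" using ui an by linarith
        then show ?thesis using True ui w F(1) by simp
      next
        case False
        then have "c \<in> Cc i D" using c CC by auto
        then show ?thesis using F(4) False by simp
      qed
    qed
    show "\<forall>c\<in>Cc (i - 1) D. c \<le> a i \<longrightarrow> (zp(a i := wp i)) c \<le> m + c \<and> m + 2*n + 1 - c \<le> (yp(a i := u)) c"
    proof (intro ballI impI)
      fix c assume c: "c \<in> Cc (i - 1) D" "c \<le> a i"
      show "(zp(a i := wp i)) c \<le> m + c \<and> m + 2*n + 1 - c \<le> (yp(a i := u)) c"
      proof (cases "c = a i")
        case True then show ?thesis using ui w by simp
      next
        case False
        then have "c \<in> Cc i D" "c < a i" using c CC by auto
        then show ?thesis using F(8) False by simp
      qed
    qed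
    show "\<forall>c\<in>Cc (i - 1) D. a i < c \<longrightarrow> (zp(a i := wp i)) c = m + c \<and> (yp(a i := u)) c = m + 2*n + 1 - c"
    proof (intro ballI impI)
      fix c assume c: "c \<in> Cc (i - 1) D" "a i < c"
      then have "c \<in> Cc i D" "c \<noteq> a i" using CC by auto
      then show "(zp(a i := wp i)) c = m + c \<and> (yp(a i := u)) c = m + 2*n + 1 - c" using F(9) c(2) by simp
    qed
  qed
  show "Dg i u D zp yp = Dg (i - 1) (i - 1) D (zp(a i := wp i)) (yp(a i := u))"
    unfolding Dg_prev[OF i1] Dg_pos[OF i1] CC Rb_upd2[OF E(7)] by (auto simp: insert_commute)
qed


lemma terminal:
  assumes V: "valid 0 j \<sigma> D u zp yp"
  shows "\<exists>M. ncd_rel (Dg 0 u D zp yp) M \<and> (\<forall>k. cntk st k M = GY a \<epsilon> 0 j \<sigma> D k)"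
proof -
  have nest: "\<forall>c\<in>Cc 0 D. \<forall>c'\<in>Cc 0 D. c < c' \<longrightarrow> zp c < zp c' \<and> yp c' < yp c"
    and rng: "\<forall>c\<in>Cc 0 D. 1 \<le> zp c \<and> zp c \<le> m + n \<and> m + n < yp c \<and> yp c \<le> m + 2*n"
    using V unfolding valid_def by auto
  have lt: "\<forall>c\<in>Cc 0 D. zp c < yp c" using rng by fastforce
  have NI: "nonintersecting (Dg 0 u D zp yp)" unfolding Dg_zero by (rule nonint_Rb[OF nest lt])
  have st0: "st (Dg 0 u D zp yp) = 0" unfolding Dg_zero by (rule st_Rb) (use rng in auto)
  have "ncd_rel (Dg 0 u D zp yp) {#Dg 0 u D zp yp#}" by (rule ncd_rel.base[OF NI])
  moreover have "\<forall>k. cntk st k {#Dg 0 u D zp yp#} = GY a \<epsilon> 0 j \<sigma> D k"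
    unfolding cntk_single GY_zero st0 by simp
  ultimately show ?thesis by blast
qed

lemma main_rec:
  "valid i j \<sigma> D u zp yp \<Longrightarrow> \<exists>M. ncd_rel (Dg i u D zp yp) M \<and> (\<forall>k. cntk st k M = GY a \<epsilon> i j \<sigma> D k)"
proof (induction "i * (n+1) + (n - j)" arbitrary: i j \<sigma> D u zp yp rule: less_induct)
  case less
  show ?case
  proof (cases "i = 0")
    case True then show ?thesis using terminal less.prems by simp
  next
    case False
    then have i1: "1 \<le> i" by simp
    note F = validD[OF less.prems i1]
    have ain: "a i \<le> n" using a_le_n[OF i1 F(1)] .
    have jn: "j < n" using F(5) ain by simp
    show ?thesis
    proof (cases "\<exists>c. j < c \<and> c < a i \<and> c \<notin> D")
      case True
      define c0 where "c0 = (LEAST c. j < c \<and> c < a i \<and> c \<notin> D)"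
      have c0: "j < c0" "c0 < a i" "c0 \<notin> D" using LeastI_ex[OF True] unfolding c0_def by auto
      have c0min: "\<forall>c. j < c \<and> c < a i \<and> c \<notin> D \<longrightarrow> c0 \<le> c" unfolding c0_def by (auto intro: Least_le)
      have meas: "i * (n+1) + (n - c0) < i * (n+1) + (n - j)" using c0 ain by simp
      have GYs: "\<And>k. GY a \<epsilon> i j \<sigma> D k = GY a \<epsilon> i c0 \<sigma> D k + (if k = 0 then 0 else GY a \<epsilon> i c0 (1 - \<sigma>) (D \<union> {c0}) (k - 1))"
        using GY_step[where a=a and \<epsilon>=\<epsilon> and i=i and j=j and D=D and \<sigma>=\<sigma>, OF i1 c0 c0min F(7)] .
      consider "\<sigma> = 0" | "\<sigma> = 1" using F(7) by fastforce
      then show ?thesis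
      proof cases
        case 1
        have V: "valid i j 0 D u zp yp" using less.prems 1 by simp
        note S = Z_step_sets[OF V i1 c0 c0min]
        obtain M2 where M2: "ncd_rel (Dg i (zp c0) D (zp(c0 := u)) yp) M2" "\<forall>k. cntk st k M2 = GY a \<epsilon> i c0 0 D k"
          using less.hyps[OF meas Z_pass_valid[OF V i1 c0 c0min]] by blast
        obtain M1 where M1: "ncd_rel (Dg i (yp c0) (D \<union> {c0}) zp yp) M1" "\<forall>k. cntk st k M1 = GY a \<epsilon> i c0 1 (D \<union> {c0}) k"
          using less.hyps[OF meas Z_take_valid[OF V i1 c0 c0min]] by blast
        have nin: "u \<notin> \<Union>(Dg i (yp c0) (D \<union> {c0}) zp yp)" "zp c0 \<notin> \<Union>(Dg i (yp c0) (D \<union> {c0}) zp yp)"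
          "\<forall>v\<in>\<Union>(Dg i (yp c0) (D \<union> {c0}) zp yp). \<not> (u < v \<and> v < zp c0)"
          using S(8) S(1) by (metis less_irrefl less_trans)+
        have uu: "i \<le> u" "u < m + a i" using validD(10)[OF V i1] by auto
        have sA: "{u, zp c0} \<subseteq> {1..m+n}" using uu ain i1 validD(4)[OF V i1 c0_facts(1)[OF V i1 c0 c0min]] by auto
        have stI: "\<And>G. finite G \<Longrightarrow> {u, zp c0} \<notin> G \<Longrightarrow> st (insert {u, zp c0} G) = Suc (st G)"
          using st_insert sA by blast
        note L = lift_count[where st=st, OF M1(1) Dg_finite(1)[of i "yp c0" "D \<union> {c0}" zp yp] Dg_finite(2)[of i "yp c0" "D \<union> {c0}" zp yp] S(1) nin stI]
        have R: "ncd_rel (Dg i u D zp yp) (image_mset (insert {u, zp c0}) M1 + M2)"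
        proof (rule ncd_rel.expand[of u "wp i" _ "zp c0" "yp c0"])
          show "{u, wp i} \<in> Dg i u D zp yp" "{zp c0, yp c0} \<in> Dg i u D zp yp" by (rule S(4), rule S(5))
          show "u < zp c0" "zp c0 < wp i" "wp i < yp c0" by (rule S(1), rule S(2), rule S(3))
          show "ncd_rel (Dg i u D zp yp - {{u, wp i}, {zp c0, yp c0}} \<union> {{u, zp c0}, {wp i, yp c0}}) (image_mset (insert {u, zp c0}) M1)"
            unfolding S(6) by (rule L(1))
          show "ncd_rel (Dg i u D zp yp - {{u, wp i}, {zp c0, yp c0}} \<union> {{yp c0, u}, {zp c0, wp i}}) M2"
            unfolding S(7) by (rule M2(1))
        qed
        have C: "\<forall>k. cntk st k (image_mset (insert {u, zp c0}) M1 + M2) = GY a \<epsilon> i j \<sigma> D k"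
        proof
          fix k
          show "cntk st k (image_mset (insert {u, zp c0}) M1 + M2) = GY a \<epsilon> i j \<sigma> D k"
            unfolding cntk_plus GYs using L(2)[of k] M1(2) M2(2) 1 by simp
        qed
        show ?thesis using R C by blast
      next
        case 2
        have V: "valid i j 1 D u zp yp" using less.prems 2 by simp
        note S = Y_step_sets[OF V i1 c0 c0min]
        obtain M2 where M2: "ncd_rel (Dg i (yp c0) D zp (yp(c0 := u))) M2" "\<forall>k. cntk st k M2 = GY a \<epsilon> i c0 1 D k"
          using less.hyps[OF meas Y_pass_valid[OF V i1 c0 c0min]] by blast
        obtain M1 where M1: "ncd_rel (Dg i (zp c0) (D \<union> {c0}) zp yp) M1" "\<forall>k. cntk st k M1 = GY a \<epsilon> i c0 0 (D \<union> {c0}) k"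
          using less.hyps[OF meas Y_take_valid[OF V i1 c0 c0min]] by blast
        have nin: "yp c0 \<notin> \<Union>(Dg i (zp c0) (D \<union> {c0}) zp yp)" "u \<notin> \<Union>(Dg i (zp c0) (D \<union> {c0}) zp yp)"
          "\<forall>v\<in>\<Union>(Dg i (zp c0) (D \<union> {c0}) zp yp). \<not> (yp c0 < v \<and> v < u)"
          using S(8) S(3) by (metis less_irrefl less_trans)+
        have c0C: "c0 \<in> Cc i D" by (rule c0_facts(1)[OF V i1 c0 c0min])
        have uu: "m + 2*n + 1 - a i < u" "u \<le> m + 2*n" using validD(12)[OF V i1] by auto
        have sB: "{yp c0, u} \<subseteq> {m+n+1..m+2*n}" using uu validD(4)[OF V i1 c0C] ain by auto
        have stI: "\<And>G. finite G \<Longrightarrow> {yp c0, u} \<notin> G \<Longrightarrow> st (insert {yp c0, u} G) = Suc (st G)"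
          using st_insert sB by blast
        note L = lift_count[where st=st, OF M1(1) Dg_finite(1)[of i "zp c0" "D \<union> {c0}" zp yp] Dg_finite(2)[of i "zp c0" "D \<union> {c0}" zp yp] S(3) nin stI]
        have R: "ncd_rel (Dg i u D zp yp) (image_mset (insert {yp c0, u}) M1 + M2)"
        proof (rule ncd_rel.expand[of "zp c0" "yp c0" _ "wp i" u])
          show "{zp c0, yp c0} \<in> Dg i u D zp yp" "{wp i, u} \<in> Dg i u D zp yp" by (rule S(4), rule S(5))
          show "zp c0 < wp i" "wp i < yp c0" "yp c0 < u" by (rule S(1), rule S(2), rule S(3))
          show "ncd_rel (Dg i u D zp yp - {{zp c0, yp c0}, {wp i, u}} \<union> {{zp c0, wp i}, {yp c0, u}}) (image_mset (insert {yp c0, u}) M1)"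
            unfolding S(6) by (rule L(1))
          show "ncd_rel (Dg i u D zp yp - {{zp c0, yp c0}, {wp i, u}} \<union> {{u, zp c0}, {wp i, yp c0}}) M2"
            unfolding S(7) by (rule M2(1))
        qed
        have C: "\<forall>k. cntk st k (image_mset (insert {yp c0, u}) M1 + M2) = GY a \<epsilon> i j \<sigma> D k"
        proof
          fix k
          show "cntk st k (image_mset (insert {yp c0, u}) M1 + M2) = GY a \<epsilon> i j \<sigma> D k"
            unfolding cntk_plus GYs using L(2)[of k] M1(2) M2(2) 2 by simp
        qed
        show ?thesis using R C by blast
      qed
    next
      case False
      then have P: "\<forall>c. j < c \<and> c < a i \<longrightarrow> c \<in> D" by blast
      note E = end_common[OF less.prems i1 P]
      have meas: "(i - 1) * (n+1) + (n - 0) < i * (n+1) + (n - j)" using i1 jn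
      proof -
        have "(i - 1) * (n+1) + (n+1) = i * (n+1)" using i1 by (cases i) auto
        then show ?thesis using jn by linarith
      qed
      have GYe: "\<And>k. GY a \<epsilon> i j \<sigma> D k = (if (\<epsilon> i + \<sigma>) mod 2 = 1 then (if k = 0 then 0 else GY a \<epsilon> (i - 1) 0 0 (D \<union> {a i}) (k - 1)) else GY a \<epsilon> (i - 1) 0 0 D k)"
        using GY_end[where a=a and \<epsilon>=\<epsilon> and i=i and j=j and D=D and \<sigma>=\<sigma>, OF i1 P F(5) E(3) F(7)] .
      have e01: "\<epsilon> i = 0 \<or> \<epsilon> i = 1" using eps_cases[OF i1 F(1)] .
      consider "\<sigma> = 0" "\<epsilon> i = 1" | "\<sigma> = 1" "\<epsilon> i = 0" | "\<sigma> = 0" "\<epsilon> i = 0" | "\<sigma> = 1" "\<epsilon> i = 1"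
        using F(7) e01 by fastforce
      then show ?thesis
      proof cases
        case 1
        have V: "valid i j 0 D u zp yp" using less.prems 1 by simp
        note Z = end_ZA[OF V i1 P] 1(2)
        obtain M1 where M1: "ncd_rel (Dg (i - 1) (i - 1) (D \<union> {a i}) zp yp) M1" "\<forall>k. cntk st k M1 = GY a \<epsilon> (i - 1) 0 0 (D \<union> {a i}) k"
          using less.hyps[OF meas end_internal_valid[OF less.prems i1 P]] by blast
        have Z1: "u < wp i" using end_ZA(1)[OF V i1 P] 1(2) by simp
        have Z3: "\<forall>v\<in>\<Union>(Dg (i - 1) (i - 1) (D \<union> {a i}) zp yp). v < u \<or> wp i < v" using end_ZA(3)[OF V i1 P] 1(2) by simp
        have nin: "u \<notin> \<Union>(Dg (i - 1) (i - 1) (D \<union> {a i}) zp yp)" "wp i \<notin> \<Union>(Dg (i - 1) (i - 1) (D \<union> {a i}) zp yp)"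
          "\<forall>v\<in>\<Union>(Dg (i - 1) (i - 1) (D \<union> {a i}) zp yp). \<not> (u < v \<and> v < wp i)"
          using Z3 Z1 by (metis less_irrefl less_trans)+
        have sA: "{u, wp i} \<subseteq> {1..m+n}" using end_ZA(4)[OF V i1 P] 1(2) by simp
        have stI: "\<And>G. finite G \<Longrightarrow> {u, wp i} \<notin> G \<Longrightarrow> st (insert {u, wp i} G) = Suc (st G)"
          using st_insert sA by blast
        note L = lift_count[where st=st, OF M1(1) Dg_finite(1)[of "i - 1" "i - 1" "D \<union> {a i}" zp yp] Dg_finite(2)[of "i - 1" "i - 1" "D \<union> {a i}" zp yp] Z1 nin stI]
        have DE: "Dg i u D zp yp = insert {u, wp i} (Dg (i - 1) (i - 1) (D \<union> {a i}) zp yp)"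
          using end_ZA(2)[OF V i1 P] 1(2) by simp
        have C: "\<forall>k. cntk st k (image_mset (insert {u, wp i}) M1) = GY a \<epsilon> i j \<sigma> D k"
        proof
          fix k
          show "cntk st k (image_mset (insert {u, wp i}) M1) = GY a \<epsilon> i j \<sigma> D k"
            unfolding GYe using L(2)[of k] M1(2) 1 by simp
        qed
        show ?thesis unfolding DE using L(1) C by blast
      next
        case 2
        have V: "valid i j 1 D u zp yp" using less.prems 2 by simp
        obtain M1 where M1: "ncd_rel (Dg (i - 1) (i - 1) (D \<union> {a i}) zp yp) M1" "\<forall>k. cntk st k M1 = GY a \<epsilon> (i - 1) 0 0 (D \<union> {a i}) k"
          using less.hyps[OF meas end_internal_valid[OF less.prems i1 P]] by blast
        have Z1: "wp i < u" using end_YB(1)[OF V i1 P] 2(2) by simp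
        have Z3: "\<forall>v\<in>\<Union>(Dg (i - 1) (i - 1) (D \<union> {a i}) zp yp). v < wp i \<or> u < v" using end_YB(3)[OF V i1 P] 2(2) by simp
        have nin: "wp i \<notin> \<Union>(Dg (i - 1) (i - 1) (D \<union> {a i}) zp yp)" "u \<notin> \<Union>(Dg (i - 1) (i - 1) (D \<union> {a i}) zp yp)"
          "\<forall>v\<in>\<Union>(Dg (i - 1) (i - 1) (D \<union> {a i}) zp yp). \<not> (wp i < v \<and> v < u)"
          using Z3 Z1 by (metis less_irrefl less_trans)+
        have sB: "{wp i, u} \<subseteq> {m+n+1..m+2*n}" using end_YB(4)[OF V i1 P] 2(2) by simp
        have stI: "\<And>G. finite G \<Longrightarrow> {wp i, u} \<notin> G \<Longrightarrow> st (insert {wp i, u} G) = Suc (st G)"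
          using st_insert sB by blast
        note L = lift_count[where st=st, OF M1(1) Dg_finite(1)[of "i - 1" "i - 1" "D \<union> {a i}" zp yp] Dg_finite(2)[of "i - 1" "i - 1" "D \<union> {a i}" zp yp] Z1 nin stI]
        have DE: "Dg i u D zp yp = insert {wp i, u} (Dg (i - 1) (i - 1) (D \<union> {a i}) zp yp)"
          using end_YB(2)[OF V i1 P] 2(2) by simp
        have C: "\<forall>k. cntk st k (image_mset (insert {wp i, u}) M1) = GY a \<epsilon> i j \<sigma> D k"
        proof
          fix k
          show "cntk st k (image_mset (insert {wp i, u}) M1) = GY a \<epsilon> i j \<sigma> D k"
            unfolding GYe using L(2)[of k] M1(2) 2 by simp
        qed
        show ?thesis unfolding DE using L(1) C by blast
      next
        case 3
        have V: "valid i j 0 D u zp yp" using less.prems 3 by simp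
        note Z = end_ZB[OF V i1 P 3(2)]
        obtain M1 where M1: "ncd_rel (Dg (i - 1) (i - 1) D (zp(a i := u)) (yp(a i := wp i))) M1"
            "\<forall>k. cntk st k M1 = GY a \<epsilon> (i - 1) 0 0 D k"
          using less.hyps[OF meas Z(1)] by blast
        have C: "\<forall>k. cntk st k M1 = GY a \<epsilon> i j \<sigma> D k"
        proof
          fix k
          show "cntk st k M1 = GY a \<epsilon> i j \<sigma> D k" unfolding GYe using M1(2) 3 by simp
        qed
        show ?thesis unfolding Z(2) using M1(1) C by blast
      next
        case 4
        have V: "valid i j 1 D u zp yp" using less.prems 4 by simp
        have e: "\<epsilon> i \<noteq> 0" using 4 by simp
        note Z = end_YA[OF V i1 P e]
        obtain M1 where M1: "ncd_rel (Dg (i - 1) (i - 1) D (zp(a i := wp i)) (yp(a i := u))) M1"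
            "\<forall>k. cntk st k M1 = GY a \<epsilon> (i - 1) 0 0 D k"
          using less.hyps[OF meas Z(1)] by blast
        have C: "\<forall>k. cntk st k M1 = GY a \<epsilon> i j \<sigma> D k"
        proof
          fix k
          show "cntk st k M1 = GY a \<epsilon> i j \<sigma> D k" unfolding GYe using M1(2) 4 by simp
        qed
        show ?thesis unfolding Z(2) using M1(1) C by blast
      qed
    qed
  qed
qed


lemma init_valid: "valid m 0 0 {} m (\<lambda>c. m + c) (\<lambda>c. m + 2*n + 1 - c)"
proof (rule validI_Z)
  show "1 \<le> m" using m_pos by simp
  show "m \<le> m" by simp
  show "{} \<subseteq> {1..n}" by simp
  show "\<forall>c\<in>Cc m {}. \<forall>c'\<in>Cc m {}. c < c' \<longrightarrow> m + c < m + c' \<and> m + 2*n + 1 - c' < m + 2*n + 1 - c"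
  proof (intro ballI impI)
    fix c c' assume "c \<in> Cc m {}" "c' \<in> Cc m {}" "c < c'"
    then have "c' \<le> n" "c < c'" unfolding Cc_mem by auto
    then show "m + c < m + c' \<and> m + 2*n + 1 - c' < m + 2*n + 1 - c" by simp
  qed
  show "\<forall>c\<in>Cc m {}. m \<le> m + c \<and> 1 \<le> m + c \<and> m + c \<le> m + n \<and> m + n < m + 2*n + 1 - c \<and> m + 2*n + 1 - c \<le> m + 2*n"
  proof
    fix c assume "c \<in> Cc m {}"
    then have "1 \<le> c" "c \<le> n" unfolding Cc_mem by auto
    then show "m \<le> m + c \<and> 1 \<le> m + c \<and> m + c \<le> m + n \<and> m + n < m + 2*n + 1 - c \<and> m + 2*n + 1 - c \<le> m + 2*n" by arith
  qed
  show "0 < a m" using am by simp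
  show "{} \<subseteq> {..<a m}" by simp
  show "\<forall>c\<in>Cc m {}. c < a m \<longrightarrow> m + c \<le> m + c \<and> m + 2*n + 1 - c \<le> m + 2*n + 1 - c" by simp
  show "\<forall>c\<in>Cc m {}. a m < c \<longrightarrow> m + c = m + c \<and> m + 2*n + 1 - c = m + 2*n + 1 - c" by simp
  show "m \<le> m \<and> m < m + a m \<and> (\<forall>c\<in>Cc m {}. (c \<le> 0 \<longrightarrow> m + c < m) \<and> (0 < c \<longrightarrow> m < m + c))"
  proof (intro conjI ballI impI)
    show "m \<le> m" by simp
    show "m < m + a m" using am by simp
  next
    fix c assume "c \<in> Cc m {}" "c \<le> 0"
    then show "m + c < m" unfolding Cc_mem by simp
  next
    fix c assume "c \<in> Cc m {}" "0 < c"
    then show "m < m + c" by simp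
  qed
qed

lemma Ediag_eq: "Ediag m n a \<epsilon> = Dg m m {} (\<lambda>c. m + c) (\<lambda>c. m + 2*n + 1 - c)"
proof -
  have 1: "{{xpt m n i, ypt m n (a i)} | i. i \<in> {1..m} \<and> \<epsilon> i = 0} \<union> {{xpt m n i, zpt m n (a i)} | i. i \<in> {1..m} \<and> \<epsilon> i = 1}
      = {{k, wp k} | k. 1 \<le> k \<and> k \<le> m}"
  proof
    show "{{xpt m n i, ypt m n (a i)} | i. i \<in> {1..m} \<and> \<epsilon> i = 0} \<union> {{xpt m n i, zpt m n (a i)} | i. i \<in> {1..m} \<and> \<epsilon> i = 1}
      \<subseteq> {{k, wp k} | k. 1 \<le> k \<and> k \<le> m}"
      unfolding xpt_def ypt_def zpt_def wp_def by force
    show "{{k, wp k} | k. 1 \<le> k \<and> k \<le> m} \<subseteq> {{xpt m n i, ypt m n (a i)} | i. i \<in> {1..m} \<and> \<epsilon> i = 0} \<union> {{xpt m n i, zpt m n (a i)} | i. i \<in> {1..m} \<and> \<epsilon> i = 1}"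
    proof
      fix X assume "X \<in> {{k, wp k} | k. 1 \<le> k \<and> k \<le> m}"
      then obtain k where k: "1 \<le> k" "k \<le> m" "X = {k, wp k}" by blast
      have ek: "\<epsilon> k = 0 \<or> \<epsilon> k = 1" by (rule eps_cases[OF k(1,2)])
      show "X \<in> {{xpt m n i, ypt m n (a i)} | i. i \<in> {1..m} \<and> \<epsilon> i = 0} \<union> {{xpt m n i, zpt m n (a i)} | i. i \<in> {1..m} \<and> \<epsilon> i = 1}"
      proof (cases "\<epsilon> k = 0")
        case True
        note 1 = True
        then have "X = {xpt m n k, ypt m n (a k)}" using k unfolding xpt_def ypt_def wp_def by simp
        then show ?thesis using k 1 by auto
      next
        case False
        then have 2: "\<epsilon> k = 1" using ek by simp
        then have "X = {xpt m n k, zpt m n (a k)}" using k unfolding xpt_def zpt_def wp_def by simp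
        then show ?thesis using k 2 by auto
      qed
    qed
  qed
  have 2: "{{ypt m n j, zpt m n j} | j. j \<in> {1..n} - a ` {1..m}} = Rb (Cc m {}) (\<lambda>c. m + c) (\<lambda>c. m + 2*n + 1 - c)"
    unfolding Rb_def Cc_def ypt_def zpt_def by (auto simp: insert_commute)
  have 3: "Pend m \<union> {{m, wp m}} = {{k, wp k} | k. 1 \<le> k \<and> k \<le> m}"
    unfolding Pend_def using m_pos by (auto simp: le_less)
  show ?thesis unfolding Ediag_def Dg_pos[of m, OF _] using m_pos 1 2 3
    by (simp add: Dg_pos Un_assoc)
qed

lemma matching_two_families:
  assumes "finite I" "finite J" "\<forall>i\<in>I. card (f i) = 2" "\<forall>j\<in>J. card (g j) = 2"
    "\<forall>i\<in>I. \<forall>i'\<in>I. i \<noteq> i' \<longrightarrow> f i \<inter> f i' = {}" "\<forall>j\<in>J. \<forall>j'\<in>J. j \<noteq> j' \<longrightarrow> g j \<inter> g j' = {}"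
    "\<forall>i\<in>I. \<forall>j\<in>J. f i \<inter> g j = {}"
  shows "matching (f ` I \<union> g ` J)"
  unfolding matching_def
proof (intro conjI ballI impI)
  show "finite (f ` I \<union> g ` J)" using assms(1,2) by simp
next
  fix C assume "C \<in> f ` I \<union> g ` J"
  then show "card C = 2" using assms(3,4) by auto
next
  fix C D assume C: "C \<in> f ` I \<union> g ` J" and D: "D \<in> f ` I \<union> g ` J" and CD: "C \<noteq> D"
  show "C \<inter> D = {}"
  proof (cases "C \<in> f ` I")
    case True
    then obtain i where i: "i \<in> I" "C = f i" by blast
    show ?thesis
    proof (cases "D \<in> f ` I")
      case True
      then obtain i' where i': "i' \<in> I" "D = f i'" by blast
      have "i \<noteq> i'" using i i' CD by auto
      then have "f i \<inter> f i' = {}" using assms(5) i(1) i'(1) by blast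
      then show ?thesis using i i' by simp
    next
      case False
      then obtain j where j: "j \<in> J" "D = g j" using D by blast
      have "f i \<inter> g j = {}" using assms(7) i(1) j(1) by blast
      then show ?thesis using i j by simp
    qed
  next
    case False
    then obtain j where j: "j \<in> J" "C = g j" using C by blast
    show ?thesis
    proof (cases "D \<in> f ` I")
      case True
      then obtain i where i: "i \<in> I" "D = f i" by blast
      have "f i \<inter> g j = {}" using assms(7) i(1) j(1) by blast
      then show ?thesis using i j by auto
    next
      case False
      then obtain j' where j': "j' \<in> J" "D = g j'" using D by blast
      have "j \<noteq> j'" using j j' CD by auto
      then have "g j \<inter> g j' = {}" using assms(6) j(1) j'(1) by blast
      then show ?thesis using j j' by simp
    qed
  qed
qed

lemma Ediag_matching: "matching (Ediag m n a \<epsilon>)"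
proof -
  define C where "C = Cc m {}"
  have E: "Ediag m n a \<epsilon> = (\<lambda>k. {k, wp k}) ` {1..m} \<union> (\<lambda>c. {m + c, m + 2*n + 1 - c}) ` C"
  proof -
    have A1: "Dg m m {} (\<lambda>c. m + c) (\<lambda>c. m + 2*n + 1 - c) = (Pend m \<union> {{m, wp m}}) \<union> Rb C (\<lambda>c. m + c) (\<lambda>c. m + 2*n + 1 - c)"
    proof -
      have m1: "1 \<le> m" using m_pos by simp
      show ?thesis unfolding Dg_pos[OF m1] C_def by auto
    qed
    have A2: "Pend m \<union> {{m, wp m}} = (\<lambda>k. {k, wp k}) ` {1..m}"
    proof
      show "Pend m \<union> {{m, wp m}} \<subseteq> (\<lambda>k. {k, wp k}) ` {1..m}" unfolding Pend_def using m_pos by auto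
      show "(\<lambda>k. {k, wp k}) ` {1..m} \<subseteq> Pend m \<union> {{m, wp m}}"
      proof
        fix X assume "X \<in> (\<lambda>k. {k, wp k}) ` {1..m}"
        then obtain k where k: "k \<in> {1..m}" "X = {k, wp k}" by blast
        show "X \<in> Pend m \<union> {{m, wp m}}"
        proof (cases "k = m")
          case True then show ?thesis using k by simp
        next
          case False then have "k < m" using k by simp
          then show ?thesis unfolding Pend_def using k by auto
        qed
      qed
    qed
    have A3: "Rb C (\<lambda>c. m + c) (\<lambda>c. m + 2*n + 1 - c) = (\<lambda>c. {m + c, m + 2*n + 1 - c}) ` C" unfolding Rb_def by auto
    show ?thesis unfolding Ediag_eq A1 A2 A3 ..
  qed
  have wr: "\<And>k. k \<in> {1..m} \<Longrightarrow> m < wp k \<and> wp k \<le> m + 2*n" using wp_range by fastforce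
  have Cm: "\<And>c. c \<in> C \<Longrightarrow> 1 \<le> c \<and> c \<le> n \<and> (\<forall>k\<in>{1..m}. c \<noteq> a k)" unfolding C_def Cc_mem by auto
  show ?thesis unfolding E
  proof (rule matching_two_families)
    show "finite {1..m}" by simp
    show "finite C" unfolding C_def Cc_def by (rule finite_subset[of _ "{..n}"]) auto
    show "\<forall>i\<in>{1..m}. card {i, wp i} = 2" using wr by fastforce
    show "\<forall>j\<in>C. card {m + j, m + 2*n + 1 - j} = 2" using Cm by fastforce
    show "\<forall>i\<in>{1..m}. \<forall>i'\<in>{1..m}. i \<noteq> i' \<longrightarrow> {i, wp i} \<inter> {i', wp i'} = {}"
    proof (intro ballI impI)
      fix i i' assume i: "i \<in> {1..m}" and i': "i' \<in> {1..m}" and ne: "i \<noteq> i'"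
      have "wp i \<noteq> wp i'"
      proof
        assume eq: "wp i = wp i'"
        have ai: "a i \<le> n" "a i' \<le> n" using a_le_n i i' by auto
        consider "\<epsilon> i = 0" "\<epsilon> i' = 0" | "\<epsilon> i \<noteq> 0" "\<epsilon> i' \<noteq> 0" | "\<epsilon> i = 0" "\<epsilon> i' \<noteq> 0" | "\<epsilon> i \<noteq> 0" "\<epsilon> i' = 0" by blast
        then have "a i = a i'"
        proof cases
          case 1 then show ?thesis using eq ai unfolding wp_def by simp
        next
          case 2 then show ?thesis using eq unfolding wp_def by simp
        next
          case 3 then show ?thesis using eq ai unfolding wp_def by simp
        next
          case 4 then show ?thesis using eq ai unfolding wp_def by simp
        qed
        then show False using a_inj[of i i'] i i' ne by auto
      qed
      then show "{i, wp i} \<inter> {i', wp i'} = {}" using wr[OF i] wr[OF i'] i i' ne by auto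
    qed
    show "\<forall>j\<in>C. \<forall>j'\<in>C. j \<noteq> j' \<longrightarrow> {m + j, m + 2*n + 1 - j} \<inter> {m + j', m + 2*n + 1 - j'} = {}"
    proof (intro ballI impI)
      fix j j' assume j: "j \<in> C" and j': "j' \<in> C" and ne: "j \<noteq> j'"
      have "1 \<le> j" "j \<le> n" "1 \<le> j'" "j' \<le> n" using Cm[OF j] Cm[OF j'] by auto
      then have "m + j \<noteq> m + j'" "m + j \<noteq> m + 2*n + 1 - j'" "m + 2*n + 1 - j \<noteq> m + j'"
        "m + 2*n + 1 - j \<noteq> m + 2*n + 1 - j'" using ne by arith+
      then show "{m + j, m + 2*n + 1 - j} \<inter> {m + j', m + 2*n + 1 - j'} = {}" by auto
    qed
    show "\<forall>i\<in>{1..m}. \<forall>j\<in>C. {i, wp i} \<inter> {m + j, m + 2*n + 1 - j} = {}"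
    proof (intro ballI)
      fix i j assume i: "i \<in> {1..m}" and j: "j \<in> C"
      have ai: "a i \<le> n" using a_le_n i by auto
      have jj: "1 \<le> j" "j \<le> n" "j \<noteq> a i" using Cm[OF j] i by auto
      have "wp i \<noteq> m + j" "wp i \<noteq> m + 2*n + 1 - j" using ai jj unfolding wp_def by auto
      then show "{i, wp i} \<inter> {m + j, m + 2*n + 1 - j} = {}" using i jj by auto
    qed
  qed
qed

lemma g_eq: "g_count m a \<epsilon> k = GY a \<epsilon> m 0 0 {} k"
proof -
  have "{M \<in> young01 m a. (\<forall>j. card {i \<in> {1..m}. M (i, j)} \<le> 1) \<and>
      (\<forall>i \<in> {1..m}. card {j \<in> {1..a i}. M (i, j)} mod 2 = \<epsilon> i mod 2) \<and> card {p. M p} = k}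
    = YS a \<epsilon> m 0 0 {} k"
  proof
    show "{M \<in> young01 m a. (\<forall>j. card {i \<in> {1..m}. M (i, j)} \<le> 1) \<and>
      (\<forall>i \<in> {1..m}. card {j \<in> {1..a i}. M (i, j)} mod 2 = \<epsilon> i mod 2) \<and> card {p. M p} = k} \<subseteq> YS a \<epsilon> m 0 0 {} k"
    proof
      fix M assume "M \<in> {M \<in> young01 m a. (\<forall>j. card {i \<in> {1..m}. M (i, j)} \<le> 1) \<and>
        (\<forall>i \<in> {1..m}. card {j \<in> {1..a i}. M (i, j)} mod 2 = \<epsilon> i mod 2) \<and> card {p. M p} = k}"
      then have sup: "\<forall>i j. M (i,j) \<longrightarrow> i \<in> {1..m} \<and> j \<in> {1..a i}" and col: "\<forall>j. card {i \<in> {1..m}. M (i, j)} \<le> 1"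
        and par: "\<forall>i \<in> {1..m}. card {j \<in> {1..a i}. M (i, j)} mod 2 = \<epsilon> i mod 2" and tot: "card {p. M p} = k"
        unfolding young01_def by auto
      have s1: "\<forall>p. M p \<longrightarrow> p \<in> cells a m 0 {}"
      proof (intro allI impI)
        fix p assume Mp: "M p"
        obtain r c where p: "p = (r,c)" by fastforce
        have "M (r,c)" using Mp p by simp
        then have rc: "r \<in> {1..m} \<and> c \<in> {1..a r}" using sup by blast
        show "p \<in> cells a m 0 {}" unfolding p cells_mem using rc by (cases "r = m") auto
      qed
      have e1: "\<And>j. {i \<in> {1..m}. M (i, j)} = {r. M (r,j)}" using sup by blast
      have e2: "\<And>i. {j \<in> {1..a i}. M (i, j)} = {c. M (i,c)}" using sup by blast
      have s2: "\<forall>c. card {r. M (r,c)} \<le> 1" using col e1 by simp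
      have s3: "\<forall>r. 1 \<le> r \<and> r < m \<longrightarrow> card {c. M (r,c)} mod 2 = \<epsilon> r mod 2" using par e2 by auto
      have s4: "1 \<le> m \<longrightarrow> card {c. M (m,c)} mod 2 = (\<epsilon> m + 0) mod 2" using par e2 m_pos by auto
      show "M \<in> YS a \<epsilon> m 0 0 {} k" unfolding YS_mem using s1 s2 s3 s4 tot by blast
    qed
    show "YS a \<epsilon> m 0 0 {} k \<subseteq> {M \<in> young01 m a. (\<forall>j. card {i \<in> {1..m}. M (i, j)} \<le> 1) \<and>
      (\<forall>i \<in> {1..m}. card {j \<in> {1..a i}. M (i, j)} mod 2 = \<epsilon> i mod 2) \<and> card {p. M p} = k}"
    proof
      fix M assume "M \<in> YS a \<epsilon> m 0 0 {} k"
      then have sup: "\<forall>p. M p \<longrightarrow> p \<in> cells a m 0 {}" and col: "\<forall>c. card {r. M (r,c)} \<le> 1"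
        and rows: "\<forall>r. 1 \<le> r \<and> r < m \<longrightarrow> card {c. M (r,c)} mod 2 = \<epsilon> r mod 2"
        and rowm: "card {c. M (m,c)} mod 2 = (\<epsilon> m + 0) mod 2" and tot: "card {p. M p} = k"
        unfolding YS_mem using m_pos by auto
      have sup': "\<forall>i j. M (i,j) \<longrightarrow> i \<in> {1..m} \<and> j \<in> {1..a i}"
      proof (intro allI impI)
        fix i j assume "M (i,j)"
        then have "(i,j) \<in> cells a m 0 {}" using sup by blast
        then show "i \<in> {1..m} \<and> j \<in> {1..a i}" unfolding cells_mem by auto
      qed
      have e1: "\<And>j. {i \<in> {1..m}. M (i, j)} = {r. M (r,j)}" using sup' by blast
      have e2: "\<And>i. {j \<in> {1..a i}. M (i, j)} = {c. M (i,c)}" using sup' by blast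
      have "M \<in> young01 m a" unfolding young01_def using sup' by blast
      moreover have "\<forall>j. card {i \<in> {1..m}. M (i, j)} \<le> 1" using col e1 by simp
      moreover have "\<forall>i \<in> {1..m}. card {j \<in> {1..a i}. M (i, j)} mod 2 = \<epsilon> i mod 2"
      proof
        fix i assume i: "i \<in> {1..m}"
        show "card {j \<in> {1..a i}. M (i, j)} mod 2 = \<epsilon> i mod 2"
        proof (cases "i = m")
          case True then show ?thesis using rowm e2 by simp
        next
          case False then show ?thesis using rows e2 i by auto
        qed
      qed
      ultimately show "M \<in> {M \<in> young01 m a. (\<forall>j. card {i \<in> {1..m}. M (i, j)} \<le> 1) \<and>
        (\<forall>i \<in> {1..m}. card {j \<in> {1..a i}. M (i, j)} mod 2 = \<epsilon> i mod 2) \<and> card {p. M p} = k}" using tot by blast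
    qed
  qed
  then show ?thesis unfolding g_count_def GY_def by simp
qed

lemma final: "f_count m n a \<epsilon> k = g_count m a \<epsilon> k"
proof -
  obtain M where M: "ncd_rel (Dg m m {} (\<lambda>c. m + c) (\<lambda>c. m + 2*n + 1 - c)) M"
      "\<forall>k. cntk st k M = GY a \<epsilon> m 0 0 {} k"
    using main_rec[OF init_valid] by blast
  have R: "ncd_rel (Ediag m n a \<epsilon>) M" using M(1) Ediag_eq by simp
  have N: "NCD (Ediag m n a \<epsilon>) = M" by (rule NCD_eq[OF Ediag_matching R])
  have "f_count m n a \<epsilon> k = cntk st k M" unfolding f_count_def cntk_def st_def N ..
  also have "\<dots> = GY a \<epsilon> m 0 0 {} k" using M(2) by simp
  also have "\<dots> = g_count m a \<epsilon> k" using g_eq by simp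
  finally show ?thesis .
qed

end

theorem theorem1:
  fixes m n k :: nat and a \<epsilon> :: "nat \<Rightarrow> nat"
  assumes "0 < m" and "m \<le> n"
    and "a 1 = n"
    and "\<And>i. 1 \<le> i \<Longrightarrow> i < m \<Longrightarrow> a i > a (i + 1)"
    and "a m \<ge> 1"
    and "\<And>i. i \<in> {1..m} \<Longrightarrow> \<epsilon> i \<in> {0, 1}"
    and "k \<le> n"
  shows "f_count m n a \<epsilon> k = g_count m a \<epsilon> k"
  by (rule final[OF assms(1) assms(3) assms(4) assms(5) assms(6)])

end
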